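(* In the one-dimensional setting described in the context, assume that $\mathbf b$ is constant and that the following uniform inf-sup hypothesis holds: there is a constant $\alpha_{\mathrm{MQ}}>0$, depending only on $p$ and the coarsening structure and independent of $h$, such that \[ \sup_{v_h\in V_h\setminus\{0\}}\frac{(v_h,q_h)_{0,I}}{\|v_h\|_{0,I}}\ge\alpha_{\mathrm{MQ}}\|q_h\|_{0,I}\qquad\forall q_h\in Q_L . \] Let the stabilization parameter satisfy \[ 0\le\tau_h\le C_\tau\,c_L^{-1}\,\frac{h^2}{\max\{\varepsilon,\;h\|\mathbf b\|_{0,\infty}\}} \] for a constant $C_\tau>0$. Then there exists $\beta>0$, independent of $h$ and $\varepsilon$, such that \[ \sup_{v_h\in V_h}\frac{a_{\mathrm{MQ}}(u_h,v_h)}{\|v_h\|_{\mathrm{MQSD}}}\ge\beta\,\|u_h\|_{\mathrm{MQSD}}\qquad\forall u_h\in V_h . \]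
   Context: Let $I$ be a bounded interval, $(\cdot,\cdot)$ and $\|\cdot\|_0=\|\cdot\|_{0,I}$ the $L^2(I)$ inner product and norm, $|\cdot|_1$ the $H^1(I)$ seminorm, $\|\cdot\|_{0,\infty}$ the $L^\infty(I)$ norm. Consider $-\varepsilon u''+\mathbf b u'+cu=f$ on $I$ with homogeneous Dirichlet conditions, $\varepsilon>0$, $\mathbf b\in\mathbb R$, $c\in L^\infty(I)$, $f\in L^2(I)$, $\sigma:=c-\tfrac12\mathbf b'\ge\sigma_0>0$ a.e. (so $\sigma=c$ here). Let $a(u,v)=\varepsilon(u',v')+(\mathbf b u',v)+(cu,v)$. Let $\mathcal T_h$ be a uniform mesh of $I$ of size $h$, $\mathcal S^p(\mathcal T_h)$ the B-spline space of degree $p\ge2$ on the corresponding open knot vector (simple interior knots), and $V_h:=\mathcal S^p(\mathcal T_h)\cap H^1_0(I)$. Dyadic coarsening: $\mathcal M_h^{(0)}=\mathcal T_h$ and $\mathcal M_h^{(k)}$ ($k=1,\dots,L$) is obtained from $\mathcal M_h^{(k-1)}$ by removing every second interior knot, so its mesh size is $H^{(k)}=2^kh$; set $c_k:=h/H^{(k)}$. Let $Q_L:=\mathcal S^{p-1}(\mathcal M_h^{(L)})$ be the B-spline space of degree $p-1$ on the coarsest mesh. For each $k$, $\Pi_k^p$ is a linear quasi-interpolation projector onto the degree-$p$ B-spline space $\mathcal S^p(\mathcal M_h^{(k)})$, stable in $L^2$ ($\|\Pi_k^pv\|_0\le C_{\Pi_k^p}\|v\|_0$) and satisfying the approximation estimates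 $\|u-\Pi_k^pu\|_{H^r}\le C_{\Pi_k^p}(H^{(k)})^{s-r}\|u\|_{H^s}$, $0\le r\le s\le p+1$. With $\tau_h\ge0$ define \[ s_{\mathrm{MQ}}(u,v)=\tau_h\sum_{k=1}^Lc_k\int_I\big(\mathbf b\,(u-\Pi_k^pu)'\big)\big(\mathbf b\,(v-\Pi_k^pv)'\big)\,dx,\quad a_{\mathrm{MQ}}=a+s_{\mathrm{MQ}}, \] $\|v\|_G^2=\varepsilon|v|_1^2+\|\sigma^{1/2}v\|_0^2$, $\|v\|_{\mathrm{MQ}}^2=\|v\|_G^2+s_{\mathrm{MQ}}(v,v)$, and \[ \|v\|_{\mathrm{MQSD}}=\big(\|v\|_G^2+s_{\mathrm{MQ}}(v,v)+\tau_hc_L\|\mathbf b\,v'\|_0^2\big)^{1/2}. \] *)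

theory Defs
  imports "HOL-Analysis.Analysis" "HOL-Computational_Algebra.Polynomial"
begin

definition L2_on :: "real \<Rightarrow> real \<Rightarrow> (real \<Rightarrow> real) \<Rightarrow> bool" where
  "L2_on a0 b0 v \<longleftrightarrow> set_borel_measurable lborel {a0..b0} v
      \<and> set_integrable lborel {a0..b0} (\<lambda>x. (v x)\<^sup>2)"

definition ip :: "real \<Rightarrow> real \<Rightarrow> (real \<Rightarrow> real) \<Rightarrow> (real \<Rightarrow> real) \<Rightarrow> real" where
  "ip a0 b0 u v = (LINT x:{a0..b0}|lborel. u x * v x)"

definition l2norm :: "real \<Rightarrow> real \<Rightarrow> (real \<Rightarrow> real) \<Rightarrow> real" where
  "l2norm a0 b0 v = sqrt (ip a0 b0 v v)"

text \<open>The B-spline space of degree q on the open knot vector with simple interior knots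
  is the space of piecewise polynomials of degree at most q which are C^(q-1)
  at the interior knots (Curry-Schoenberg).\<close>

definition knot :: "real \<Rightarrow> real \<Rightarrow> nat \<Rightarrow> nat \<Rightarrow> real" where
  "knot a0 b0 n j = a0 + real j * (b0 - a0) / real n"

definition spline_space :: "real \<Rightarrow> real \<Rightarrow> nat \<Rightarrow> nat \<Rightarrow> (real \<Rightarrow> real) set" where
  "spline_space a0 b0 n q = {f. \<exists>P :: nat \<Rightarrow> real poly.
      (\<forall>j<n. degree (P j) \<le> q \<and>
             (\<forall>x\<in>{knot a0 b0 n j .. knot a0 b0 n (Suc j)}. f x = poly (P j) x)) \<and>
      (\<forall>j. 0 < j \<and> j < n \<longrightarrow>
             (\<forall>k<q. poly ((pderiv ^^ k) (P (j - 1))) (knot a0 b0 n j)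
                   = poly ((pderiv ^^ k) (P j)) (knot a0 b0 n j)))}"

text \<open>V_h = S^p(T_h) \<inter> H^1_0(I) (spline functions are continuous, so the trace is the value).\<close>
definition Vh :: "real \<Rightarrow> real \<Rightarrow> nat \<Rightarrow> nat \<Rightarrow> (real \<Rightarrow> real) set" where
  "Vh a0 b0 N p = {v \<in> spline_space a0 b0 N p. v a0 = 0 \<and> v b0 = 0}"

definition nonzero_on :: "real \<Rightarrow> real \<Rightarrow> (real \<Rightarrow> real) \<Rightarrow> bool" where
  "nonzero_on a0 b0 v \<longleftrightarrow> (\<exists>x\<in>{a0..b0}. v x \<noteq> 0)"

definition test_fun :: "real \<Rightarrow> real \<Rightarrow> (real \<Rightarrow> real) \<Rightarrow> bool" where
  "test_fun a0 b0 \<phi> \<longleftrightarrow> (\<forall>k x. (deriv ^^ k) \<phi> differentiable (at x)) \<and>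
     (\<exists>c d. a0 < c \<and> d < b0 \<and> (\<forall>x. x \<notin> {c..d} \<longrightarrow> \<phi> x = 0))"

definition weak_deriv :: "real \<Rightarrow> real \<Rightarrow> (real \<Rightarrow> real) \<Rightarrow> (real \<Rightarrow> real) \<Rightarrow> bool" where
  "weak_deriv a0 b0 u g \<longleftrightarrow> (\<forall>\<phi>. test_fun a0 b0 \<phi> \<longrightarrow>
      (LINT x:{a0..b0}|lborel. u x * deriv \<phi> x) = - (LINT x:{a0..b0}|lborel. g x * \<phi> x))"

definition weak_derivs :: "real \<Rightarrow> real \<Rightarrow> nat \<Rightarrow> (real \<Rightarrow> real) \<Rightarrow> (nat \<Rightarrow> real \<Rightarrow> real) \<Rightarrow> bool" where
  "weak_derivs a0 b0 s u D \<longleftrightarrow>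
     (AE x in lborel. x \<in> {a0..b0} \<longrightarrow> D 0 x = u x) \<and>
     (\<forall>j\<le>s. L2_on a0 b0 (D j)) \<and>
     (\<forall>j<s. weak_deriv a0 b0 (D j) (D (Suc j)))"

definition sobolev_norm :: "real \<Rightarrow> real \<Rightarrow> nat \<Rightarrow> (nat \<Rightarrow> real \<Rightarrow> real) \<Rightarrow> real" where
  "sobolev_norm a0 b0 s D = sqrt (\<Sum>j\<le>s. (l2norm a0 b0 (D j))\<^sup>2)"

definition quasi_interp :: "real \<Rightarrow> real \<Rightarrow> nat \<Rightarrow> nat \<Rightarrow> real \<Rightarrow> real
     \<Rightarrow> ((real \<Rightarrow> real) \<Rightarrow> real \<Rightarrow> real) \<Rightarrow> bool" where
  "quasi_interp a0 b0 nk p Hk C Proj \<longleftrightarrow>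
     (\<forall>v. L2_on a0 b0 v \<longrightarrow> Proj v \<in> spline_space a0 b0 nk p) \<and>
     (\<forall>u v \<alpha> \<beta>. L2_on a0 b0 u \<longrightarrow> L2_on a0 b0 v \<longrightarrow>
        (\<forall>x\<in>{a0..b0}. Proj (\<lambda>y. \<alpha> * u y + \<beta> * v y) x = \<alpha> * Proj u x + \<beta> * Proj v x)) \<and>
     (\<forall>v\<in>spline_space a0 b0 nk p. \<forall>x\<in>{a0..b0}. Proj v x = v x) \<and>
     (\<forall>v. L2_on a0 b0 v \<longrightarrow> l2norm a0 b0 (Proj v) \<le> C * l2norm a0 b0 v) \<and>
     (\<forall>r s u Du De. r \<le> s \<longrightarrow> s \<le> p + 1 \<longrightarrow>
        weak_derivs a0 b0 s u Du \<longrightarrow>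
        weak_derivs a0 b0 r (\<lambda>x. u x - Proj u x) De \<longrightarrow>
        sobolev_norm a0 b0 r De \<le> C * Hk ^ (s - r) * sobolev_norm a0 b0 s Du)"

text \<open>N = number of cells of T_h, h = (b0-a0)/N, coarse level k has N div 2^k cells,
  c_k = 1/2^k. bb is the constant convection, c the reaction coefficient (sigma = c).\<close>

definition a_form :: "real \<Rightarrow> real \<Rightarrow> real \<Rightarrow> real \<Rightarrow> (real \<Rightarrow> real)
     \<Rightarrow> (real \<Rightarrow> real) \<Rightarrow> (real \<Rightarrow> real) \<Rightarrow> real" where
  "a_form a0 b0 \<epsilon> bb c u v =
     \<epsilon> * (LINT x:{a0..b0}|lborel. deriv u x * deriv v x)
     + (LINT x:{a0..b0}|lborel. bb * deriv u x * v x)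
     + (LINT x:{a0..b0}|lborel. c x * u x * v x)"

definition s_MQ :: "real \<Rightarrow> real \<Rightarrow> nat \<Rightarrow> real \<Rightarrow> real
     \<Rightarrow> (nat \<Rightarrow> (real \<Rightarrow> real) \<Rightarrow> real \<Rightarrow> real) \<Rightarrow> (real \<Rightarrow> real) \<Rightarrow> (real \<Rightarrow> real) \<Rightarrow> real" where
  "s_MQ a0 b0 L \<tau> bb Proj u v = \<tau> * (\<Sum>k\<in>{1..L}. (1 / 2 ^ k) *
     (LINT x:{a0..b0}|lborel. (bb * deriv (\<lambda>y. u y - Proj k u y) x)
                             * (bb * deriv (\<lambda>y. v y - Proj k v y) x)))"

definition a_MQ where
  "a_MQ a0 b0 L \<epsilon> bb c \<tau> Proj u v = a_form a0 b0 \<epsilon> bb c u v + s_MQ a0 b0 L \<tau> bb Proj u v"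

definition G_norm_sq :: "real \<Rightarrow> real \<Rightarrow> real \<Rightarrow> (real \<Rightarrow> real) \<Rightarrow> (real \<Rightarrow> real) \<Rightarrow> real" where
  "G_norm_sq a0 b0 \<epsilon> c v = \<epsilon> * (LINT x:{a0..b0}|lborel. (deriv v x)\<^sup>2)
     + (LINT x:{a0..b0}|lborel. c x * (v x)\<^sup>2)"

definition MQSD_norm where
  "MQSD_norm a0 b0 L \<epsilon> bb c \<tau> Proj v = sqrt (G_norm_sq a0 b0 \<epsilon> c v + s_MQ a0 b0 L \<tau> bb Proj v v
     + \<tau> * (1 / 2 ^ L) * (LINT x:{a0..b0}|lborel. (bb * deriv v x)\<^sup>2))"

end

theory Submission
  imports Defs
begin

lemma lagrange_exists:
  fixes p :: nat and x :: "nat \<Rightarrow> real"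
  assumes inj: "inj_on x {..p}"
  shows "\<exists>l. \<forall>i\<le>p. degree (l i) \<le> p \<and> (\<forall>k\<le>p. poly (l i) (x k) = (if k = i then 1 else 0))"
proof -
  define l where "l i = smult (inverse (\<Prod>j\<in>{..p}-{i}. x i - x j)) (\<Prod>j\<in>{..p}-{i}. [:- x j, 1:])" for i
  have "degree (l i) \<le> p" if "i \<le> p" for i
  proof -
    have "degree (l i) \<le> degree (\<Prod>j\<in>{..p}-{i}. [:- x j, 1:])"
      unfolding l_def by (rule degree_smult_le)
    also have "\<dots> \<le> (\<Sum>j\<in>{..p}-{i}. degree [:- x j, 1:])"
      using degree_prod_sum_le[of "{..p}-{i}" "\<lambda>j. [:- x j, 1:]"] by (simp add: o_def)
    also have "\<dots> = card ({..p}-{i})" by simp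
    also have "\<dots> = p" using that by simp
    finally show ?thesis .
  qed
  moreover have "poly (l i) (x k) = (if k = i then 1 else 0)" if "i \<le> p" "k \<le> p" for i k
  proof (cases "k = i")
    case True
    have "(\<Prod>j\<in>{..p}-{i}. x i - x j) \<noteq> 0"
      using inj that by (auto simp: inj_on_def)
    then show ?thesis using True by (simp add: l_def poly_prod)
  next
    case False
    have "(\<Prod>j\<in>{..p}-{i}. poly [:- x j, 1:] (x k)) = 0"
      using False that by (intro prod_zero) auto
    then show ?thesis using False by (simp add: l_def poly_prod)
  qed
  ultimately show ?thesis by blast
qed

lemma lagrange_repr:
  fixes p :: nat and x :: "nat \<Rightarrow> real" and Q :: "real poly"
  assumes inj: "inj_on x {..p}"
    and l: "\<forall>i\<le>p. degree (l i) \<le> p \<and> (\<forall>k\<le>p. poly (l i) (x k) = (if k = i then 1 else 0))"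
    and dQ: "degree Q \<le> p"
  shows "Q = (\<Sum>i\<le>p. smult (poly Q (x i)) (l i))"
proof (rule poly_eqI_degree[where A = "x ` {..p}"])
  fix y assume "y \<in> x ` {..p}"
  then obtain k where k: "k \<le> p" "y = x k" by auto
  have "poly (\<Sum>i\<le>p. smult (poly Q (x i)) (l i)) y = (\<Sum>i\<le>p. poly Q (x i) * poly (l i) (x k))"
    by (simp add: poly_sum k)
  also have "\<dots> = (\<Sum>i\<le>p. if i = k then poly Q (x k) else 0)"
    using l k by (intro sum.cong) auto
  also have "\<dots> = poly Q (x k)" using k by simp
  finally show "poly Q y = poly (\<Sum>i\<le>p. smult (poly Q (x i)) (l i)) y" using k by simp
next
  have c: "card (x ` {..p}) = Suc p" using inj by (simp add: card_image)
  show "degree Q < card (x ` {..p})" using c dQ by simp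
  have "degree (\<Sum>i\<le>p. smult (poly Q (x i)) (l i)) \<le> p"
    by (rule degree_sum_le) (use l in \<open>auto intro: order.trans[OF degree_smult_le]\<close>)
  then show "degree (\<Sum>i\<le>p. smult (poly Q (x i)) (l i)) < card (x ` {..p})" using c by simp
qed

lemma markov_unit:
  fixes p :: nat
  shows "\<exists>K\<ge>1. \<forall>(Q::real poly) m. degree Q \<le> p \<longrightarrow>
     (\<forall>i\<le>p. \<bar>poly Q (real i / real (Suc p))\<bar> \<le> m) \<longrightarrow>
     (\<forall>t\<in>{0..1}. \<bar>poly (pderiv Q) t\<bar> \<le> K * m)"
proof -
  define x where "x i = real i / real (Suc p)" for i
  have inj: "inj_on x {..p}" by (auto simp: inj_on_def x_def)
  obtain l where l: "\<forall>i\<le>p. degree (l i) \<le> p \<and> (\<forall>k\<le>p. poly (l i) (x k) = (if k = i then 1 else 0))"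
    using lagrange_exists[OF inj] by blast
  have "\<exists>B. \<forall>t\<in>{0..1::real}. \<bar>poly (pderiv (l i)) t\<bar> \<le> B" for i
  proof -
    have "compact ((\<lambda>t. poly (pderiv (l i)) t) ` {0..1::real})"
      by (intro compact_continuous_image continuous_intros) auto
    then have "bounded ((\<lambda>t. poly (pderiv (l i)) t) ` {0..1::real})" by (rule compact_imp_bounded)
    then show ?thesis by (auto simp: bounded_real)
  qed
  then obtain B where B: "\<And>i t. t \<in> {0..1::real} \<Longrightarrow> \<bar>poly (pderiv (l i)) t\<bar> \<le> B i" by metis
  define K where "K = 1 + (\<Sum>i\<le>p. \<bar>B i\<bar>)"
  have K1: "K \<ge> 1" by (simp add: K_def sum_nonneg)
  have "\<bar>poly (pderiv Q) t\<bar> \<le> K * m"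
    if dQ: "degree Q \<le> p" and m: "\<forall>i\<le>p. \<bar>poly Q (x i)\<bar> \<le> m" and t: "t \<in> {0..1}" for Q m t
  proof -
    have m0: "m \<ge> 0" using m by (meson abs_ge_zero order.trans atMost_iff le0)
    have "pderiv Q = (\<Sum>i\<le>p. smult (poly Q (x i)) (pderiv (l i)))"
      by (subst lagrange_repr[OF inj l dQ]) (simp add: higher_pderiv_sum[of 1, simplified] pderiv_smult)
    then have "poly (pderiv Q) t = (\<Sum>i\<le>p. poly Q (x i) * poly (pderiv (l i)) t)"
      by (simp add: poly_sum)
    then have "\<bar>poly (pderiv Q) t\<bar> \<le> (\<Sum>i\<le>p. \<bar>poly Q (x i) * poly (pderiv (l i)) t\<bar>)"
      by (simp add: sum_abs)
    also have "\<dots> \<le> (\<Sum>i\<le>p. m * \<bar>B i\<bar>)"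
    proof (rule sum_mono)
      fix i assume i: "i \<in> {..p}"
      have "\<bar>poly Q (x i) * poly (pderiv (l i)) t\<bar> = \<bar>poly Q (x i)\<bar> * \<bar>poly (pderiv (l i)) t\<bar>"
        by (simp add: abs_mult)
      also have "\<dots> \<le> m * \<bar>B i\<bar>"
        using m i B[OF t, of i] by (intro mult_mono) auto
      finally show "\<bar>poly Q (x i) * poly (pderiv (l i)) t\<bar> \<le> m * \<bar>B i\<bar>" .
    qed
    also have "\<dots> = m * (\<Sum>i\<le>p. \<bar>B i\<bar>)" by (simp add: sum_distrib_left)
    also have "\<dots> \<le> K * m" using m0 by (simp add: K_def algebra_simps)
    finally show ?thesis .
  qed
  then show ?thesis using K1 unfolding x_def by blast
qed

lemma markov_cell:
  fixes p :: nat
  obtains K :: real where "K \<ge> 1" and "\<And>Q \<alpha> h m. h > 0 \<Longrightarrow> degree Q \<le> p \<Longrightarrow>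
      (\<forall>y\<in>{\<alpha>..\<alpha>+h}. \<bar>poly Q y\<bar> \<le> m) \<Longrightarrow> (\<forall>y\<in>{\<alpha>..\<alpha>+h}. \<bar>poly (pderiv Q) y\<bar> \<le> K * m / h)"
proof -
  obtain K where K1: "K \<ge> 1" and K: "\<forall>(Q::real poly) m. degree Q \<le> p \<longrightarrow>
     (\<forall>i\<le>p. \<bar>poly Q (real i / real (Suc p))\<bar> \<le> m) \<longrightarrow>
     (\<forall>t\<in>{0..1}. \<bar>poly (pderiv Q) t\<bar> \<le> K * m)"
    using markov_unit[of p] by blast
  have "\<forall>y\<in>{\<alpha>..\<alpha>+h}. \<bar>poly (pderiv Q) y\<bar> \<le> K * m / h"
    if h: "h > 0" and dQ: "degree Q \<le> p" and m: "\<forall>y\<in>{\<alpha>..\<alpha>+h}. \<bar>poly Q y\<bar> \<le> m" for Q \<alpha> h m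
  proof
    fix y assume y: "y \<in> {\<alpha>..\<alpha>+h}"
    define R where "R = pcompose Q [:\<alpha>, h:]"
    have d1: "degree [:\<alpha>, h:] \<le> 1" by (rule order.trans[OF degree_pCons_le]) simp
    have dR: "degree R \<le> p"
      using degree_pcompose_le[of Q "[:\<alpha>, h:]"] dQ d1 unfolding R_def
      by (metis (no_types) le_trans mult.right_neutral mult_le_mono2)
    have pR: "poly R s = poly Q (\<alpha> + h * s)" for s
      by (simp add: R_def poly_pcompose algebra_simps)
    have pdR: "poly (pderiv R) s = poly (pderiv Q) (\<alpha> + h * s) * h" for s
      by (simp add: R_def pderiv_pcompose poly_pcompose pderiv_pCons algebra_simps)
    have nodes: "\<forall>i\<le>p. \<bar>poly R (real i / real (Suc p))\<bar> \<le> m"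
    proof (intro allI impI)
      fix i assume "i \<le> p"
      then have "real i / real (Suc p) \<le> 1" "0 \<le> real i / real (Suc p)" by auto
      then have "h * (real i / real (Suc p)) \<le> h" "0 \<le> h * (real i / real (Suc p))"
        using h mult_left_mono[of "real i / real (Suc p)" 1 h] by auto
      then have "\<alpha> + h * (real i / real (Suc p)) \<in> {\<alpha>..\<alpha>+h}" by auto
      then show "\<bar>poly R (real i / real (Suc p))\<bar> \<le> m" using m by (simp add: pR)
    qed
    define s where "s = (y - \<alpha>) / h"
    have s01: "s \<in> {0..1}" using y h by (auto simp: s_def field_simps)
    have ys: "\<alpha> + h * s = y" using h by (simp add: s_def field_simps)
    have "\<bar>poly (pderiv R) s\<bar> \<le> K * m" using K dR nodes s01 by blast
    then have "\<bar>poly (pderiv Q) y\<bar> * h \<le> K * m" using h by (simp add: pdR ys abs_mult)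
    then show "\<bar>poly (pderiv Q) y\<bar> \<le> K * m / h" using h by (simp add: field_simps)
  qed
  then show ?thesis using that K1 by blast
qed

lemma poly_diff_bound:
  fixes Q :: "real poly"
  assumes "a \<le> b" and "\<forall>x\<in>{a..b}. \<bar>poly (pderiv Q) x\<bar> \<le> B"
  shows "\<bar>poly Q b - poly Q a\<bar> \<le> B * (b - a)"
proof (cases "a = b")
  case True then show ?thesis by simp
next
  case False
  then have "a < b" using assms by simp
  from MVT2[OF this, of "poly Q" "\<lambda>x. poly (pderiv Q) x"]
  obtain z where z: "a < z" "z < b" "poly Q b - poly Q a = (b - a) * poly (pderiv Q) z" by auto
  have "\<bar>poly (pderiv Q) z\<bar> \<le> B" using assms z by auto
  then show ?thesis using z \<open>a < b\<close> by (simp add: abs_mult mult.commute mult_right_mono)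
qed

lemma inv_cell:
  fixes p :: nat
  obtains K :: real where "K > 0" and "\<And>Q \<alpha> h. h > 0 \<Longrightarrow> degree Q \<le> p \<Longrightarrow>
      integral {\<alpha>..\<alpha>+h} (\<lambda>y. (poly (pderiv Q) y)\<^sup>2) \<le> K / h\<^sup>2 * integral {\<alpha>..\<alpha>+h} (\<lambda>y. (poly Q y)\<^sup>2)"
proof -
  obtain K0 :: real where K01: "K0 \<ge> 1" and K0: "\<And>Q \<alpha> h m. h > 0 \<Longrightarrow> degree Q \<le> p \<Longrightarrow>
      (\<forall>y\<in>{\<alpha>..\<alpha>+h}. \<bar>poly Q y\<bar> \<le> m) \<Longrightarrow> (\<forall>y\<in>{\<alpha>..\<alpha>+h}. \<bar>poly (pderiv Q) y\<bar> \<le> K0 * m / h)"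
    using markov_cell by blast
  have "integral {\<alpha>..\<alpha>+h} (\<lambda>y. (poly (pderiv Q) y)\<^sup>2) \<le> (8 * K0^3) / h\<^sup>2 * integral {\<alpha>..\<alpha>+h} (\<lambda>y. (poly Q y)\<^sup>2)"
    if h: "h > 0" and dQ: "degree Q \<le> p" for Q \<alpha> h
  proof -
    have "\<exists>t\<in>{\<alpha>..\<alpha>+h}. \<forall>y\<in>{\<alpha>..\<alpha>+h}. \<bar>poly Q y\<bar> \<le> \<bar>poly Q t\<bar>"
      using h by (intro continuous_attains_sup) (auto intro!: continuous_intros)
    then obtain t0 where t0: "t0 \<in> {\<alpha>..\<alpha>+h}" and mx: "\<forall>y\<in>{\<alpha>..\<alpha>+h}. \<bar>poly Q y\<bar> \<le> \<bar>poly Q t0\<bar>" by blast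
    define m where "m = \<bar>poly Q t0\<bar>"
    have m0: "m \<ge> 0" by (simp add: m_def)
    have dB: "\<forall>y\<in>{\<alpha>..\<alpha>+h}. \<bar>poly (pderiv Q) y\<bar> \<le> K0 * m / h"
      using K0[OF h dQ, of \<alpha> m] mx by (simp add: m_def)
    have int1: "(\<lambda>y. (poly (pderiv Q) y)\<^sup>2) integrable_on {\<alpha>..\<alpha>+h}"
      by (intro integrable_continuous_interval continuous_intros)
    have int2: "(\<lambda>y. (poly Q y)\<^sup>2) integrable_on {c..d}" for c d
      by (intro integrable_continuous_interval continuous_intros)
    have up: "integral {\<alpha>..\<alpha>+h} (\<lambda>y. (poly (pderiv Q) y)\<^sup>2) \<le> h * (K0 * m / h)\<^sup>2"
    proof -
      have "integral {\<alpha>..\<alpha>+h} (\<lambda>y. (poly (pderiv Q) y)\<^sup>2) \<le> integral {\<alpha>..\<alpha>+h} (\<lambda>y. (K0 * m / h)\<^sup>2)"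
      proof (rule integral_le[OF int1])
        show "(\<lambda>y. (K0 * m / h)\<^sup>2) integrable_on {\<alpha>..\<alpha>+h}" by (intro integrable_continuous_interval continuous_intros)
        fix y assume "y \<in> {\<alpha>..\<alpha>+h}"
        then have b: "\<bar>poly (pderiv Q) y\<bar> \<le> K0 * m / h" using dB by blast
        show "(poly (pderiv Q) y)\<^sup>2 \<le> (K0 * m / h)\<^sup>2"
          using power_mono[OF b abs_ge_zero, of 2] by simp
      qed
      also have "\<dots> = h * (K0 * m / h)\<^sup>2" using h by simp
      finally show ?thesis .
    qed
    define \<delta> where "\<delta> = h / (2 * K0)"
    have \<delta>0: "\<delta> > 0" and \<delta>h: "\<delta> \<le> h / 2" using h K01 by (auto simp: \<delta>_def field_simps)
    obtain c where J: "{c..c+\<delta>} \<subseteq> {\<alpha>..\<alpha>+h}" and t0J: "t0 \<in> {c..c+\<delta>}"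
    proof (cases "t0 \<le> \<alpha> + h / 2")
      case True
      show ?thesis by (rule that[of t0]) (use True t0 \<delta>h \<delta>0 in auto)
    next
      case False
      show ?thesis by (rule that[of "t0 - \<delta>"]) (use False t0 \<delta>h \<delta>0 in auto)
    qed
    have lowpt: "m\<^sup>2 / 4 \<le> (poly Q y)\<^sup>2" if y: "y \<in> {c..c+\<delta>}" for y
    proof -
      have yc: "y \<in> {\<alpha>..\<alpha>+h}" using y J by auto
      have "\<bar>poly Q y - poly Q t0\<bar> \<le> K0 * m / h * \<bar>y - t0\<bar>"
      proof (cases "t0 \<le> y")
        case True
        have "\<forall>x\<in>{t0..y}. \<bar>poly (pderiv Q) x\<bar> \<le> K0 * m / h" using dB t0 yc by auto
        from poly_diff_bound[OF True this] show ?thesis using True by simp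
      next
        case False
        have "\<forall>x\<in>{y..t0}. \<bar>poly (pderiv Q) x\<bar> \<le> K0 * m / h" using dB t0 yc by auto
        from poly_diff_bound[OF _ this] show ?thesis using False by (simp add: abs_minus_commute)
      qed
      also have "\<dots> \<le> K0 * m / h * \<delta>"
        using y t0J m0 h K01 by (intro mult_left_mono) auto
      also have "\<dots> = m / 2" using h K01 by (simp add: \<delta>_def field_simps)
      finally have "\<bar>poly Q y - poly Q t0\<bar> \<le> m / 2" .
      then have "m / 2 \<le> \<bar>poly Q y\<bar>" unfolding m_def by linarith
      then have "(m/2)\<^sup>2 \<le> (poly Q y)\<^sup>2" using m0 power_mono[of "m/2" "\<bar>poly Q y\<bar>" 2] by simp
      then show ?thesis by (simp add: power_divide)
    qed
    have low: "\<delta> * (m\<^sup>2 / 4) \<le> integral {\<alpha>..\<alpha>+h} (\<lambda>y. (poly Q y)\<^sup>2)"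
    proof -
      have "\<delta> * (m\<^sup>2 / 4) = integral {c..c+\<delta>} (\<lambda>y. m\<^sup>2 / 4)" using \<delta>0 by simp
      also have "\<dots> \<le> integral {c..c+\<delta>} (\<lambda>y. (poly Q y)\<^sup>2)"
        by (rule integral_le[OF _ int2]) (use lowpt in \<open>auto intro: integrable_continuous_interval continuous_intros\<close>)
      also have "\<dots> \<le> integral {\<alpha>..\<alpha>+h} (\<lambda>y. (poly Q y)\<^sup>2)"
        by (rule integral_subset_le[OF J int2 int2]) (auto)
      finally show ?thesis .
    qed
    have "integral {\<alpha>..\<alpha>+h} (\<lambda>y. (poly (pderiv Q) y)\<^sup>2) \<le> h * (K0 * m / h)\<^sup>2" by (rule up)
    also have "\<dots> = (8 * K0^3) / h\<^sup>2 * (\<delta> * (m\<^sup>2 / 4))"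
      using h K01 unfolding \<delta>_def by (simp add: power2_eq_square power3_eq_cube divide_simps)
    also have "\<dots> \<le> (8 * K0^3) / h\<^sup>2 * integral {\<alpha>..\<alpha>+h} (\<lambda>y. (poly Q y)\<^sup>2)"
      using low K01 by (intro mult_left_mono) auto
    finally show ?thesis .
  qed
  moreover have "8 * K0^3 > 0" using K01 by simp
  ultimately show ?thesis using that by blast
qed

definition PPI :: "real \<Rightarrow> real \<Rightarrow> nat \<Rightarrow> nat \<Rightarrow> (real \<Rightarrow> real) \<Rightarrow> bool" where
  "PPI a0 b0 N p f \<longleftrightarrow> (\<exists>P. \<forall>j<N. degree (P j) \<le> p \<and>
      (\<forall>x\<in>{knot a0 b0 N j .. knot a0 b0 N (Suc j)}. f x = poly (P j) x))"

definition C1I :: "real \<Rightarrow> real \<Rightarrow> (real \<Rightarrow> real) \<Rightarrow> (real \<Rightarrow> real) \<Rightarrow> bool" where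
  "C1I a0 b0 f g \<longleftrightarrow> continuous_on {a0..b0} f \<and> continuous_on {a0..b0} g \<and>
      (\<forall>x\<in>{a0<..<b0}. (f has_real_derivative g x) (at x))"

lemma knot_mono:
  assumes "a0 < b0" "N \<ge> 1" "i \<le> j"
  shows "knot a0 b0 N i \<le> knot a0 b0 N j"
  using assms by (auto simp: knot_def intro!: divide_right_mono mult_right_mono)

lemma knot_0 [simp]: "knot a0 b0 N 0 = a0" by (simp add: knot_def)
lemma knot_N: "N \<ge> 1 \<Longrightarrow> knot a0 b0 N N = b0" by (simp add: knot_def)
lemma knot_Suc: "knot a0 b0 N (Suc j) = knot a0 b0 N j + (b0 - a0) / N"
  by (cases "N = 0") (simp_all add: knot_def field_simps)

lemma integral_split_cells:
  fixes F :: "real \<Rightarrow> real"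
  assumes ab: "a0 < b0" and N: "N \<ge> 1" and F: "F integrable_on {a0..b0}"
  shows "integral {a0..b0} F = (\<Sum>j<N. integral {knot a0 b0 N j..knot a0 b0 N (Suc j)} F)"
proof -
  have "n \<le> N \<Longrightarrow> integral {a0..knot a0 b0 N n} F = (\<Sum>j<n. integral {knot a0 b0 N j..knot a0 b0 N (Suc j)} F)" for n
  proof (induction n)
    case 0 then show ?case by simp
  next
    case (Suc n)
    have kn: "a0 \<le> knot a0 b0 N n" "knot a0 b0 N n \<le> knot a0 b0 N (Suc n)" "knot a0 b0 N (Suc n) \<le> b0"
      using knot_mono[OF ab N, of 0 n] knot_mono[OF ab N, of n "Suc n"] knot_mono[OF ab N, of "Suc n" N] Suc.prems
      by (auto simp: knot_N[OF N])
    have Fi: "F integrable_on {a0..knot a0 b0 N (Suc n)}"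
      by (rule integrable_on_subinterval[OF F]) (use kn in auto)
    have "integral {a0..knot a0 b0 N (Suc n)} F = integral {a0..knot a0 b0 N n} F + integral {knot a0 b0 N n..knot a0 b0 N (Suc n)} F"
      using Henstock_Kurzweil_Integration.integral_combine[OF kn(1) kn(2) Fi] by simp
    then show ?case using Suc by simp
  qed
  from this[of N] show ?thesis by (simp add: knot_N[OF N])
qed

lemma deriv_on_cell:
  assumes C: "C1I a0 b0 f g" and x: "x \<in> {\<alpha><..<\<beta>}" and sub: "{\<alpha>..\<beta>} \<subseteq> {a0..b0}"
    and eq: "\<forall>y\<in>{\<alpha>..\<beta>}. f y = poly P y"
  shows "g x = poly (pderiv P) x"
proof -
  have xo: "x \<in> {a0<..<b0}" using x sub by (auto; force)
  have "(f has_real_derivative g x) (at x)" using C xo by (auto simp: C1I_def)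
  then have "((\<lambda>y. poly P y) has_real_derivative g x) (at x)"
    by (rule has_field_derivative_transform_within_open[where S="{\<alpha><..<\<beta>}"]) (use x eq in auto)
  then show ?thesis using poly_DERIV[of P x] DERIV_unique by blast
qed

lemma inverse_global:
  fixes p :: nat
  obtains K :: real where "K > 0" and "\<And>a0 b0 N f g. a0 < b0 \<Longrightarrow> N \<ge> 1 \<Longrightarrow> PPI a0 b0 N p f \<Longrightarrow> C1I a0 b0 f g \<Longrightarrow>
      integral {a0..b0} (\<lambda>x. (g x)\<^sup>2) \<le> K * (real N / (b0 - a0))\<^sup>2 * integral {a0..b0} (\<lambda>x. (f x)\<^sup>2)"
proof -
  obtain K :: real where K0: "K > 0" and K: "\<And>Q \<alpha> h. h > 0 \<Longrightarrow> degree Q \<le> p \<Longrightarrow>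
      integral {\<alpha>..\<alpha>+h} (\<lambda>y. (poly (pderiv Q) y)\<^sup>2) \<le> K / h\<^sup>2 * integral {\<alpha>..\<alpha>+h} (\<lambda>y. (poly Q y)\<^sup>2)"
    using inv_cell by blast
  have "integral {a0..b0} (\<lambda>x. (g x)\<^sup>2) \<le> K * (real N / (b0 - a0))\<^sup>2 * integral {a0..b0} (\<lambda>x. (f x)\<^sup>2)"
    if ab: "a0 < b0" and N: "N \<ge> 1" and PP: "PPI a0 b0 N p f" and C: "C1I a0 b0 f g" for a0 b0 N f g
  proof -
    obtain P where P: "\<And>j. j < N \<Longrightarrow> degree (P j) \<le> p"
      "\<And>j x. j < N \<Longrightarrow> x \<in> {knot a0 b0 N j .. knot a0 b0 N (Suc j)} \<Longrightarrow> f x = poly (P j) x"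
      using PP unfolding PPI_def by blast
    define h where "h = (b0 - a0) / N"
    have h0: "h > 0" using ab N by (simp add: h_def)
    have cf: "continuous_on {a0..b0} f" and cg: "continuous_on {a0..b0} g" using C by (auto simp: C1I_def)
    have ig: "(\<lambda>x. (g x)\<^sup>2) integrable_on {a0..b0}"
      by (intro integrable_continuous_interval continuous_intros cg)
    have iff: "(\<lambda>x. (f x)\<^sup>2) integrable_on {a0..b0}"
      by (intro integrable_continuous_interval continuous_intros cf)
    have cell: "integral {knot a0 b0 N j..knot a0 b0 N (Suc j)} (\<lambda>x. (g x)\<^sup>2)
        \<le> K / h\<^sup>2 * integral {knot a0 b0 N j..knot a0 b0 N (Suc j)} (\<lambda>x. (f x)\<^sup>2)" if j: "j < N" for j
    proof -
      let ?\<alpha> = "knot a0 b0 N j"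
      have ks: "knot a0 b0 N (Suc j) = ?\<alpha> + h" by (simp add: knot_Suc h_def)
      have sub: "{?\<alpha>..?\<alpha>+h} \<subseteq> {a0..b0}"
        using knot_mono[OF ab N, of 0 j] knot_mono[OF ab N, of "Suc j" N] j ks by (auto simp: knot_N[OF N])
      have eqf: "\<forall>y\<in>{?\<alpha>..?\<alpha>+h}. f y = poly (P j) y" using P(2)[OF j] ks by auto
      have "integral {?\<alpha>..?\<alpha>+h} (\<lambda>x. (g x)\<^sup>2) = integral {?\<alpha>..?\<alpha>+h} (\<lambda>x. (poly (pderiv (P j)) x)\<^sup>2)"
      proof (rule integral_spike[where S="{?\<alpha>, ?\<alpha>+h}"])
        show "negligible {?\<alpha>, ?\<alpha>+h}" by auto
        fix x assume "x \<in> {?\<alpha>..?\<alpha>+h} - {?\<alpha>, ?\<alpha>+h}"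
        then have "x \<in> {?\<alpha><..<?\<alpha>+h}" by auto
        from deriv_on_cell[OF C this sub eqf] show "(poly (pderiv (P j)) x)\<^sup>2 = (g x)\<^sup>2" by simp
      qed
      also have "\<dots> \<le> K / h\<^sup>2 * integral {?\<alpha>..?\<alpha>+h} (\<lambda>y. (poly (P j) y)\<^sup>2)"
        by (rule K[OF h0 P(1)[OF j]])
      also have "integral {?\<alpha>..?\<alpha>+h} (\<lambda>y. (poly (P j) y)\<^sup>2) = integral {?\<alpha>..?\<alpha>+h} (\<lambda>y. (f y)\<^sup>2)"
        by (rule integral_cong) (use eqf in auto)
      finally show ?thesis by (simp add: ks)
    qed
    have "integral {a0..b0} (\<lambda>x. (g x)\<^sup>2) = (\<Sum>j<N. integral {knot a0 b0 N j..knot a0 b0 N (Suc j)} (\<lambda>x. (g x)\<^sup>2))"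
      by (rule integral_split_cells[OF ab N ig])
    also have "\<dots> \<le> (\<Sum>j<N. K / h\<^sup>2 * integral {knot a0 b0 N j..knot a0 b0 N (Suc j)} (\<lambda>x. (f x)\<^sup>2))"
      by (rule sum_mono) (use cell in auto)
    also have "\<dots> = K / h\<^sup>2 * integral {a0..b0} (\<lambda>x. (f x)\<^sup>2)"
      by (simp add: integral_split_cells[OF ab N iff] sum_distrib_left)
    also have "K / h\<^sup>2 = K * (real N / (b0 - a0))\<^sup>2" by (simp add: h_def power_divide)
    finally show ?thesis .
  qed
  then show ?thesis using that K0 by blast
qed

lemma deriv_glue:
  fixes f :: "real \<Rightarrow> real"
  assumes "(f has_real_derivative D) (at x within {..x})" "(f has_real_derivative D) (at x within {x..})"
  shows "(f has_real_derivative D) (at x)"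
proof -
  have "((\<lambda>y. (f y - f x) / (y - x)) \<longlongrightarrow> D) (at x within ({..x} \<union> {x..}))"
    using assms by (simp add: has_field_derivative_iff Lim_within_Un)
  moreover have "{..x} \<union> {x..} = (UNIV :: real set)" by auto
  ultimately show ?thesis by (simp add: has_field_derivative_iff)
qed

lemma knot_le_iff:
  assumes "a0 < b0" "n \<ge> 1"
  shows "knot a0 b0 n j \<le> x \<longleftrightarrow> real j * (b0 - a0) \<le> (x - a0) * n"
    and "x \<le> knot a0 b0 n j \<longleftrightarrow> (x - a0) * n \<le> real j * (b0 - a0)"
  using assms by (auto simp: knot_def field_simps)

lemma knot_strict_mono:
  assumes "a0 < b0" "n \<ge> 1" "i < j"
  shows "knot a0 b0 n i < knot a0 b0 n j"
  using assms by (auto simp: knot_def intro!: divide_strict_right_mono mult_strict_right_mono)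

lemma knot_inj:
  assumes "a0 < b0" "n \<ge> 1" "knot a0 b0 n i = knot a0 b0 n j"
  shows "i = j"
  using knot_strict_mono[OF assms(1,2), of i j] knot_strict_mono[OF assms(1,2), of j i] assms(3)
  by (cases i j rule: linorder_cases) auto

lemma idx_exists:
  assumes ab: "a0 < b0" and n: "n \<ge> 1" and x: "x \<in> {a0..b0}"
  shows "\<exists>j<n. x \<in> {knot a0 b0 n j..knot a0 b0 n (Suc j)}"
proof -
  define y where "y = (x - a0) * n / (b0 - a0)"
  have y0: "0 \<le> y" and yn: "y \<le> n" using ab x n by (auto simp: y_def field_simps)
  define k where "k = nat \<lfloor>y\<rfloor>"
  have k1: "real k \<le> y" and k2: "y < real k + 1" using y0 by (auto simp: k_def)
  define j where "j = min (n - 1) k"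
  have jn: "j < n" using n by (simp add: j_def)
  have "real j \<le> y" using k1 by (simp add: j_def)
  moreover have "y \<le> real (Suc j)"
  proof (cases "k \<le> n - 1")
    case True then show ?thesis using k2 by (simp add: j_def)
  next
    case False then have "j = n - 1" by (simp add: j_def)
    then show ?thesis using yn n by simp
  qed
  ultimately have "real j * (b0 - a0) \<le> (x - a0) * n" "(x - a0) * n \<le> real (Suc j) * (b0 - a0)"
    using ab by (auto simp: y_def field_simps)
  then show ?thesis using jn knot_le_iff[OF ab n] by auto
qed

lemma cells_overlap:
  assumes ab: "a0 < b0" and n: "n \<ge> 1" and "i < j"
    and xi: "x \<in> {knot a0 b0 n i..knot a0 b0 n (Suc i)}" and xj: "x \<in> {knot a0 b0 n j..knot a0 b0 n (Suc j)}"
  shows "j = Suc i \<and> x = knot a0 b0 n j"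
proof -
  have "knot a0 b0 n (Suc i) \<le> knot a0 b0 n j" using assms by (intro knot_mono) auto
  then have e: "x = knot a0 b0 n j" "knot a0 b0 n (Suc i) = knot a0 b0 n j" using xi xj by auto
  then show ?thesis using knot_inj[OF ab n e(2)] by simp
qed

lemma spline_match:
  assumes ab: "a0 < b0" and n: "n \<ge> 1"
    and M: "\<forall>j. 0 < j \<and> j < n \<longrightarrow> (\<forall>k<q. poly ((pderiv ^^ k) (P (j - 1))) (knot a0 b0 n j)
                   = poly ((pderiv ^^ k) (P j)) (knot a0 b0 n j))"
    and ij: "i < n" "j < n" and k: "k < q"
    and xi: "x \<in> {knot a0 b0 n i..knot a0 b0 n (Suc i)}" and xj: "x \<in> {knot a0 b0 n j..knot a0 b0 n (Suc j)}"
  shows "poly ((pderiv ^^ k) (P i)) x = poly ((pderiv ^^ k) (P j)) x"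
proof (cases i j rule: linorder_cases)
  case less
  from cells_overlap[OF ab n less xi xj] have "j = Suc i" "x = knot a0 b0 n j" by auto
  then show ?thesis using M ij k by auto
next
  case equal then show ?thesis by simp
next
  case greater
  from cells_overlap[OF ab n greater xj xi] have "i = Suc j" "x = knot a0 b0 n i" by auto
  then show ?thesis using M ij k by (metis diff_Suc_1 zero_less_Suc)
qed

lemma cells_union:
  assumes ab: "a0 < b0" and n: "n \<ge> 1"
  shows "(\<Union>j\<in>{..<n}. {knot a0 b0 n j..knot a0 b0 n (Suc j)}) = {a0..b0}"
proof
  show "(\<Union>j\<in>{..<n}. {knot a0 b0 n j..knot a0 b0 n (Suc j)}) \<subseteq> {a0..b0}"
  proof
    fix x assume "x \<in> (\<Union>j\<in>{..<n}. {knot a0 b0 n j..knot a0 b0 n (Suc j)})"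
    then obtain j where j: "j < n" "x \<in> {knot a0 b0 n j..knot a0 b0 n (Suc j)}" by auto
    have "a0 \<le> knot a0 b0 n j" using knot_mono[OF ab n, of 0 j] by simp
    moreover have "knot a0 b0 n (Suc j) \<le> b0" using knot_mono[OF ab n, of "Suc j" n] j knot_N[OF n] by simp
    ultimately show "x \<in> {a0..b0}" using j by auto
  qed
  show "{a0..b0} \<subseteq> (\<Union>j\<in>{..<n}. {knot a0 b0 n j..knot a0 b0 n (Suc j)})"
    using idx_exists[OF ab n] by blast
qed

lemma spline_C1:
  assumes ab: "a0 < b0" and n: "n \<ge> 1" and q: "q \<ge> 2" and f: "f \<in> spline_space a0 b0 n q"
  shows "\<exists>g. C1I a0 b0 f g \<and> g \<in> spline_space a0 b0 n (q - 1)"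
proof -
  obtain P where P1: "\<And>j. j < n \<Longrightarrow> degree (P j) \<le> q"
    and P2: "\<And>j x. j < n \<Longrightarrow> x \<in> {knot a0 b0 n j..knot a0 b0 n (Suc j)} \<Longrightarrow> f x = poly (P j) x"
    and M: "\<forall>j. 0 < j \<and> j < n \<longrightarrow> (\<forall>k<q. poly ((pderiv ^^ k) (P (j - 1))) (knot a0 b0 n j)
                   = poly ((pderiv ^^ k) (P j)) (knot a0 b0 n j))"
    using f unfolding spline_space_def by blast
  let ?C = "\<lambda>j. {knot a0 b0 n j..knot a0 b0 n (Suc j)}"
  define g where "g x = poly (pderiv (P (SOME j. j < n \<and> x \<in> ?C j))) x" for x
  have gcell: "g x = poly (pderiv (P j)) x" if j: "j < n" "x \<in> ?C j" for j x
  proof -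
    have ex: "\<exists>j. j < n \<and> x \<in> ?C j" using j by blast
    define j' where "j' = (SOME j. j < n \<and> x \<in> ?C j)"
    have j': "j' < n" "x \<in> ?C j'" using someI_ex[OF ex] unfolding j'_def by auto
    have "poly ((pderiv ^^ 1) (P j')) x = poly ((pderiv ^^ 1) (P j)) x"
      by (rule spline_match[OF ab n M j'(1) j(1) _ j'(2) j(2)]) (use q in auto)
    then show ?thesis by (simp add: g_def j'_def)
  qed
  have closedC: "closed (?C j)" for j by simp
  have cf: "continuous_on {a0..b0} f"
  proof -
    have "continuous_on (\<Union>j\<in>{..<n}. ?C j) f"
    proof (rule continuous_on_closed_Union)
      fix j assume "j \<in> {..<n}"
      show "continuous_on (?C j) f"
        by (rule continuous_on_eq[of _ "\<lambda>x. poly (P j) x"]) (use P2[of j] \<open>j \<in> {..<n}\<close> in \<open>auto intro!: continuous_intros\<close>)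
    qed auto
    then show ?thesis using cells_union[OF ab n] by simp
  qed
  have cg: "continuous_on {a0..b0} g"
  proof -
    have "continuous_on (\<Union>j\<in>{..<n}. ?C j) g"
    proof (rule continuous_on_closed_Union)
      fix j assume "j \<in> {..<n}"
      show "continuous_on (?C j) g"
        by (rule continuous_on_eq[of _ "\<lambda>x. poly (pderiv (P j)) x"]) (use gcell[of j] \<open>j \<in> {..<n}\<close> in \<open>auto intro!: continuous_intros\<close>)
    qed auto
    then show ?thesis using cells_union[OF ab n] by simp
  qed
  have dg: "(f has_real_derivative g x) (at x)" if x: "x \<in> {a0<..<b0}" for x
  proof (cases "\<exists>j<n. x \<in> {knot a0 b0 n j<..<knot a0 b0 n (Suc j)}")
    case True
    then obtain j where j: "j < n" "x \<in> {knot a0 b0 n j<..<knot a0 b0 n (Suc j)}" by blast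
    have "((\<lambda>y. poly (P j) y) has_real_derivative poly (pderiv (P j)) x) (at x)" by simp
    then have "(f has_real_derivative poly (pderiv (P j)) x) (at x)"
      by (rule has_field_derivative_transform_within_open[where S="{knot a0 b0 n j<..<knot a0 b0 n (Suc j)}"])
         (use j P2[of j] in auto)
    moreover have "g x = poly (pderiv (P j)) x" using gcell[OF j(1)] j(2) by auto
    ultimately show ?thesis by simp
  next
    case False
    have "x \<in> {a0..b0}" using x by auto
    then obtain j where j: "j < n" "x \<in> ?C j" using idx_exists[OF ab n] by blast
    have "\<exists>i. 0 < i \<and> i < n \<and> x = knot a0 b0 n i"
    proof (cases "x = knot a0 b0 n j")
      case True
      then have "j \<noteq> 0" using x by (metis greaterThanLessThan_iff knot_0 less_irrefl)
      then show ?thesis using True j by blast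
    next
      case xne: False
      then have "knot a0 b0 n j < x" using j by auto
      then have "x = knot a0 b0 n (Suc j)" using False j by force
      moreover then have "Suc j \<noteq> n" using x knot_N[OF n] by auto
      ultimately show ?thesis using j by (intro exI[of _ "Suc j"]) auto
    qed
    then obtain i where i: "0 < i" "i < n" "x = knot a0 b0 n i" by blast
    have xl: "x \<in> ?C (i - 1)" and xr: "x \<in> ?C i"
      using i knot_mono[OF ab n, of "i - 1" i] knot_mono[OF ab n, of i "Suc i"] by auto
    have dl: "knot a0 b0 n (i - 1) < x" using knot_strict_mono[OF ab n, of "i - 1" i] i by auto
    have dr: "x < knot a0 b0 n (Suc i)" using knot_strict_mono[OF ab n, of i "Suc i"] i by auto
    have L: "(f has_real_derivative g x) (at x within {..x})"
    proof -
      have "((\<lambda>y. poly (P (i - 1)) y) has_real_derivative poly (pderiv (P (i - 1))) x) (at x within {..x})"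
        by (rule has_field_derivative_at_within) simp
      then have "(f has_real_derivative poly (pderiv (P (i - 1))) x) (at x within {..x})"
      proof (rule has_field_derivative_transform_within[where d = "x - knot a0 b0 n (i - 1)"])
        show "0 < x - knot a0 b0 n (i - 1)" using dl by simp
        show "x \<in> {..x}" by simp
        fix y assume y: "y \<in> {..x}" "dist y x < x - knot a0 b0 n (i - 1)"
        then have "y \<in> ?C (i - 1)" using i xl by (auto simp: dist_real_def)
        then show "poly (P (i - 1)) y = f y" using P2[of "i - 1" y] i by simp
      qed
      then show ?thesis using gcell[of "i - 1" x] i xl by simp
    qed
    have R: "(f has_real_derivative g x) (at x within {x..})"
    proof -
      have "((\<lambda>y. poly (P i) y) has_real_derivative poly (pderiv (P i)) x) (at x within {x..})"
        by (rule has_field_derivative_at_within) simp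
      then have "(f has_real_derivative poly (pderiv (P i)) x) (at x within {x..})"
      proof (rule has_field_derivative_transform_within[where d = "knot a0 b0 n (Suc i) - x"])
        show "0 < knot a0 b0 n (Suc i) - x" using dr by simp
        show "x \<in> {x..}" by simp
        fix y assume y: "y \<in> {x..}" "dist y x < knot a0 b0 n (Suc i) - x"
        then have "y \<in> ?C i" using i by (auto simp: dist_real_def)
        then show "poly (P i) y = f y" using P2[of i y] i by simp
      qed
      then show ?thesis using gcell[of i x] i xr by simp
    qed
    show ?thesis by (rule deriv_glue[OF L R])
  qed
  have "g \<in> spline_space a0 b0 n (q - 1)"
    unfolding spline_space_def
  proof (intro CollectI exI[of _ "\<lambda>j. pderiv (P j)"] conjI allI impI ballI)
    fix j assume "j < n"
    then have "degree (P j) \<le> q" by (rule P1)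
    then show "degree (pderiv (P j)) \<le> q - 1" by (simp add: degree_pderiv)
  next
    fix j x assume "j < n" "x \<in> ?C j"
    then show "g x = poly (pderiv (P j)) x" by (rule gcell)
  next
    fix j k assume j: "0 < j \<and> j < n" and k: "k < q - 1"
    have "poly ((pderiv ^^ Suc k) (P (j - 1))) (knot a0 b0 n j) = poly ((pderiv ^^ Suc k) (P j)) (knot a0 b0 n j)"
      using M j k by (simp del: funpow.simps)
    then show "poly ((pderiv ^^ k) (pderiv (P (j - 1)))) (knot a0 b0 n j) = poly ((pderiv ^^ k) (pderiv (P j))) (knot a0 b0 n j)"
      by (simp add: funpow_Suc_right del: funpow.simps)
  qed
  then show ?thesis using cf cg dg unfolding C1I_def by blast
qed

lemma spline_lincomb:
  assumes f: "f \<in> spline_space a0 b0 n q" and g: "g \<in> spline_space a0 b0 n q"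
  shows "(\<lambda>y. f y + s * g y) \<in> spline_space a0 b0 n q"
proof -
  obtain P where P: "\<forall>j<n. degree (P j) \<le> q \<and>
             (\<forall>x\<in>{knot a0 b0 n j .. knot a0 b0 n (Suc j)}. f x = poly (P j) x)"
    "\<forall>j. 0 < j \<and> j < n \<longrightarrow> (\<forall>k<q. poly ((pderiv ^^ k) (P (j - 1))) (knot a0 b0 n j)
                   = poly ((pderiv ^^ k) (P j)) (knot a0 b0 n j))"
    using f unfolding spline_space_def mem_Collect_eq by blast
  obtain R where R: "\<forall>j<n. degree (R j) \<le> q \<and>
             (\<forall>x\<in>{knot a0 b0 n j .. knot a0 b0 n (Suc j)}. g x = poly (R j) x)"
    "\<forall>j. 0 < j \<and> j < n \<longrightarrow> (\<forall>k<q. poly ((pderiv ^^ k) (R (j - 1))) (knot a0 b0 n j)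
                   = poly ((pderiv ^^ k) (R j)) (knot a0 b0 n j))"
    using g unfolding spline_space_def mem_Collect_eq by blast
  show ?thesis unfolding spline_space_def mem_Collect_eq
  proof (intro exI[of _ "\<lambda>j. P j + smult s (R j)"] conjI allI impI ballI)
    fix j assume j: "j < n"
    have "degree (P j + smult s (R j)) \<le> max (degree (P j)) (degree (smult s (R j)))" by (rule degree_add_le_max)
    also have "\<dots> \<le> q" using P(1) R(1) j degree_smult_le[of s "R j"] by auto
    finally show "degree (P j + smult s (R j)) \<le> q" .
  next
    fix j x assume "j < n" "x \<in> {knot a0 b0 n j .. knot a0 b0 n (Suc j)}"
    then show "f x + s * g x = poly (P j + smult s (R j)) x" using P(1) R(1) by simp
  next
    fix j k assume "0 < j \<and> j < n" "k < q"
    then show "poly ((pderiv ^^ k) (P (j - 1) + smult s (R (j - 1)))) (knot a0 b0 n j) =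
               poly ((pderiv ^^ k) (P j + smult s (R j))) (knot a0 b0 n j)"
      using P(2) R(2) by (simp add: higher_pderiv_add higher_pderiv_smult)
  qed
qed

lemma spline_scale:
  assumes g: "g \<in> spline_space a0 b0 n q"
  shows "(\<lambda>y. s * g y) \<in> spline_space a0 b0 n q"
proof -
  obtain R where R: "\<forall>j<n. degree (R j) \<le> q \<and>
             (\<forall>x\<in>{knot a0 b0 n j .. knot a0 b0 n (Suc j)}. g x = poly (R j) x)"
    "\<forall>j. 0 < j \<and> j < n \<longrightarrow> (\<forall>k<q. poly ((pderiv ^^ k) (R (j - 1))) (knot a0 b0 n j)
                   = poly ((pderiv ^^ k) (R j)) (knot a0 b0 n j))"
    using g unfolding spline_space_def mem_Collect_eq by blast
  show ?thesis unfolding spline_space_def mem_Collect_eq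
  proof (intro exI[of _ "\<lambda>j. smult s (R j)"] conjI allI impI ballI)
    fix j assume j: "j < n"
    show "degree (smult s (R j)) \<le> q" using R(1) j degree_smult_le[of s "R j"] by auto
  next
    fix j x assume "j < n" "x \<in> {knot a0 b0 n j .. knot a0 b0 n (Suc j)}"
    then show "s * g x = poly (smult s (R j)) x" using R(1) by simp
  next
    fix j k assume "0 < j \<and> j < n" "k < q"
    then show "poly ((pderiv ^^ k) (smult s (R (j - 1)))) (knot a0 b0 n j) =
               poly ((pderiv ^^ k) (smult s (R j))) (knot a0 b0 n j)"
      using R(2) by (simp add: higher_pderiv_smult)
  qed
qed

lemma Vh_lincomb: "f \<in> Vh a0 b0 N p \<Longrightarrow> g \<in> Vh a0 b0 N p \<Longrightarrow> (\<lambda>y. f y + s * g y) \<in> Vh a0 b0 N p"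
  by (auto simp: Vh_def intro: spline_lincomb)

lemma Vh_scale: "g \<in> Vh a0 b0 N p \<Longrightarrow> (\<lambda>y. s * g y) \<in> Vh a0 b0 N p"
  by (auto simp: Vh_def intro: spline_scale)

lemma knot_scale:
  assumes "d \<ge> 1"
  shows "knot a0 b0 (n * d) (i * d) = knot a0 b0 n i"
  using assms by (cases "n = 0") (auto simp: knot_def field_simps)

lemma spline_PPI:
  assumes ab: "a0 < b0" and n: "n \<ge> 1" and d: "d \<ge> 1" and f: "f \<in> spline_space a0 b0 n p"
  shows "PPI a0 b0 (n * d) p f"
proof -
  obtain P where P: "\<forall>j<n. degree (P j) \<le> p \<and>
             (\<forall>x\<in>{knot a0 b0 n j .. knot a0 b0 n (Suc j)}. f x = poly (P j) x)"
    using f unfolding spline_space_def mem_Collect_eq by blast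
  have nd: "n * d \<ge> 1" using n d by simp
  show ?thesis unfolding PPI_def
  proof (intro exI[of _ "\<lambda>j. P (j div d)"] allI impI conjI ballI)
    fix j assume j: "j < n * d"
    have jd: "j div d < n" using j d by (simp add: div_less_iff_less_mult mult.commute)
    then show "degree (P (j div d)) \<le> p" using P by blast
    fix x assume x: "x \<in> {knot a0 b0 (n * d) j..knot a0 b0 (n * d) (Suc j)}"
    have l: "knot a0 b0 n (j div d) \<le> knot a0 b0 (n * d) j"
      using knot_scale[OF d, of a0 b0 n "j div d"] knot_mono[OF ab nd, of "j div d * d" j]
      using div_mult_mod_eq[of j d] by simp
    have "Suc j \<le> Suc (j div d) * d"
    proof -
      have "j div d * d + j mod d = j" by (rule div_mult_mod_eq)
      moreover have "j mod d < d" using d by simp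
      ultimately show ?thesis unfolding mult_Suc by linarith
    qed
    then have r: "knot a0 b0 (n * d) (Suc j) \<le> knot a0 b0 n (Suc (j div d))"
      using knot_scale[OF d, of a0 b0 n "Suc (j div d)"] knot_mono[OF ab nd, of "Suc j" "Suc (j div d) * d"]
      by simp
    show "f x = poly (P (j div d)) x" using P jd x l r by auto
  qed
qed

lemma bubble_Vh:
  assumes ab: "a0 < b0" and p: "p \<ge> 2"
  shows "(\<lambda>x. (x - a0) * (b0 - x)) \<in> Vh a0 b0 N p"
  unfolding Vh_def spline_space_def
proof (intro CollectI conjI exI[of _ "\<lambda>j. [:- a0, 1:] * [:b0, -1:]"] allI impI ballI)
  fix j
  have "degree ([:- a0, 1:] * [:b0, -1:]) \<le> degree [:- a0, 1:] + degree [:b0, -1:]" by (rule degree_mult_le)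
  also have "\<dots> \<le> 2" by simp
  finally show "degree ([:- a0, 1:] * [:b0, -1:]) \<le> p" using p by simp
qed (auto simp: algebra_simps)

lemma bubble_nonzero:
  assumes ab: "a0 < b0"
  shows "nonzero_on a0 b0 (\<lambda>x. (x - a0) * (b0 - x))"
  unfolding nonzero_on_def
  by (rule bexI[of _ "(a0 + b0) / 2"]) (use ab in auto)

lemma L2_on_cont:
  assumes "continuous_on {a0..b0} f"
  shows "L2_on a0 b0 f"
  unfolding L2_on_def set_borel_measurable_def
proof
  show "(\<lambda>x. indicator {a0..b0} x *\<^sub>R f x) \<in> borel_measurable lborel"
    using borel_measurable_continuous_on_indicator[OF _ assms] by simp
  show "set_integrable lborel {a0..b0} (\<lambda>x. (f x)\<^sup>2)"
    by (intro borel_integrable_atLeastAtMost' continuous_intros assms)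
qed

lemma lint_rep:
  fixes F G :: "real \<Rightarrow> real"
  assumes F: "continuous_on {a..b} F" and eq: "\<forall>x\<in>{a<..<b}. G x = F x"
  shows "set_integrable lborel {a..b} G" "(LINT x:{a..b}|lborel. G x) = (LINT x:{a..b}|lborel. F x)"
proof -
  have iF: "set_integrable lborel {a..b} F" by (rule borel_integrable_atLeastAtMost'[OF F])
  have e: "indicator {a..b} x *\<^sub>R F x = indicator {a..b} x *\<^sub>R G x" if "x \<notin> {a, b}" for x
    using eq that by (cases "x \<in> {a..b}") auto
  have "integrable lborel (\<lambda>x. indicator {a..b} x *\<^sub>R F x) \<longleftrightarrow> integrable lborel (\<lambda>x. indicator {a..b} x *\<^sub>R G x)"
  proof (rule integrable_discrete_difference[where X="{a,b}"])
    fix x assume "x \<in> space lborel" and xn: "x \<notin> {a, b}"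
    show "indicator {a..b} x *\<^sub>R F x = indicator {a..b} x *\<^sub>R G x" by (rule e[OF xn])
  qed auto
  then show "set_integrable lborel {a..b} G" using iF unfolding set_integrable_def by simp
  show "(LINT x:{a..b}|lborel. G x) = (LINT x:{a..b}|lborel. F x)"
    unfolding set_lebesgue_integral_def
  proof (rule integral_discrete_difference[where X="{a,b}"])
    fix x assume "x \<in> space lborel" and xn: "x \<notin> {a, b}"
    show "indicator {a..b} x *\<^sub>R G x = indicator {a..b} x *\<^sub>R F x" by (rule e[OF xn, symmetric])
  qed auto
qed

lemma ip_integrable:
  fixes f g :: "real \<Rightarrow> real"
  assumes "continuous_on {a0..b0} f" "continuous_on {a0..b0} g"
  shows "set_integrable lborel {a0..b0} (\<lambda>x. f x * g x)"
  by (intro borel_integrable_atLeastAtMost' continuous_intros assms)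

lemma ip_integral:
  fixes f g :: "real \<Rightarrow> real"
  assumes "continuous_on {a0..b0} f" "continuous_on {a0..b0} g"
  shows "ip a0 b0 f g = integral {a0..b0} (\<lambda>x. f x * g x)"
  unfolding ip_def by (rule set_borel_integral_eq_integral(2)[OF ip_integrable[OF assms]])

lemma ip_comm: "ip a0 b0 f g = ip a0 b0 g f"
  unfolding ip_def by (simp add: mult.commute)

lemma ip_lin:
  fixes f g h :: "real \<Rightarrow> real"
  assumes f: "continuous_on {a0..b0} f" and g: "continuous_on {a0..b0} g" and h: "continuous_on {a0..b0} h"
  shows "ip a0 b0 f (\<lambda>x. g x + s * h x) = ip a0 b0 f g + s * ip a0 b0 f h"
proof -
  have "ip a0 b0 f (\<lambda>x. g x + s * h x) = (LINT x:{a0..b0}|lborel. f x * g x + s * (f x * h x))"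
    unfolding ip_def by (simp add: algebra_simps)
  also have "\<dots> = ip a0 b0 f g + s * ip a0 b0 f h"
    unfolding ip_def using ip_integrable[OF f g] ip_integrable[OF f h] by simp
  finally show ?thesis .
qed

lemma ip_lin_left:
  fixes f g h :: "real \<Rightarrow> real"
  assumes f: "continuous_on {a0..b0} f" and g: "continuous_on {a0..b0} g" and h: "continuous_on {a0..b0} h"
  shows "ip a0 b0 (\<lambda>x. g x + s * h x) f = ip a0 b0 g f + s * ip a0 b0 h f"
  using ip_lin[OF f g h, of s] by (simp add: ip_comm)

lemma ip_nonneg: "ip a0 b0 f f \<ge> 0"
  unfolding ip_def set_lebesgue_integral_def
  by (rule Bochner_Integration.integral_nonneg) (auto simp: indicator_def)

lemma ip_mono:
  fixes f g f' g' :: "real \<Rightarrow> real"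
  assumes "continuous_on {a0..b0} f" "continuous_on {a0..b0} g"
    "continuous_on {a0..b0} f'" "continuous_on {a0..b0} g'"
    and "\<And>x. x \<in> {a0..b0} \<Longrightarrow> f x * g x \<le> f' x * g' x"
  shows "ip a0 b0 f g \<le> ip a0 b0 f' g'"
  unfolding ip_def by (rule set_integral_mono) (use assms ip_integrable in auto)

lemma young_pt:
  fixes x y \<eta> :: real
  assumes "\<eta> > 0"
  shows "2 * \<bar>x * y\<bar> \<le> \<eta> * (x * x) + (y * y) / \<eta>"
proof -
  have "0 \<le> (\<eta> * \<bar>x\<bar> - \<bar>y\<bar>)\<^sup>2" by simp
  then have "2 * \<eta> * \<bar>x * y\<bar> \<le> \<eta> * (\<eta> * (x * x)) + y * y"
    by (simp add: power2_eq_square algebra_simps abs_mult)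
  then show ?thesis using assms by (simp add: field_simps)
qed

lemma half_abs: "2 * \<bar>X\<bar> \<le> (Y::real) \<Longrightarrow> X \<le> Y / 2 \<and> - X \<le> Y / 2"
  by linarith

lemma abs_from_half: "X \<le> L \<Longrightarrow> - X \<le> L \<Longrightarrow> L = (Y::real) / 2 \<Longrightarrow> 2 * \<bar>X\<bar> \<le> Y"
  by linarith

lemma ip_young:
  fixes f g :: "real \<Rightarrow> real"
  assumes f: "continuous_on {a0..b0} f" and g: "continuous_on {a0..b0} g" and \<eta>: "\<eta> > 0"
  shows "2 * \<bar>ip a0 b0 f g\<bar> \<le> \<eta> * ip a0 b0 f f + ip a0 b0 g g / \<eta>"
proof -
  have iff: "set_integrable lborel {a0..b0} (\<lambda>x. f x * f x)" by (rule ip_integrable[OF f f])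
  have igg: "set_integrable lborel {a0..b0} (\<lambda>x. g x * g x)" by (rule ip_integrable[OF g g])
  have ifg: "set_integrable lborel {a0..b0} (\<lambda>x. f x * g x)" by (rule ip_integrable[OF f g])
  have R: "set_integrable lborel {a0..b0} (\<lambda>x. \<eta> * (f x * f x) / 2 + (g x * g x) / \<eta> / 2)"
    using iff igg by (intro set_integral_add set_integrable_mult_right set_integrable_mult_left) auto
  have "ip a0 b0 f g \<le> (LINT x:{a0..b0}|lborel. \<eta> * (f x * f x) / 2 + (g x * g x) / \<eta> / 2)"
    unfolding ip_def
  proof (rule set_integral_mono[OF ifg R])
    fix x show "f x * g x \<le> \<eta> * (f x * f x) / 2 + g x * g x / \<eta> / 2"
      using half_abs[OF young_pt[OF \<eta>, of "f x" "g x"]] by (simp add: add_divide_distrib)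
  qed
  moreover have "- ip a0 b0 f g \<le> (LINT x:{a0..b0}|lborel. \<eta> * (f x * f x) / 2 + (g x * g x) / \<eta> / 2)"
  proof -
    have "- ip a0 b0 f g = (LINT x:{a0..b0}|lborel. - (f x * g x))"
      unfolding ip_def by (simp add: set_integral_uminus[OF ifg])
    also have "\<dots> \<le> (LINT x:{a0..b0}|lborel. \<eta> * (f x * f x) / 2 + (g x * g x) / \<eta> / 2)"
    proof (rule set_integral_mono[OF _ R])
      show "set_integrable lborel {a0..b0} (\<lambda>x. - (f x * g x))"
        using ifg unfolding set_integrable_def by simp
      fix x show "- (f x * g x) \<le> \<eta> * (f x * f x) / 2 + g x * g x / \<eta> / 2"
        using half_abs[OF young_pt[OF \<eta>, of "f x" "g x"]] by (simp add: add_divide_distrib)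
    qed
    finally show ?thesis .
  qed
  moreover have "(LINT x:{a0..b0}|lborel. \<eta> * (f x * f x) / 2 + (g x * g x) / \<eta> / 2)
      = (\<eta> * ip a0 b0 f f + ip a0 b0 g g / \<eta>) / 2"
    unfolding ip_def using iff igg by (simp add: set_integral_add set_integrable_mult_right set_integrable_mult_left)
  ultimately show ?thesis by (rule abs_from_half)
qed

lemma ip_cong:
  assumes "\<And>x. x \<in> {a0..b0} \<Longrightarrow> f x = f' x" "\<And>x. x \<in> {a0..b0} \<Longrightarrow> g x = g' x"
  shows "ip a0 b0 f g = ip a0 b0 f' g'"
  unfolding ip_def by (rule set_lebesgue_integral_cong) (use assms in auto)

lemma sq_comb_le: "(x + s * y)\<^sup>2 \<le> 2 * x\<^sup>2 + 2 * s\<^sup>2 * (y::real)\<^sup>2"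
proof -
  have "0 \<le> (x - s * y)\<^sup>2" by simp
  then show ?thesis by (simp add: power2_eq_square algebra_simps)
qed

lemma ip_sq:
  fixes f g :: "real \<Rightarrow> real"
  assumes f: "continuous_on {a0..b0} f" and g: "continuous_on {a0..b0} g"
  shows "ip a0 b0 (\<lambda>x. f x + s * g x) (\<lambda>x. f x + s * g x) \<le> 2 * ip a0 b0 f f + 2 * s\<^sup>2 * ip a0 b0 g g"
proof -
  have "ip a0 b0 (\<lambda>x. f x + s * g x) (\<lambda>x. f x + s * g x) \<le> (LINT x:{a0..b0}|lborel. 2 * (f x * f x) + 2 * s\<^sup>2 * (g x * g x))"
    unfolding ip_def
  proof (rule set_integral_mono)
    show "set_integrable lborel {a0..b0} (\<lambda>x. (f x + s * g x) * (f x + s * g x))"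
      by (intro borel_integrable_atLeastAtMost' continuous_intros f g)
    show "set_integrable lborel {a0..b0} (\<lambda>x. 2 * (f x * f x) + 2 * s\<^sup>2 * (g x * g x))"
      by (intro borel_integrable_atLeastAtMost' continuous_intros f g)
    fix x show "(f x + s * g x) * (f x + s * g x) \<le> 2 * (f x * f x) + 2 * s\<^sup>2 * (g x * g x)"
      using sq_comb_le[of "f x" s "g x"] by (simp add: power2_eq_square)
  qed
  also have "\<dots> = 2 * ip a0 b0 f f + 2 * s\<^sup>2 * ip a0 b0 g g"
    unfolding ip_def using ip_integrable[OF f f] ip_integrable[OF g g] by simp
  finally show ?thesis .
qed

definition Wc :: "real \<Rightarrow> real \<Rightarrow> (real \<Rightarrow> real) \<Rightarrow> (real \<Rightarrow> real) \<Rightarrow> (real \<Rightarrow> real) \<Rightarrow> real" where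
  "Wc a0 b0 c f g = (LINT x:{a0..b0}|lborel. c x * f x * g x)"

lemma Wc_integrable:
  fixes f g :: "real \<Rightarrow> real"
  assumes cm: "c \<in> borel_measurable lborel" and cb: "AE x in lborel. x \<in> {a0..b0} \<longrightarrow> \<bar>c x\<bar> \<le> Mc"
    and f: "continuous_on {a0..b0} f" and g: "continuous_on {a0..b0} g"
  shows "set_integrable lborel {a0..b0} (\<lambda>x. c x * f x * g x)"
proof (rule set_integrable_bound)
  show "set_integrable lborel {a0..b0} (\<lambda>x. \<bar>Mc\<bar> * (\<bar>f x\<bar> * \<bar>g x\<bar>))"
    by (intro borel_integrable_atLeastAtMost' continuous_intros f g)
  have m: "(\<lambda>x. indicator {a0..b0} x *\<^sub>R (f x * g x)) \<in> borel_measurable lborel"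
    using borel_measurable_continuous_on_indicator[of "{a0..b0}" "\<lambda>x. f x * g x"]
    by (simp add: continuous_on_mult f g)
  have "(\<lambda>x. c x * (indicator {a0..b0} x *\<^sub>R (f x * g x))) \<in> borel_measurable lborel"
    using cm m by measurable
  moreover have "(\<lambda>x. c x * (indicator {a0..b0} x *\<^sub>R (f x * g x))) = (\<lambda>x. indicator {a0..b0} x *\<^sub>R (c x * f x * g x))"
    by (auto simp: indicator_def)
  ultimately show "set_borel_measurable lborel {a0..b0} (\<lambda>x. c x * f x * g x)"
    unfolding set_borel_measurable_def by simp
  show "AE x in lborel. x \<in> {a0..b0} \<longrightarrow> norm (c x * f x * g x) \<le> norm (\<bar>Mc\<bar> * (\<bar>f x\<bar> * \<bar>g x\<bar>))"
    using cb
  proof (rule AE_mp, intro AE_I2 impI)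
    fix x assume "x \<in> {a0..b0} \<longrightarrow> \<bar>c x\<bar> \<le> Mc" "x \<in> {a0..b0}"
    then have "\<bar>c x\<bar> \<le> \<bar>Mc\<bar>" by auto
    then show "norm (c x * f x * g x) \<le> norm (\<bar>Mc\<bar> * (\<bar>f x\<bar> * \<bar>g x\<bar>))"
      by (simp add: abs_mult mult_right_mono mult.assoc)
  qed
qed

locale wsetup =
  fixes a0 b0 :: real and c :: "real \<Rightarrow> real" and Mc \<sigma>0 :: real
  assumes cm: "c \<in> borel_measurable lborel"
    and cb: "AE x in lborel. x \<in> {a0..b0} \<longrightarrow> \<bar>c x\<bar> \<le> Mc"
    and cpos: "AE x in lborel. x \<in> {a0..b0} \<longrightarrow> c x \<ge> \<sigma>0"
    and s0: "\<sigma>0 > 0"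
begin

lemma Wi: "continuous_on {a0..b0} f \<Longrightarrow> continuous_on {a0..b0} g \<Longrightarrow> set_integrable lborel {a0..b0} (\<lambda>x. c x * f x * g x)"
  by (rule Wc_integrable[OF cm cb])

lemma Wc_lin:
  assumes f: "continuous_on {a0..b0} f" and g: "continuous_on {a0..b0} g" and h: "continuous_on {a0..b0} h"
  shows "Wc a0 b0 c f (\<lambda>x. g x + s * h x) = Wc a0 b0 c f g + s * Wc a0 b0 c f h"
proof -
  have "Wc a0 b0 c f (\<lambda>x. g x + s * h x) = (LINT x:{a0..b0}|lborel. c x * f x * g x + s * (c x * f x * h x))"
    unfolding Wc_def by (simp add: algebra_simps)
  also have "\<dots> = Wc a0 b0 c f g + s * Wc a0 b0 c f h"
    unfolding Wc_def using Wi[OF f g] Wi[OF f h] by simp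
  finally show ?thesis .
qed

lemma Wc_comm: "Wc a0 b0 c f g = Wc a0 b0 c g f"
  unfolding Wc_def by (simp add: algebra_simps)

lemma Wc_cong:
  assumes "\<And>x. x \<in> {a0..b0} \<Longrightarrow> f x = f' x" "\<And>x. x \<in> {a0..b0} \<Longrightarrow> g x = g' x"
  shows "Wc a0 b0 c f g = Wc a0 b0 c f' g'"
  unfolding Wc_def by (rule set_lebesgue_integral_cong) (use assms in auto)

lemma Wc_young:
  assumes f: "continuous_on {a0..b0} f" and g: "continuous_on {a0..b0} g" and \<eta>: "\<eta> > 0"
  shows "2 * \<bar>Wc a0 b0 c f g\<bar> \<le> \<eta> * Wc a0 b0 c f f + Wc a0 b0 c g g / \<eta>"
proof -
  have ifg: "set_integrable lborel {a0..b0} (\<lambda>x. c x * f x * g x)" by (rule Wi[OF f g])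
  have R: "set_integrable lborel {a0..b0} (\<lambda>x. \<eta> * (c x * f x * f x) / 2 + (c x * g x * g x) / \<eta> / 2)"
    using Wi[OF f f] Wi[OF g g] by (intro set_integral_add set_integrable_mult_right set_integrable_mult_left) auto
  have pt: "c x * f x * g x \<le> \<eta> * (c x * f x * f x) / 2 + (c x * g x * g x) / \<eta> / 2 \<and>
            - (c x * f x * g x) \<le> \<eta> * (c x * f x * f x) / 2 + (c x * g x * g x) / \<eta> / 2" if c0: "c x \<ge> 0" for x
  proof -
    have "c x * (2 * \<bar>f x * g x\<bar>) \<le> c x * (\<eta> * (f x * f x) + (g x * g x) / \<eta>)"
      by (rule mult_left_mono[OF young_pt[OF \<eta>] c0])
    then have "2 * \<bar>c x * f x * g x\<bar> \<le> \<eta> * (c x * f x * f x) + (c x * g x * g x) / \<eta>"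
      using c0 by (simp add: abs_mult algebra_simps)
    from half_abs[OF this] show ?thesis by (simp add: add_divide_distrib)
  qed
  have c0: "AE x in lborel. x \<in> {a0..b0} \<longrightarrow> c x \<ge> 0" using cpos by eventually_elim (use s0 in auto)
  have "Wc a0 b0 c f g \<le> (LINT x:{a0..b0}|lborel. \<eta> * (c x * f x * f x) / 2 + (c x * g x * g x) / \<eta> / 2)"
    unfolding Wc_def by (rule set_integral_mono_AE[OF ifg R]) (use c0 in \<open>eventually_elim, use pt in blast\<close>)
  moreover have "- Wc a0 b0 c f g \<le> (LINT x:{a0..b0}|lborel. \<eta> * (c x * f x * f x) / 2 + (c x * g x * g x) / \<eta> / 2)"
  proof -
    have "- Wc a0 b0 c f g = (LINT x:{a0..b0}|lborel. - (c x * f x * g x))"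
      unfolding Wc_def by (simp add: set_integral_uminus[OF ifg])
    also have "\<dots> \<le> (LINT x:{a0..b0}|lborel. \<eta> * (c x * f x * f x) / 2 + (c x * g x * g x) / \<eta> / 2)"
    proof (rule set_integral_mono_AE[OF _ R])
      show "set_integrable lborel {a0..b0} (\<lambda>x. - (c x * f x * g x))"
        using ifg unfolding set_integrable_def by simp
      show "AE x\<in>{a0..b0} in lborel. - (c x * f x * g x) \<le> \<eta> * (c x * f x * f x) / 2 + c x * g x * g x / \<eta> / 2"
        using c0 by eventually_elim (use pt in blast)
    qed
    finally show ?thesis .
  qed
  moreover have "(LINT x:{a0..b0}|lborel. \<eta> * (c x * f x * f x) / 2 + (c x * g x * g x) / \<eta> / 2)
      = (\<eta> * Wc a0 b0 c f f + Wc a0 b0 c g g / \<eta>) / 2"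
    unfolding Wc_def using Wi[OF f f] Wi[OF g g] by (simp add: set_integral_add set_integrable_mult_right set_integrable_mult_left)
  ultimately show ?thesis by (rule abs_from_half)
qed

lemma Wc_lower:
  assumes f: "continuous_on {a0..b0} f"
  shows "\<sigma>0 * ip a0 b0 f f \<le> Wc a0 b0 c f f"
proof -
  have "\<sigma>0 * ip a0 b0 f f = (LINT x:{a0..b0}|lborel. \<sigma>0 * (f x * f x))" unfolding ip_def by simp
  also have "\<dots> \<le> Wc a0 b0 c f f" unfolding Wc_def
  proof (rule set_integral_mono_AE)
    show "set_integrable lborel {a0..b0} (\<lambda>x. \<sigma>0 * (f x * f x))" using ip_integrable[OF f f] by simp
    show "set_integrable lborel {a0..b0} (\<lambda>x. c x * f x * f x)" by (rule Wi[OF f f])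
    show "AE x\<in>{a0..b0} in lborel. \<sigma>0 * (f x * f x) \<le> c x * f x * f x"
      using cpos
    proof eventually_elim
      case (elim x)
      show ?case
      proof
        assume "x \<in> {a0..b0}"
        then have "\<sigma>0 \<le> c x" using elim by auto
        then have "\<sigma>0 * (f x * f x) \<le> c x * (f x * f x)" by (rule mult_right_mono) simp
        then show "\<sigma>0 * (f x * f x) \<le> c x * f x * f x" by (simp add: mult.assoc)
      qed
    qed
  qed
  finally show ?thesis .
qed

lemma Wc_upper:
  assumes f: "continuous_on {a0..b0} f"
  shows "Wc a0 b0 c f f \<le> Mc * ip a0 b0 f f"
proof -
  have "Wc a0 b0 c f f \<le> (LINT x:{a0..b0}|lborel. Mc * (f x * f x))" unfolding Wc_def
  proof (rule set_integral_mono_AE)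
    show "set_integrable lborel {a0..b0} (\<lambda>x. Mc * (f x * f x))" using ip_integrable[OF f f] by simp
    show "set_integrable lborel {a0..b0} (\<lambda>x. c x * f x * f x)" by (rule Wi[OF f f])
    show "AE x\<in>{a0..b0} in lborel. c x * f x * f x \<le> Mc * (f x * f x)"
      using cb
    proof eventually_elim
      case (elim x)
      show ?case
      proof
        assume "x \<in> {a0..b0}"
        then have "c x \<le> Mc" using elim by auto
        then have "c x * (f x * f x) \<le> Mc * (f x * f x)" by (rule mult_right_mono) simp
        then show "c x * f x * f x \<le> Mc * (f x * f x)" by (simp add: mult.assoc)
      qed
    qed
  qed
  also have "\<dots> = Mc * ip a0 b0 f f" unfolding ip_def by simp
  finally show ?thesis .
qed

lemma Wc_sq:
  assumes f: "continuous_on {a0..b0} f" and g: "continuous_on {a0..b0} g"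
  shows "Wc a0 b0 c (\<lambda>x. f x + s * g x) (\<lambda>x. f x + s * g x) \<le> 2 * Wc a0 b0 c f f + 2 * s\<^sup>2 * Wc a0 b0 c g g"
proof -
  have fg: "continuous_on {a0..b0} (\<lambda>x. f x + s * g x)" by (intro continuous_intros f g)
  have "Wc a0 b0 c (\<lambda>x. f x + s * g x) (\<lambda>x. f x + s * g x) \<le> (LINT x:{a0..b0}|lborel. 2 * (c x * f x * f x) + 2 * s\<^sup>2 * (c x * g x * g x))"
    unfolding Wc_def
  proof (rule set_integral_mono_AE)
    show "set_integrable lborel {a0..b0} (\<lambda>x. c x * (f x + s * g x) * (f x + s * g x))" by (rule Wi[OF fg fg])
    show "set_integrable lborel {a0..b0} (\<lambda>x. 2 * (c x * f x * f x) + 2 * s\<^sup>2 * (c x * g x * g x))"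
      using Wi[OF f f] Wi[OF g g] by (intro set_integral_add set_integrable_mult_right) auto
    show "AE x\<in>{a0..b0} in lborel. c x * (f x + s * g x) * (f x + s * g x) \<le> 2 * (c x * f x * f x) + 2 * s\<^sup>2 * (c x * g x * g x)"
      using cpos
    proof eventually_elim
      case (elim x)
      show ?case
      proof
        assume "x \<in> {a0..b0}"
        then have c0: "0 \<le> c x" using elim s0 by auto
        have "c x * (f x + s * g x)\<^sup>2 \<le> c x * (2 * (f x)\<^sup>2 + 2 * s\<^sup>2 * (g x)\<^sup>2)"
          by (rule mult_left_mono[OF sq_comb_le c0])
        then show "c x * (f x + s * g x) * (f x + s * g x) \<le> 2 * (c x * f x * f x) + 2 * s\<^sup>2 * (c x * g x * g x)"
          by (simp add: power2_eq_square algebra_simps)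
      qed
    qed
  qed
  also have "\<dots> = 2 * Wc a0 b0 c f f + 2 * s\<^sup>2 * Wc a0 b0 c g g"
    unfolding Wc_def using Wi[OF f f] Wi[OF g g] by simp
  finally show ?thesis .
qed

end

lemma C1I_transfer:
  assumes C: "C1I a0 b0 f g" and eq: "\<And>y. y \<in> {a0..b0} \<Longrightarrow> f y = f' y"
  shows "C1I a0 b0 f' g"
  unfolding C1I_def
proof (intro conjI ballI)
  show "continuous_on {a0..b0} f'" using C eq continuous_on_eq[of "{a0..b0}" f f'] by (auto simp: C1I_def)
  show "continuous_on {a0..b0} g" using C by (simp add: C1I_def)
  fix x assume x: "x \<in> {a0<..<b0}"
  have "(f has_real_derivative g x) (at x)" using C x by (simp add: C1I_def)
  then show "(f' has_real_derivative g x) (at x)"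
    by (rule has_field_derivative_transform_within_open[where S="{a0<..<b0}"]) (use x eq in auto)
qed

lemma C1I_comb:
  assumes "C1I a0 b0 f gf" "C1I a0 b0 h gh"
  shows "C1I a0 b0 (\<lambda>y. f y + s * h y) (\<lambda>x. gf x + s * gh x)"
  using assms unfolding C1I_def by (auto intro!: continuous_intros derivative_eq_intros)

lemma C1I_diff:
  assumes "C1I a0 b0 f gf" "C1I a0 b0 h gh"
  shows "C1I a0 b0 (\<lambda>y. f y - h y) (\<lambda>x. gf x - gh x)"
  using assms unfolding C1I_def by (auto intro!: continuous_intros derivative_eq_intros)

lemma C1I_deriv: "C1I a0 b0 f g \<Longrightarrow> x \<in> {a0<..<b0} \<Longrightarrow> deriv f x = g x"
  unfolding C1I_def by (auto intro: DERIV_imp_deriv)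

lemma C1I_cont: "C1I a0 b0 f g \<Longrightarrow> continuous_on {a0..b0} f" "C1I a0 b0 f g \<Longrightarrow> continuous_on {a0..b0} g"
  unfolding C1I_def by auto

definition sR :: "real \<Rightarrow> real \<Rightarrow> nat \<Rightarrow> real \<Rightarrow> real \<Rightarrow> (nat \<Rightarrow> real \<Rightarrow> real) \<Rightarrow> (nat \<Rightarrow> real \<Rightarrow> real) \<Rightarrow> real" where
  "sR a0 b0 L \<tau> bb Eu Ev = \<tau> * (\<Sum>k\<in>{1..L}. (1 / 2 ^ k) * (bb\<^sup>2 * ip a0 b0 (Eu k) (Ev k)))"

lemma s_MQ_rep:
  assumes Eu: "\<forall>k\<in>{1..L}. C1I a0 b0 (\<lambda>y. u y - Proj k u y) (Eu k)"
    and Ev: "\<forall>k\<in>{1..L}. C1I a0 b0 (\<lambda>y. v y - Proj k v y) (Ev k)"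
  shows "s_MQ a0 b0 L \<tau> bb Proj u v = sR a0 b0 L \<tau> bb Eu Ev"
  unfolding s_MQ_def sR_def
proof (intro arg_cong[where f="\<lambda>x. \<tau> * x"] sum.cong refl arg_cong[where f="\<lambda>x. 1 / 2 ^ _ * x"])
  fix k assume k: "k \<in> {1..L}"
  have cu: "C1I a0 b0 (\<lambda>y. u y - Proj k u y) (Eu k)" and cv: "C1I a0 b0 (\<lambda>y. v y - Proj k v y) (Ev k)"
    using Eu Ev k by auto
  have "(LINT x:{a0..b0}|lborel. bb * deriv (\<lambda>y. u y - Proj k u y) x * (bb * deriv (\<lambda>y. v y - Proj k v y) x))
      = (LINT x:{a0..b0}|lborel. bb\<^sup>2 * (Eu k x * Ev k x))"
    by (rule lint_rep(2)) (use C1I_cont[OF cu] C1I_cont[OF cv] C1I_deriv[OF cu] C1I_deriv[OF cv] in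
         \<open>auto intro!: continuous_intros simp: power2_eq_square\<close>)
  also have "\<dots> = bb\<^sup>2 * ip a0 b0 (Eu k) (Ev k)" unfolding ip_def by simp
  finally show "(LINT x:{a0..b0}|lborel. bb * deriv (\<lambda>y. u y - Proj k u y) x * (bb * deriv (\<lambda>y. v y - Proj k v y) x))
      = bb\<^sup>2 * ip a0 b0 (Eu k) (Ev k)" .
qed

lemma a_form_rep:
  assumes cu: "C1I a0 b0 u gu" and cv: "C1I a0 b0 v gv"
  shows "a_form a0 b0 \<epsilon> bb c u v = \<epsilon> * ip a0 b0 gu gv + bb * ip a0 b0 gu v + Wc a0 b0 c u v"
proof -
  have 1: "(LINT x:{a0..b0}|lborel. deriv u x * deriv v x) = ip a0 b0 gu gv"
    unfolding ip_def
    by (rule lint_rep(2)) (use C1I_cont[OF cu] C1I_cont[OF cv] C1I_deriv[OF cu] C1I_deriv[OF cv] in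
         \<open>auto intro!: continuous_intros\<close>)
  have 2: "(LINT x:{a0..b0}|lborel. bb * deriv u x * v x) = bb * ip a0 b0 gu v"
  proof -
    have "(LINT x:{a0..b0}|lborel. bb * deriv u x * v x) = (LINT x:{a0..b0}|lborel. bb * (gu x * v x))"
      by (rule lint_rep(2)) (use C1I_cont[OF cu] C1I_cont[OF cv] C1I_deriv[OF cu] in
         \<open>auto intro!: continuous_intros\<close>)
    then show ?thesis unfolding ip_def by simp
  qed
  show ?thesis unfolding a_form_def Wc_def 1 2 ..
qed

lemma G_rep:
  assumes cv: "C1I a0 b0 v gv"
  shows "G_norm_sq a0 b0 \<epsilon> c v = \<epsilon> * ip a0 b0 gv gv + Wc a0 b0 c v v"
proof -
  have 1: "(LINT x:{a0..b0}|lborel. (deriv v x)\<^sup>2) = ip a0 b0 gv gv"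
    unfolding ip_def
    by (rule lint_rep(2)) (use C1I_cont[OF cv] C1I_deriv[OF cv] in
         \<open>auto intro!: continuous_intros simp: power2_eq_square\<close>)
  have 2: "(LINT x:{a0..b0}|lborel. c x * (v x)\<^sup>2) = Wc a0 b0 c v v"
    unfolding Wc_def by (simp add: power2_eq_square mult.assoc)
  show ?thesis unfolding G_norm_sq_def 1 2 ..
qed

lemma MQSD_rep:
  assumes cv: "C1I a0 b0 v gv" and Ev: "\<forall>k\<in>{1..L}. C1I a0 b0 (\<lambda>y. v y - Proj k v y) (Ev k)"
  shows "MQSD_norm a0 b0 L \<epsilon> bb c \<tau> Proj v = sqrt (\<epsilon> * ip a0 b0 gv gv + Wc a0 b0 c v v + sR a0 b0 L \<tau> bb Ev Ev
      + \<tau> * (1 / 2 ^ L) * (bb\<^sup>2 * ip a0 b0 gv gv))"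
proof -
  have 1: "(LINT x:{a0..b0}|lborel. (bb * deriv v x)\<^sup>2) = bb\<^sup>2 * ip a0 b0 gv gv"
  proof -
    have "(LINT x:{a0..b0}|lborel. (bb * deriv v x)\<^sup>2) = (LINT x:{a0..b0}|lborel. bb\<^sup>2 * (gv x * gv x))"
      by (rule lint_rep(2)) (use C1I_cont[OF cv] C1I_deriv[OF cv] in
         \<open>auto intro!: continuous_intros simp: power2_eq_square\<close>)
    then show ?thesis unfolding ip_def by simp
  qed
  have 2: "s_MQ a0 b0 L \<tau> bb Proj v v = sR a0 b0 L \<tau> bb Ev Ev" by (rule s_MQ_rep; rule Ev)
  show ?thesis unfolding MQSD_norm_def G_rep[OF cv] 2 1 ..
qed

lemma a_MQ_rep:
  assumes cu: "C1I a0 b0 u gu" and cv: "C1I a0 b0 v gv"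
    and Eu: "\<forall>k\<in>{1..L}. C1I a0 b0 (\<lambda>y. u y - Proj k u y) (Eu k)"
    and Ev: "\<forall>k\<in>{1..L}. C1I a0 b0 (\<lambda>y. v y - Proj k v y) (Ev k)"
  shows "a_MQ a0 b0 L \<epsilon> bb c \<tau> Proj u v = \<epsilon> * ip a0 b0 gu gv + bb * ip a0 b0 gu v + Wc a0 b0 c u v
     + sR a0 b0 L \<tau> bb Eu Ev"
  using Eu Ev by (simp add: a_MQ_def a_form_rep[OF cu cv] s_MQ_rep)

lemma ip_deriv_self_zero:
  assumes ab: "a0 < b0" and cu: "C1I a0 b0 u gu" and ua: "u a0 = 0" and ub: "u b0 = 0"
  shows "ip a0 b0 gu u = 0"
proof -
  have cont: "continuous_on {a0..b0} (\<lambda>x. (u x)\<^sup>2 / 2)"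
    using C1I_cont[OF cu] by (intro continuous_intros) auto
  have "((\<lambda>x. (u x)\<^sup>2 / 2) has_vector_derivative (gu x * u x)) (at x)" if x: "x \<in> {a0<..<b0}" for x
  proof -
    have d: "(u has_real_derivative gu x) (at x)" using cu x unfolding C1I_def by blast
    have "((\<lambda>x. (u x)\<^sup>2 / 2) has_real_derivative (2 * u x * gu x) / 2) (at x)"
      by (rule derivative_eq_intros d refl | simp)+
    then show ?thesis by (simp add: has_real_derivative_iff_has_vector_derivative mult.commute)
  qed
  from fundamental_theorem_of_calculus_interior[OF _ cont this]
  have "((\<lambda>x. gu x * u x) has_integral ((u b0)\<^sup>2 / 2 - (u a0)\<^sup>2 / 2)) {a0..b0}" using ab by simp
  then have "integral {a0..b0} (\<lambda>x. gu x * u x) = 0" using ua ub by (simp add: integral_unique)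
  then show ?thesis using ip_integral[OF C1I_cont(2)[OF cu] C1I_cont(1)[OF cu]] by simp
qed

lemma sum_half_powers: "(\<Sum>k\<in>{1..L}. (1::real) / 2 ^ k) = 1 - 1 / 2 ^ L"
proof (induction L)
  case 0 then show ?case by simp
next
  case (Suc L)
  have "(\<Sum>k\<in>{1..Suc L}. (1::real) / 2 ^ k) = (\<Sum>k\<in>{1..L}. (1::real) / 2 ^ k) + 1 / 2 ^ Suc L"
    by simp
  then show ?case using Suc by (simp add: field_simps)
qed

lemma sum_half_powers_le: "(\<Sum>k\<in>{1..L}. (1::real) / 2 ^ k) \<le> 1"
  unfolding sum_half_powers by simp

lemma sR_lin:
  assumes Eu: "\<forall>k\<in>{1..L}. continuous_on {a0..b0} (Eu k)" and Ev: "\<forall>k\<in>{1..L}. continuous_on {a0..b0} (Ev k)"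
    and Ez: "\<forall>k\<in>{1..L}. continuous_on {a0..b0} (Ez k)"
  shows "sR a0 b0 L \<tau> bb Eu (\<lambda>k x. Ev k x + s * Ez k x) = sR a0 b0 L \<tau> bb Eu Ev + s * sR a0 b0 L \<tau> bb Eu Ez"
proof -
  have "(\<Sum>k\<in>{1..L}. (1 / 2 ^ k) * (bb\<^sup>2 * ip a0 b0 (Eu k) (\<lambda>x. Ev k x + s * Ez k x)))
      = (\<Sum>k\<in>{1..L}. (1 / 2 ^ k) * (bb\<^sup>2 * ip a0 b0 (Eu k) (Ev k)) + s * ((1 / 2 ^ k) * (bb\<^sup>2 * ip a0 b0 (Eu k) (Ez k))))"
  proof (rule sum.cong[OF refl])
    fix k assume k: "k \<in> {1..L}"
    show "(1 / 2 ^ k) * (bb\<^sup>2 * ip a0 b0 (Eu k) (\<lambda>x. Ev k x + s * Ez k x))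
      = (1 / 2 ^ k) * (bb\<^sup>2 * ip a0 b0 (Eu k) (Ev k)) + s * ((1 / 2 ^ k) * (bb\<^sup>2 * ip a0 b0 (Eu k) (Ez k)))"
      using ip_lin[of a0 b0 "Eu k" "Ev k" "Ez k" s] Eu Ev Ez k by (simp add: algebra_simps)
  qed
  then show ?thesis unfolding sR_def by (simp add: sum.distrib sum_distrib_left algebra_simps)
qed

lemma sR_comm: "sR a0 b0 L \<tau> bb Eu Ev = sR a0 b0 L \<tau> bb Ev Eu"
  unfolding sR_def by (simp add: ip_comm)

lemma sR_nonneg: "\<tau> \<ge> 0 \<Longrightarrow> sR a0 b0 L \<tau> bb E E \<ge> 0"
  unfolding sR_def by (intro mult_nonneg_nonneg sum_nonneg) (auto intro: ip_nonneg)

lemma sR_young: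
  assumes \<tau>: "\<tau> \<ge> 0" and \<eta>: "\<eta> > 0"
    and Eu: "\<forall>k\<in>{1..L}. continuous_on {a0..b0} (Eu k)" and Ez: "\<forall>k\<in>{1..L}. continuous_on {a0..b0} (Ez k)"
  shows "2 * \<bar>sR a0 b0 L \<tau> bb Eu Ez\<bar> \<le> \<eta> * sR a0 b0 L \<tau> bb Eu Eu + sR a0 b0 L \<tau> bb Ez Ez / \<eta>"
proof -
  have "2 * \<bar>sR a0 b0 L \<tau> bb Eu Ez\<bar> = \<tau> * (2 * \<bar>\<Sum>k\<in>{1..L}. (1 / 2 ^ k) * (bb\<^sup>2 * ip a0 b0 (Eu k) (Ez k))\<bar>)"
    unfolding sR_def using \<tau> by (simp add: abs_mult)
  also have "\<dots> \<le> \<tau> * (\<Sum>k\<in>{1..L}. (1 / 2 ^ k) * bb\<^sup>2 * (2 * \<bar>ip a0 b0 (Eu k) (Ez k)\<bar>))"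
  proof (rule mult_left_mono[OF _ \<tau>])
    have "2 * \<bar>\<Sum>k\<in>{1..L}. (1 / 2 ^ k) * (bb\<^sup>2 * ip a0 b0 (Eu k) (Ez k))\<bar>
        \<le> 2 * (\<Sum>k\<in>{1..L}. \<bar>(1 / 2 ^ k) * (bb\<^sup>2 * ip a0 b0 (Eu k) (Ez k))\<bar>)"
      by (rule mult_left_mono[OF sum_abs]) simp
    also have "\<dots> = (\<Sum>k\<in>{1..L}. (1 / 2 ^ k) * bb\<^sup>2 * (2 * \<bar>ip a0 b0 (Eu k) (Ez k)\<bar>))"
      by (simp add: sum_distrib_left abs_mult algebra_simps)
    finally show "2 * \<bar>\<Sum>k\<in>{1..L}. (1 / 2 ^ k) * (bb\<^sup>2 * ip a0 b0 (Eu k) (Ez k))\<bar>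
        \<le> (\<Sum>k\<in>{1..L}. (1 / 2 ^ k) * bb\<^sup>2 * (2 * \<bar>ip a0 b0 (Eu k) (Ez k)\<bar>))" .
  qed
  also have "\<dots> \<le> \<tau> * (\<Sum>k\<in>{1..L}. (1 / 2 ^ k) * bb\<^sup>2 * (\<eta> * ip a0 b0 (Eu k) (Eu k) + ip a0 b0 (Ez k) (Ez k) / \<eta>))"
  proof (rule mult_left_mono[OF sum_mono \<tau>])
    fix k assume k: "k \<in> {1..L}"
    show "(1 / 2 ^ k) * bb\<^sup>2 * (2 * \<bar>ip a0 b0 (Eu k) (Ez k)\<bar>) \<le> (1 / 2 ^ k) * bb\<^sup>2 * (\<eta> * ip a0 b0 (Eu k) (Eu k) + ip a0 b0 (Ez k) (Ez k) / \<eta>)"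
      using ip_young[of a0 b0 "Eu k" "Ez k" \<eta>] Eu Ez k \<eta> by (intro mult_left_mono) auto
  qed
  also have "\<dots> = \<eta> * sR a0 b0 L \<tau> bb Eu Eu + sR a0 b0 L \<tau> bb Ez Ez / \<eta>"
    unfolding sR_def by (simp add: sum.distrib sum_distrib_left sum_divide_distrib algebra_simps)
  finally show ?thesis .
qed

lemma sR_sq:
  assumes \<tau>: "\<tau> \<ge> 0"
    and Eu: "\<forall>k\<in>{1..L}. continuous_on {a0..b0} (Eu k)" and Ez: "\<forall>k\<in>{1..L}. continuous_on {a0..b0} (Ez k)"
  shows "sR a0 b0 L \<tau> bb (\<lambda>k x. Eu k x + s * Ez k x) (\<lambda>k x. Eu k x + s * Ez k x)
     \<le> 2 * sR a0 b0 L \<tau> bb Eu Eu + 2 * s\<^sup>2 * sR a0 b0 L \<tau> bb Ez Ez"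
proof -
  have "sR a0 b0 L \<tau> bb (\<lambda>k x. Eu k x + s * Ez k x) (\<lambda>k x. Eu k x + s * Ez k x)
      \<le> \<tau> * (\<Sum>k\<in>{1..L}. (1 / 2 ^ k) * (bb\<^sup>2 * (2 * ip a0 b0 (Eu k) (Eu k) + 2 * s\<^sup>2 * ip a0 b0 (Ez k) (Ez k))))"
    unfolding sR_def
  proof (rule mult_left_mono[OF sum_mono \<tau>])
    fix k assume k: "k \<in> {1..L}"
    show "(1 / 2 ^ k) * (bb\<^sup>2 * ip a0 b0 (\<lambda>x. Eu k x + s * Ez k x) (\<lambda>x. Eu k x + s * Ez k x))
        \<le> (1 / 2 ^ k) * (bb\<^sup>2 * (2 * ip a0 b0 (Eu k) (Eu k) + 2 * s\<^sup>2 * ip a0 b0 (Ez k) (Ez k)))"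
      using ip_sq[of a0 b0 "Eu k" "Ez k" s] Eu Ez k by (intro mult_left_mono) auto
  qed
  also have "\<dots> = 2 * sR a0 b0 L \<tau> bb Eu Eu + 2 * s\<^sup>2 * sR a0 b0 L \<tau> bb Ez Ez"
    unfolding sR_def by (simp add: sum.distrib sum_distrib_left algebra_simps)
  finally show ?thesis .
qed

lemma sR_term:
  assumes \<tau>: "\<tau> \<ge> 0" and L: "L \<ge> 1"
  shows "\<tau> * (1 / 2 ^ L) * (bb\<^sup>2 * ip a0 b0 (E L) (E L)) \<le> sR a0 b0 L \<tau> bb E E"
proof -
  have "(1 / 2 ^ L) * (bb\<^sup>2 * ip a0 b0 (E L) (E L)) \<le> (\<Sum>k\<in>{1..L}. (1 / 2 ^ k) * (bb\<^sup>2 * ip a0 b0 (E k) (E k)))"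
    by (rule member_le_sum[of L "{1..L}" "\<lambda>k. (1 / 2 ^ k) * (bb\<^sup>2 * ip a0 b0 (E k) (E k))"])
       (use L in \<open>auto intro!: divide_nonneg_pos mult_nonneg_nonneg ip_nonneg\<close>)
  then show ?thesis unfolding sR_def using mult_left_mono[OF _ \<tau>] by (simp add: mult.assoc times_divide_eq_right[symmetric] del: times_divide_eq_right)
qed

lemma sR_bound:
  assumes \<tau>: "\<tau> \<ge> 0" and B: "\<forall>k\<in>{1..L}. ip a0 b0 (E k) (E k) \<le> \<Lambda>" and \<Lambda>: "\<Lambda> \<ge> 0"
  shows "sR a0 b0 L \<tau> bb E E \<le> \<tau> * bb\<^sup>2 * \<Lambda>"
proof -
  have "(\<Sum>k\<in>{1..L}. (1 / 2 ^ k) * (bb\<^sup>2 * ip a0 b0 (E k) (E k))) \<le> (\<Sum>k\<in>{1..L}. (1 / 2 ^ k) * (bb\<^sup>2 * \<Lambda>))"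
    by (rule sum_mono) (use B in \<open>auto intro!: divide_right_mono mult_left_mono\<close>)
  also have "\<dots> = (\<Sum>k\<in>{1..L}. (1::real) / 2 ^ k) * (bb\<^sup>2 * \<Lambda>)" by (simp add: sum_distrib_right)
  also have "\<dots> \<le> 1 * (bb\<^sup>2 * \<Lambda>)" by (rule mult_right_mono[OF sum_half_powers_le]) (use \<Lambda> in simp)
  finally show ?thesis unfolding sR_def using mult_left_mono[OF _ \<tau>] by (simp add: mult.assoc)
qed

locale inst = wsetup a0 b0 c Mc \<sigma>0 for a0 b0 c Mc \<sigma>0 +
  fixes p L :: nat and bb C\<tau> \<alpha> C\<Pi> Kinv \<epsilon> :: real and M :: nat and \<tau> :: real
    and Proj :: "nat \<Rightarrow> (real \<Rightarrow> real) \<Rightarrow> real \<Rightarrow> real"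
  assumes ab: "a0 < b0" and p2: "p \<ge> 2" and L1: "L \<ge> 1" and Mc1: "Mc \<ge> 1"
    and Ct: "C\<tau> > 0" and al: "\<alpha> > 0" and CP: "C\<Pi> > 0" and Kp: "Kinv > 0" and ep: "\<epsilon> > 0"
    and M1: "M \<ge> 1" and t0: "\<tau> \<ge> 0"
    and Kinv: "\<And>f g. PPI a0 b0 (2 ^ L * M) p f \<Longrightarrow> C1I a0 b0 f g \<Longrightarrow>
       integral {a0..b0} (\<lambda>x. (g x)\<^sup>2) \<le> Kinv * (real (2 ^ L * M) / (b0 - a0))\<^sup>2 * integral {a0..b0} (\<lambda>x. (f x)\<^sup>2)"
    and infsup: "\<forall>q\<in>spline_space a0 b0 (2 ^ L * M div 2 ^ L) (p - 1).
          Sup ((\<lambda>v. ip a0 b0 v q / l2norm a0 b0 v) ` {v \<in> Vh a0 b0 (2 ^ L * M) p. nonzero_on a0 b0 v})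
            \<ge> \<alpha> * l2norm a0 b0 q"
    and tau: "\<tau> \<le> C\<tau> * 2 ^ L * ((b0 - a0) / real (2 ^ L * M))\<^sup>2 / max \<epsilon> ((b0 - a0) / real (2 ^ L * M) * \<bar>bb\<bar>)"
    and qi: "\<forall>k\<in>{1..L}. quasi_interp a0 b0 (2 ^ L * M div 2 ^ k) p (2 ^ k * ((b0 - a0) / real (2 ^ L * M))) C\<Pi> (Proj k)"
begin

abbreviation "N \<equiv> 2 ^ L * M"
definition "h = (b0 - a0) / real N"
definition "Kh = Kinv * (real N / (b0 - a0))\<^sup>2"
definition "\<theta> = \<tau> * (1 / 2 ^ L)"

lemma N1: "N \<ge> 1" using M1 by simp

lemma h_pos: "h > 0" using ab N1 by (simp add: h_def)

lemma h_le: "h \<le> b0 - a0"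
proof -
  have "real N \<ge> 1" by (metis N1 of_nat_1 of_nat_le_iff)
  then show ?thesis using ab by (simp add: h_def divide_le_eq)
qed

lemma Kh_eq: "Kh = Kinv / h\<^sup>2" using ab N1 by (simp add: Kh_def h_def power_divide)

lemma Nk: "k \<le> L \<Longrightarrow> N div 2 ^ k = 2 ^ (L - k) * M \<and> N div 2 ^ k \<ge> 1 \<and> N div 2 ^ k * 2 ^ k = N"
proof -
  assume k: "k \<le> L"
  have e: "(2::nat) ^ L = 2 ^ (L - k) * 2 ^ k" using k by (simp add: power_add[symmetric])
  have "N div 2 ^ k = 2 ^ (L - k) * M" unfolding e by simp
  moreover have "2 ^ (L - k) * M \<ge> 1" using M1 by simp
  moreover have "2 ^ (L - k) * M * 2 ^ k = N" unfolding e by simp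
  ultimately show ?thesis by simp
qed

lemma theta_bounds: "\<theta> \<ge> 0" "\<theta> * \<epsilon> \<le> C\<tau> * h\<^sup>2" "\<theta> * \<bar>bb\<bar> \<le> C\<tau> * h"
proof -
  have t: "\<tau> \<le> C\<tau> * 2 ^ L * h\<^sup>2 / max \<epsilon> (h * \<bar>bb\<bar>)" using tau by (simp add: h_def)
  have m0: "max \<epsilon> (h * \<bar>bb\<bar>) > 0" using ep by simp
  have th: "\<theta> \<le> C\<tau> * h\<^sup>2 / max \<epsilon> (h * \<bar>bb\<bar>)"
    using t by (simp add: \<theta>_def field_simps)
  show "\<theta> \<ge> 0" using t0 by (simp add: \<theta>_def)
  have "\<theta> * \<epsilon> \<le> C\<tau> * h\<^sup>2 / max \<epsilon> (h * \<bar>bb\<bar>) * \<epsilon>" by (rule mult_right_mono[OF th]) (use ep in simp)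
  also have "\<dots> \<le> C\<tau> * h\<^sup>2"
    using m0 Ct h_pos by (simp add: divide_le_eq mult_left_mono)
  finally show "\<theta> * \<epsilon> \<le> C\<tau> * h\<^sup>2" .
  have "\<theta> * (h * \<bar>bb\<bar>) \<le> C\<tau> * h\<^sup>2 / max \<epsilon> (h * \<bar>bb\<bar>) * (h * \<bar>bb\<bar>)"
    by (rule mult_right_mono[OF th]) (use h_pos in simp)
  also have "\<dots> \<le> C\<tau> * h\<^sup>2"
    using m0 Ct h_pos by (simp add: divide_le_eq mult_left_mono)
  finally have "(\<theta> * \<bar>bb\<bar>) * h \<le> (C\<tau> * h) * h" by (simp add: power2_eq_square algebra_simps)
  then show "\<theta> * \<bar>bb\<bar> \<le> C\<tau> * h" using h_pos by simp
qed

lemma Vh_cont: "w \<in> Vh a0 b0 N p \<Longrightarrow> \<exists>g. C1I a0 b0 w g"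
  using spline_C1[OF ab N1 p2] by (auto simp: Vh_def)

lemma inverse_ip:
  assumes "PPI a0 b0 N p f" "C1I a0 b0 f g"
  shows "ip a0 b0 g g \<le> Kh * ip a0 b0 f f"
proof -
  have "ip a0 b0 g g = integral {a0..b0} (\<lambda>x. (g x)\<^sup>2)"
    using ip_integral[OF C1I_cont(2)[OF assms(2)] C1I_cont(2)[OF assms(2)]] by (simp add: power2_eq_square)
  also have "\<dots> \<le> Kh * integral {a0..b0} (\<lambda>x. (f x)\<^sup>2)" unfolding Kh_def by (rule Kinv[OF assms])
  also have "integral {a0..b0} (\<lambda>x. (f x)\<^sup>2) = ip a0 b0 f f"
    using ip_integral[OF C1I_cont(1)[OF assms(2)] C1I_cont(1)[OF assms(2)]] by (simp add: power2_eq_square)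
  finally show ?thesis .
qed

lemma proj_facts:
  assumes w: "w \<in> Vh a0 b0 N p" and k: "k \<in> {1..L}"
  shows "Proj k w \<in> spline_space a0 b0 (N div 2 ^ k) p"
    and "ip a0 b0 (Proj k w) (Proj k w) \<le> C\<Pi>\<^sup>2 * ip a0 b0 w w"
    and "PPI a0 b0 N p (Proj k w)"
proof -
  obtain g where g: "C1I a0 b0 w g" using Vh_cont[OF w] by blast
  have L2: "L2_on a0 b0 w" by (rule L2_on_cont[OF C1I_cont(1)[OF g]])
  have q: "quasi_interp a0 b0 (N div 2 ^ k) p (2 ^ k * h) C\<Pi> (Proj k)" using qi k by (simp add: h_def)
  show sp: "Proj k w \<in> spline_space a0 b0 (N div 2 ^ k) p" using q L2 unfolding quasi_interp_def by blast
  have "l2norm a0 b0 (Proj k w) \<le> C\<Pi> * l2norm a0 b0 w" using q L2 unfolding quasi_interp_def by blast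
  then have "(sqrt (ip a0 b0 (Proj k w) (Proj k w)))\<^sup>2 \<le> (C\<Pi> * sqrt (ip a0 b0 w w))\<^sup>2"
    unfolding l2norm_def by (intro power_mono) (auto simp: ip_nonneg)
  then show "ip a0 b0 (Proj k w) (Proj k w) \<le> C\<Pi>\<^sup>2 * ip a0 b0 w w"
    using ip_nonneg[of a0 b0 "Proj k w"] ip_nonneg[of a0 b0 w] by (simp add: power_mult_distrib)
  have kL: "k \<le> L" using k by simp
  have "PPI a0 b0 (N div 2 ^ k * 2 ^ k) p (Proj k w)"
    by (rule spline_PPI[OF ab _ _ sp]) (use Nk[OF kL] in auto)
  moreover have e: "N div 2 ^ k * 2 ^ k = N" using Nk[OF kL] by blast
  ultimately show "PPI a0 b0 N p (Proj k w)" by (simp only: e)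
qed

lemma reps:
  assumes w: "w \<in> Vh a0 b0 N p"
  shows "\<exists>gw gP. C1I a0 b0 w gw \<and> (\<forall>k\<in>{1..L}. C1I a0 b0 (Proj k w) (gP k)
     \<and> gP k \<in> spline_space a0 b0 (N div 2 ^ k) (p - 1))
     \<and> ip a0 b0 gw gw \<le> Kh * ip a0 b0 w w
     \<and> (\<forall>k\<in>{1..L}. ip a0 b0 (\<lambda>x. gw x - gP k x) (\<lambda>x. gw x - gP k x) \<le> 2 * Kh * (1 + C\<Pi>\<^sup>2) * ip a0 b0 w w)"
proof -
  obtain gw where gw: "C1I a0 b0 w gw" using Vh_cont[OF w] by blast
  have "\<forall>k\<in>{1..L}. \<exists>g. C1I a0 b0 (Proj k w) g \<and> g \<in> spline_space a0 b0 (N div 2 ^ k) (p - 1)"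
  proof
    fix k assume k: "k \<in> {1..L}"
    have kL: "k \<le> L" using k by simp
    show "\<exists>g. C1I a0 b0 (Proj k w) g \<and> g \<in> spline_space a0 b0 (N div 2 ^ k) (p - 1)"
      by (rule spline_C1[OF ab _ p2 proj_facts(1)[OF w k]]) (use Nk[OF kL] in auto)
  qed
  then obtain gP where gP: "\<forall>k\<in>{1..L}. C1I a0 b0 (Proj k w) (gP k) \<and> gP k \<in> spline_space a0 b0 (N div 2 ^ k) (p - 1)"
    by (metis (no_types, lifting) bchoice)
  have inv: "ip a0 b0 gw gw \<le> Kh * ip a0 b0 w w"
    by (rule inverse_ip[OF _ gw]) (use w in \<open>auto simp: Vh_def intro: spline_PPI[OF ab N1, of 1, simplified]\<close>)
  have "ip a0 b0 (\<lambda>x. gw x - gP k x) (\<lambda>x. gw x - gP k x) \<le> 2 * Kh * (1 + C\<Pi>\<^sup>2) * ip a0 b0 w w"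
    if k: "k \<in> {1..L}" for k
  proof -
    have cP: "C1I a0 b0 (Proj k w) (gP k)" using gP k by blast
    have "ip a0 b0 (\<lambda>x. gw x - gP k x) (\<lambda>x. gw x - gP k x) = ip a0 b0 (\<lambda>x. gw x + (-1) * gP k x) (\<lambda>x. gw x + (-1) * gP k x)"
      by (rule ip_cong) auto
    also have "\<dots> \<le> 2 * ip a0 b0 gw gw + 2 * (-1)\<^sup>2 * ip a0 b0 (gP k) (gP k)"
      by (rule ip_sq[OF C1I_cont(2)[OF gw] C1I_cont(2)[OF cP]])
    finally have a: "ip a0 b0 (\<lambda>x. gw x - gP k x) (\<lambda>x. gw x - gP k x) \<le> 2 * ip a0 b0 gw gw + 2 * ip a0 b0 (gP k) (gP k)"
      by simp
    have Kh0: "Kh \<ge> 0" using Kh_eq Kp h_pos by simp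
    have "ip a0 b0 (gP k) (gP k) \<le> Kh * ip a0 b0 (Proj k w) (Proj k w)"
      by (rule inverse_ip[OF proj_facts(3)[OF w k] cP])
    also have "\<dots> \<le> Kh * (C\<Pi>\<^sup>2 * ip a0 b0 w w)" by (rule mult_left_mono[OF proj_facts(2)[OF w k] Kh0])
    finally have b: "ip a0 b0 (gP k) (gP k) \<le> Kh * (C\<Pi>\<^sup>2 * ip a0 b0 w w)" .
    have e: "2 * (Kh * ip a0 b0 w w) + 2 * (Kh * (C\<Pi>\<^sup>2 * ip a0 b0 w w)) = 2 * Kh * (1 + C\<Pi>\<^sup>2) * ip a0 b0 w w"
      by (simp add: algebra_simps)
    show ?thesis using a b inv e by linarith
  qed
  then show ?thesis using gw gP inv by blast
qed

end

lemma ip_scale: "ip a0 b0 f (\<lambda>x. t * g x) = t * ip a0 b0 f g"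
  unfolding ip_def by (simp add: algebra_simps)

lemma ip_zero: "(\<And>x. x \<in> {a0..b0} \<Longrightarrow> g x = 0) \<Longrightarrow> ip a0 b0 f g = 0"
  using ip_cong[of a0 b0 f f g "\<lambda>x. 0"] by (simp add: ip_def)

lemma Wc_zero: "(\<And>x. x \<in> {a0..b0} \<Longrightarrow> g x = 0) \<Longrightarrow> Wc a0 b0 c f g = 0"
  unfolding Wc_def by (subst set_lebesgue_integral_cong[where g="\<lambda>x. 0"]) auto

lemma sR_zero: "sR a0 b0 L \<tau> bb E (\<lambda>k x. 0) = 0"
  unfolding sR_def ip_def by simp

lemma C1I_zero: "(\<And>x. x \<in> {a0..b0} \<Longrightarrow> f x = 0) \<Longrightarrow> C1I a0 b0 f (\<lambda>x. 0)"
  by (rule C1I_transfer[of _ _ "\<lambda>x. 0"]) (auto simp: C1I_def)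

lemma qi_parts:
  assumes "quasi_interp a0 b0 nk p Hk C Proj"
  shows "\<And>v. L2_on a0 b0 v \<Longrightarrow> Proj v \<in> spline_space a0 b0 nk p"
    and "\<And>u v \<alpha> \<beta> x. L2_on a0 b0 u \<Longrightarrow> L2_on a0 b0 v \<Longrightarrow> x \<in> {a0..b0} \<Longrightarrow>
           Proj (\<lambda>y. \<alpha> * u y + \<beta> * v y) x = \<alpha> * Proj u x + \<beta> * Proj v x"
    and "\<And>v x. v \<in> spline_space a0 b0 nk p \<Longrightarrow> x \<in> {a0..b0} \<Longrightarrow> Proj v x = v x"
    and "\<And>v. L2_on a0 b0 v \<Longrightarrow> l2norm a0 b0 (Proj v) \<le> C * l2norm a0 b0 v"
  using assms unfolding quasi_interp_def by blast+

context inst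
begin

lemma zero_in_coarse:
  assumes "\<And>x. x \<in> {a0..b0} \<Longrightarrow> w x = 0" and k: "k \<in> {1..L}"
  shows "w \<in> spline_space a0 b0 (N div 2 ^ k) p"
  unfolding spline_space_def
proof (intro CollectI exI[of _ "\<lambda>j. 0"] conjI allI impI ballI)
  fix j x assume j: "j < N div 2 ^ k" and x: "x \<in> {knot a0 b0 (N div 2 ^ k) j..knot a0 b0 (N div 2 ^ k) (Suc j)}"
  have kL: "k \<le> L" using k by simp
  have n1: "N div 2 ^ k \<ge> 1" using Nk[OF kL] by blast
  have "{knot a0 b0 (N div 2 ^ k) j..knot a0 b0 (N div 2 ^ k) (Suc j)} \<subseteq> {a0..b0}"
  proof -
    have "{knot a0 b0 (N div 2 ^ k) j..knot a0 b0 (N div 2 ^ k) (Suc j)} \<subseteq> (\<Union>j\<in>{..<N div 2 ^ k}. {knot a0 b0 (N div 2 ^ k) j..knot a0 b0 (N div 2 ^ k) (Suc j)})"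
      using j by blast
    then show ?thesis unfolding cells_union[OF ab n1] .
  qed
  then show "w x = poly 0 x" using assms(1) x by auto
qed simp_all

lemma proj_zero:
  assumes w: "w \<in> Vh a0 b0 N p" and z: "\<And>x. x \<in> {a0..b0} \<Longrightarrow> w x = 0" and k: "k \<in> {1..L}"
  shows "\<And>x. x \<in> {a0..b0} \<Longrightarrow> Proj k w x = 0"
proof -
  fix x assume x: "x \<in> {a0..b0}"
  have q: "quasi_interp a0 b0 (N div 2 ^ k) p (2 ^ k * h) C\<Pi> (Proj k)" using qi k by (simp add: h_def)
  have "Proj k w x = w x" by (rule qi_parts(3)[OF q zero_in_coarse[OF z k] x])
  then show "Proj k w x = 0" using z x by simp
qed

lemma proj_lin:
  assumes u: "u \<in> Vh a0 b0 N p" and z: "z \<in> Vh a0 b0 N p" and k: "k \<in> {1..L}" and y: "y \<in> {a0..b0}"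
  shows "Proj k (\<lambda>y. u y + s * z y) y = Proj k u y + s * Proj k z y"
proof -
  obtain gu where gu: "C1I a0 b0 u gu" using Vh_cont[OF u] by blast
  obtain gz where gz: "C1I a0 b0 z gz" using Vh_cont[OF z] by blast
  have Lu: "L2_on a0 b0 u" by (rule L2_on_cont[OF C1I_cont(1)[OF gu]])
  have Lz: "L2_on a0 b0 z" by (rule L2_on_cont[OF C1I_cont(1)[OF gz]])
  have q: "quasi_interp a0 b0 (N div 2 ^ k) p (2 ^ k * h) C\<Pi> (Proj k)" using qi k by (simp add: h_def)
  have "Proj k (\<lambda>y. 1 * u y + s * z y) y = 1 * Proj k u y + s * Proj k z y"
    by (rule qi_parts(2)[OF q Lu Lz y])
  then show ?thesis by simp
qed

lemma E_comb:
  assumes u: "u \<in> Vh a0 b0 N p" and z: "z \<in> Vh a0 b0 N p" and k: "k \<in> {1..L}"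
    and Eu: "C1I a0 b0 (\<lambda>y. u y - Proj k u y) Eu" and Ez: "C1I a0 b0 (\<lambda>y. z y - Proj k z y) Ez"
  shows "C1I a0 b0 (\<lambda>y. (\<lambda>y. u y + s * z y) y - Proj k (\<lambda>y. u y + s * z y) y) (\<lambda>x. Eu x + s * Ez x)"
proof (rule C1I_transfer[OF C1I_comb[OF Eu Ez, of s]])
  fix y assume "y \<in> {a0..b0}"
  then show "u y - Proj k u y + s * (z y - Proj k z y) = (\<lambda>y. u y + s * z y) y - Proj k (\<lambda>y. u y + s * z y) y"
    using proj_lin[OF u z k] by (simp add: algebra_simps)
qed

lemma E_zero:
  assumes w: "w \<in> Vh a0 b0 N p" and z: "\<And>x. x \<in> {a0..b0} \<Longrightarrow> w x = 0"
  shows "\<forall>k\<in>{1..L}. C1I a0 b0 (\<lambda>y. w y - Proj k w y) (\<lambda>x. 0)"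
proof
  fix k assume k: "k \<in> {1..L}"
  show "C1I a0 b0 (\<lambda>y. w y - Proj k w y) (\<lambda>x. 0)"
  proof (rule C1I_zero)
    fix x assume x: "x \<in> {a0..b0}"
    show "w x - Proj k w x = 0" using z[OF x] proj_zero[OF w z k x] by simp
  qed
qed

end

lemma abs4:
  fixes e x b y z w :: real
  assumes "e \<ge> 0"
  shows "2 * \<bar>e * x + b * y + z + w\<bar> \<le> e * (2 * \<bar>x\<bar>) + \<bar>b\<bar> * (2 * \<bar>y\<bar>) + 2 * \<bar>z\<bar> + 2 * \<bar>w\<bar>"
proof -
  have "\<bar>e * x + b * y + z + w\<bar> \<le> \<bar>e * x\<bar> + \<bar>b * y\<bar> + \<bar>z\<bar> + \<bar>w\<bar>"
    using abs_triangle_ineq[of "e*x + b*y + z" w] abs_triangle_ineq[of "e*x+b*y" z] abs_triangle_ineq[of "e*x" "b*y"]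
    by linarith
  then show ?thesis using assms by (simp add: abs_mult)
qed

context inst
begin

definition "N2 gv v Ev = \<epsilon> * ip a0 b0 gv gv + Wc a0 b0 c v v + sR a0 b0 L \<tau> bb Ev Ev + \<theta> * (bb\<^sup>2 * ip a0 b0 gv gv)"

lemma MQSD_N2:
  assumes "C1I a0 b0 v gv" "\<forall>k\<in>{1..L}. C1I a0 b0 (\<lambda>y. v y - Proj k v y) (Ev k)"
  shows "MQSD_norm a0 b0 L \<epsilon> bb c \<tau> Proj v = sqrt (N2 gv v Ev)"
proof -
  have "MQSD_norm a0 b0 L \<epsilon> bb c \<tau> Proj v = sqrt (\<epsilon> * ip a0 b0 gv gv + Wc a0 b0 c v v + sR a0 b0 L \<tau> bb Ev Ev
      + \<tau> * (1 / 2 ^ L) * (bb\<^sup>2 * ip a0 b0 gv gv))" by (rule MQSD_rep) (rule assms)+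
  then show ?thesis unfolding N2_def \<theta>_def by (simp add: mult.assoc)
qed

lemma N2_parts_nonneg:
  assumes "C1I a0 b0 v gv"
  shows "\<epsilon> * ip a0 b0 gv gv \<ge> 0" "Wc a0 b0 c v v \<ge> \<sigma>0 * ip a0 b0 v v" "sR a0 b0 L \<tau> bb Ev Ev \<ge> 0"
    "\<theta> * (bb\<^sup>2 * ip a0 b0 gv gv) \<ge> 0" "ip a0 b0 v v \<ge> 0" "ip a0 b0 gv gv \<ge> 0"
  using ep ip_nonneg[of a0 b0 gv] ip_nonneg[of a0 b0 v] Wc_lower[OF C1I_cont(1)[OF assms]] sR_nonneg[OF t0]
    theta_bounds(1) by auto

lemma N2_nonneg: assumes "C1I a0 b0 v gv" shows "N2 gv v Ev \<ge> 0"
  using N2_parts_nonneg[OF assms] s0 unfolding N2_def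
  by (smt (verit) mult_nonneg_nonneg)

lemma young_a:
  assumes gu: "C1I a0 b0 u gu" and gv: "C1I a0 b0 v gv"
    and Eu: "\<forall>k\<in>{1..L}. C1I a0 b0 (\<lambda>y. u y - Proj k u y) (Eu k)"
    and Ev: "\<forall>k\<in>{1..L}. C1I a0 b0 (\<lambda>y. v y - Proj k v y) (Ev k)"
    and \<eta>: "\<eta> > 0"
  shows "2 * \<bar>a_MQ a0 b0 L \<epsilon> bb c \<tau> Proj u v\<bar> \<le>
     (\<epsilon> * ip a0 b0 gu gu + \<bar>bb\<bar> * ip a0 b0 gu gu + Wc a0 b0 c u u + sR a0 b0 L \<tau> bb Eu Eu) / \<eta>
     + \<eta> * ((1 + \<bar>bb\<bar> / \<sigma>0) * N2 gv v Ev)"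
proof -
  have cu: "continuous_on {a0..b0} u" "continuous_on {a0..b0} gu" using C1I_cont[OF gu] by auto
  have cv: "continuous_on {a0..b0} v" "continuous_on {a0..b0} gv" using C1I_cont[OF gv] by auto
  have cEu: "\<forall>k\<in>{1..L}. continuous_on {a0..b0} (Eu k)" using Eu C1I_cont(2) by blast
  have cEv: "\<forall>k\<in>{1..L}. continuous_on {a0..b0} (Ev k)" using Ev C1I_cont(2) by blast
  have i\<eta>: "1 / \<eta> > 0" using \<eta> by simp
  have y1: "2 * \<bar>ip a0 b0 gu gv\<bar> \<le> ip a0 b0 gu gu / \<eta> + \<eta> * ip a0 b0 gv gv"
    using ip_young[OF cu(2) cv(2) i\<eta>] by (simp add: mult.commute)
  have y2: "2 * \<bar>ip a0 b0 gu v\<bar> \<le> ip a0 b0 gu gu / \<eta> + \<eta> * ip a0 b0 v v"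
    using ip_young[OF cu(2) cv(1) i\<eta>] by (simp add: mult.commute)
  have y3: "2 * \<bar>Wc a0 b0 c u v\<bar> \<le> Wc a0 b0 c u u / \<eta> + \<eta> * Wc a0 b0 c v v"
    using Wc_young[OF cu(1) cv(1) i\<eta>] by (simp add: mult.commute)
  have y4: "2 * \<bar>sR a0 b0 L \<tau> bb Eu Ev\<bar> \<le> sR a0 b0 L \<tau> bb Eu Eu / \<eta> + \<eta> * sR a0 b0 L \<tau> bb Ev Ev"
    using sR_young[OF t0 i\<eta> cEu cEv] by (simp add: mult.commute)
  have a: "a_MQ a0 b0 L \<epsilon> bb c \<tau> Proj u v = \<epsilon> * ip a0 b0 gu gv + bb * ip a0 b0 gu v + Wc a0 b0 c u v + sR a0 b0 L \<tau> bb Eu Ev"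
    by (rule a_MQ_rep[OF gu gv Eu Ev])
  have "2 * \<bar>a_MQ a0 b0 L \<epsilon> bb c \<tau> Proj u v\<bar> \<le> \<epsilon> * (2 * \<bar>ip a0 b0 gu gv\<bar>) + \<bar>bb\<bar> * (2 * \<bar>ip a0 b0 gu v\<bar>)
      + 2 * \<bar>Wc a0 b0 c u v\<bar> + 2 * \<bar>sR a0 b0 L \<tau> bb Eu Ev\<bar>"
    unfolding a using ep by (intro abs4) simp
  also have "\<dots> \<le> \<epsilon> * (ip a0 b0 gu gu / \<eta> + \<eta> * ip a0 b0 gv gv) + \<bar>bb\<bar> * (ip a0 b0 gu gu / \<eta> + \<eta> * ip a0 b0 v v)
      + (Wc a0 b0 c u u / \<eta> + \<eta> * Wc a0 b0 c v v) + (sR a0 b0 L \<tau> bb Eu Eu / \<eta> + \<eta> * sR a0 b0 L \<tau> bb Ev Ev)"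
    using mult_left_mono[OF y1 less_imp_le[OF ep]] mult_left_mono[OF y2 abs_ge_zero[of bb]] y3 y4 by linarith
  also have "\<dots> = (\<epsilon> * ip a0 b0 gu gu + \<bar>bb\<bar> * ip a0 b0 gu gu + Wc a0 b0 c u u + sR a0 b0 L \<tau> bb Eu Eu) / \<eta>
     + \<eta> * (\<epsilon> * ip a0 b0 gv gv + \<bar>bb\<bar> * ip a0 b0 v v + Wc a0 b0 c v v + sR a0 b0 L \<tau> bb Ev Ev)"
    by (simp add: algebra_simps add_divide_distrib)
  also have "\<epsilon> * ip a0 b0 gv gv + \<bar>bb\<bar> * ip a0 b0 v v + Wc a0 b0 c v v + sR a0 b0 L \<tau> bb Ev Ev \<le> (1 + \<bar>bb\<bar> / \<sigma>0) * N2 gv v Ev"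
  proof -
    note nn = N2_parts_nonneg[OF gv]
    have "\<bar>bb\<bar> * ip a0 b0 v v \<le> \<bar>bb\<bar> / \<sigma>0 * Wc a0 b0 c v v"
    proof -
      have "\<sigma>0 * (\<bar>bb\<bar> * ip a0 b0 v v) \<le> \<bar>bb\<bar> * Wc a0 b0 c v v"
        using mult_left_mono[OF nn(2), of "\<bar>bb\<bar>"] by (simp add: algebra_simps)
      then show ?thesis using s0 by (simp add: field_simps)
    qed
    moreover have "\<bar>bb\<bar> / \<sigma>0 * (\<epsilon> * ip a0 b0 gv gv + sR a0 b0 L \<tau> bb Ev Ev + \<theta> * (bb\<^sup>2 * ip a0 b0 gv gv)) \<ge> 0"
      using nn s0 by (intro mult_nonneg_nonneg) auto
    moreover have "\<theta> * (bb\<^sup>2 * ip a0 b0 gv gv) \<ge> 0" using nn by simp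
    ultimately show ?thesis unfolding N2_def by (simp add: algebra_simps)
  qed
  finally show ?thesis using \<eta> by (simp add: mult_left_mono)
qed

end

definition GamC :: "real \<Rightarrow> nat \<Rightarrow> real \<Rightarrow> real \<Rightarrow> real \<Rightarrow> real \<Rightarrow> real \<Rightarrow> real" where
  "GamC l L bb C\<tau> C\<Pi> Mc Kinv = 1 + C\<tau> * Kinv + C\<tau> * l * Mc / \<bar>bb\<bar> + 2 ^ (L + 1) * C\<tau>\<^sup>2 * Kinv * (1 + C\<Pi>\<^sup>2)"

definition deltaC :: "real \<Rightarrow> nat \<Rightarrow> real \<Rightarrow> real \<Rightarrow> real \<Rightarrow> real \<Rightarrow> real \<Rightarrow> real \<Rightarrow> real" where
  "deltaC l L bb C\<tau> \<alpha> C\<Pi> Mc Kinv = \<alpha> / (4 * GamC l L bb C\<tau> C\<Pi> Mc Kinv)"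

definition betaC :: "real \<Rightarrow> nat \<Rightarrow> real \<Rightarrow> real \<Rightarrow> real \<Rightarrow> real \<Rightarrow> real \<Rightarrow> real \<Rightarrow> real" where
  "betaC l L bb C\<tau> \<alpha> C\<Pi> Mc Kinv =
     min ((min (1/2) (deltaC l L bb C\<tau> \<alpha> C\<Pi> Mc Kinv * \<alpha> / 4) / 3)
            / sqrt (2 + 4 * (deltaC l L bb C\<tau> \<alpha> C\<Pi> Mc Kinv)\<^sup>2 * (GamC l L bb C\<tau> C\<Pi> Mc Kinv + C\<tau>\<^sup>2 * Kinv)))
         (1/3)"

lemma GamC_ge1:
  assumes "l \<ge> 0" "C\<tau> \<ge> 0" "Mc \<ge> 0" "Kinv \<ge> 0"
  shows "GamC l L bb C\<tau> C\<Pi> Mc Kinv \<ge> 1"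
  unfolding GamC_def using assms by (simp add: add_nonneg_nonneg)

lemma betaC_pos:
  assumes "l \<ge> 0" "C\<tau> \<ge> 0" "Mc \<ge> 0" "Kinv \<ge> 0" "\<alpha> > 0"
  shows "betaC l L bb C\<tau> \<alpha> C\<Pi> Mc Kinv > 0"
proof -
  have G: "GamC l L bb C\<tau> C\<Pi> Mc Kinv \<ge> 1" by (rule GamC_ge1[OF assms(1-4)])
  have d: "deltaC l L bb C\<tau> \<alpha> C\<Pi> Mc Kinv > 0" unfolding deltaC_def using G assms by simp
  have "2 + 4 * (deltaC l L bb C\<tau> \<alpha> C\<Pi> Mc Kinv)\<^sup>2 * (GamC l L bb C\<tau> C\<Pi> Mc Kinv + C\<tau>\<^sup>2 * Kinv) > 0"
    using G assms by (intro add_pos_nonneg) auto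
  then show ?thesis unfolding betaC_def using d assms by simp
qed

context inst
begin

lemma Wc_nonneg: "continuous_on {a0..b0} f \<Longrightarrow> Wc a0 b0 c f f \<ge> 0"
  using Wc_lower[of f] ip_nonneg[of a0 b0 f] s0 by (meson less_imp_le mult_nonneg_nonneg order_trans)

definition "Y u = (\<lambda>v. a_MQ a0 b0 L \<epsilon> bb c \<tau> Proj u v / MQSD_norm a0 b0 L \<epsilon> bb c \<tau> Proj v) ` {v \<in> Vh a0 b0 N p. nonzero_on a0 b0 v}"

lemma bubble_in: "(\<lambda>x. (x - a0) * (b0 - x)) \<in> {v \<in> Vh a0 b0 N p. nonzero_on a0 b0 v}"
  using bubble_Vh[OF ab p2] bubble_nonzero[OF ab] by auto

lemma Y_bdd:
  assumes u: "u \<in> Vh a0 b0 N p"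
  shows "bdd_above (Y u)"
proof -
  obtain gu gP where gu: "C1I a0 b0 u gu" and gP: "\<forall>k\<in>{1..L}. C1I a0 b0 (Proj k u) (gP k)"
    using reps[OF u] by blast
  define Eu where "Eu = (\<lambda>k x. gu x - gP k x)"
  have Eu: "\<forall>k\<in>{1..L}. C1I a0 b0 (\<lambda>y. u y - Proj k u y) (Eu k)"
    unfolding Eu_def using gP C1I_diff[OF gu] by blast
  define Cu where "Cu = \<epsilon> * ip a0 b0 gu gu + \<bar>bb\<bar> * ip a0 b0 gu gu + Wc a0 b0 c u u + sR a0 b0 L \<tau> bb Eu Eu"
  define D where "D = 1 + \<bar>bb\<bar> / \<sigma>0"
  have Cu0: "Cu \<ge> 0" unfolding Cu_def
    using N2_parts_nonneg[OF gu] sR_nonneg[OF t0, of a0 b0 L bb Eu] s0 ep Wc_nonneg[OF C1I_cont(1)[OF gu]] by (intro add_nonneg_nonneg) (auto intro: mult_nonneg_nonneg)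
  have D0: "D \<ge> 0" using s0 by (simp add: D_def)
  have "y \<le> (Cu + D) / 2" if y: "y \<in> Y u" for y
  proof -
    obtain v where v: "v \<in> Vh a0 b0 N p" and yv: "y = a_MQ a0 b0 L \<epsilon> bb c \<tau> Proj u v / MQSD_norm a0 b0 L \<epsilon> bb c \<tau> Proj v"
      using y unfolding Y_def by blast
    obtain gv gPv where gv: "C1I a0 b0 v gv" and gPv: "\<forall>k\<in>{1..L}. C1I a0 b0 (Proj k v) (gPv k)"
      using reps[OF v] by blast
    define Ev where "Ev = (\<lambda>k x. gv x - gPv k x)"
    have Ev: "\<forall>k\<in>{1..L}. C1I a0 b0 (\<lambda>y. v y - Proj k v y) (Ev k)"
      unfolding Ev_def using gPv C1I_diff[OF gv] by blast
    have nv: "MQSD_norm a0 b0 L \<epsilon> bb c \<tau> Proj v = sqrt (N2 gv v Ev)" by (rule MQSD_N2[OF gv Ev])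
    show ?thesis
    proof (cases "N2 gv v Ev = 0")
      case True
      then show ?thesis using yv nv Cu0 D0 by simp
    next
      case False
      then have N0: "N2 gv v Ev > 0" using N2_nonneg[OF gv] by (simp add: order_less_le)
      define m where "m = sqrt (N2 gv v Ev)"
      have m0: "m > 0" using N0 by (simp add: m_def)
      have mm: "m * m = N2 gv v Ev" using N0 by (simp add: m_def)
      have "2 * \<bar>a_MQ a0 b0 L \<epsilon> bb c \<tau> Proj u v\<bar> \<le> Cu / (1 / m) + (1 / m) * (D * N2 gv v Ev)"
        using young_a[OF gu gv Eu Ev, of "1 / m"] m0 unfolding Cu_def D_def by simp
      also have "\<dots> = (Cu + D) * m" using m0 mm by (simp add: field_simps)
      finally have "a_MQ a0 b0 L \<epsilon> bb c \<tau> Proj u v \<le> (Cu + D) / 2 * m" by simp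
      then show ?thesis using yv nv m0 by (simp add: m_def divide_le_eq)
    qed
  qed
  then show ?thesis unfolding bdd_above_def by blast
qed

end

context inst
begin

lemma a_rep:
  assumes "C1I a0 b0 u gu" "C1I a0 b0 v gv"
    "\<forall>k\<in>{1..L}. C1I a0 b0 (\<lambda>y. u y - Proj k u y) (Eu k)"
    "\<forall>k\<in>{1..L}. C1I a0 b0 (\<lambda>y. v y - Proj k v y) (Ev k)"
  shows "a_MQ a0 b0 L \<epsilon> bb c \<tau> Proj u v = \<epsilon> * ip a0 b0 gu gv + bb * ip a0 b0 gu v + Wc a0 b0 c u v
     + sR a0 b0 L \<tau> bb Eu Ev"
  by (rule a_MQ_rep[OF assms(1,2)]) (rule assms)+

lemma a_zero_if_N2:
  assumes gu: "C1I a0 b0 u gu" and gv: "C1I a0 b0 v gv"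
    and Eu: "\<forall>k\<in>{1..L}. C1I a0 b0 (\<lambda>y. u y - Proj k u y) (Eu k)"
    and Ev: "\<forall>k\<in>{1..L}. C1I a0 b0 (\<lambda>y. v y - Proj k v y) (Ev k)"
    and z: "N2 gv v Ev = 0"
  shows "a_MQ a0 b0 L \<epsilon> bb c \<tau> Proj u v = 0"
proof (rule ccontr)
  define Cu where "Cu = \<epsilon> * ip a0 b0 gu gu + \<bar>bb\<bar> * ip a0 b0 gu gu + Wc a0 b0 c u u + sR a0 b0 L \<tau> bb Eu Eu"
  have Cu0: "Cu \<ge> 0" unfolding Cu_def
    using N2_parts_nonneg[OF gu] sR_nonneg[OF t0, of a0 b0 L bb Eu] s0 ep Wc_nonneg[OF C1I_cont(1)[OF gu]]
    by (intro add_nonneg_nonneg) (auto intro: mult_nonneg_nonneg)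
  assume ne: "a_MQ a0 b0 L \<epsilon> bb c \<tau> Proj u v \<noteq> 0"
  define e where "e = \<bar>a_MQ a0 b0 L \<epsilon> bb c \<tau> Proj u v\<bar>"
  have e0: "e > 0" using ne by (simp add: e_def)
  have "2 * e \<le> Cu / ((Cu + 1) / e)"
    using young_a[OF gu gv Eu Ev, of "(Cu + 1) / e"] e0 Cu0 z unfolding Cu_def e_def by simp
  also have "\<dots> = Cu * e / (Cu + 1)" using e0 Cu0 by (simp add: field_simps)
  also have "\<dots> \<le> e" using e0 Cu0 by (simp add: field_simps)
  finally show False using e0 by simp
qed

lemma young_scaled:
  fixes \<mu> \<eta> X P Q :: real
  assumes "\<mu> > 0" "\<eta> > 0" "2 * \<bar>X\<bar> \<le> (\<eta> / \<mu>) * P + Q / (\<eta> / \<mu>)"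
  shows "2 * \<bar>\<mu> * X\<bar> \<le> \<eta> * P + \<mu>\<^sup>2 * Q / \<eta>"
proof -
  have "2 * \<bar>\<mu> * X\<bar> = \<mu> * (2 * \<bar>X\<bar>)" using assms by (simp add: abs_mult)
  also have "\<dots> \<le> \<mu> * ((\<eta> / \<mu>) * P + Q / (\<eta> / \<mu>))" using assms by (intro mult_left_mono) auto
  also have "\<dots> = \<eta> * P + \<mu>\<^sup>2 * Q / \<eta>" using assms by (simp add: field_simps power2_eq_square)
  finally show ?thesis .
qed

lemma comb_alg:
  fixes cP P cR DR cN Z Q :: real
  assumes "cP \<le> P / 2" "cR \<le> DR" "cN \<le> 3 * cP + 3 * cR" "DR - Q / 4 \<le> Z" "Q \<le> 2 * P"
  shows "cN / 3 \<le> P + Z"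
  using assms by linarith

lemma lin_aux1: "(R::real) \<le> 2 * T + 2 * S \<Longrightarrow> 0 \<le> A \<Longrightarrow> 0 \<le> B \<Longrightarrow> R \<le> 2 * (A + B + S + T)"
  by (simp add: algebra_simps)

lemma sqrt_div_self: "x > 0 \<Longrightarrow> x / sqrt x = sqrt x"
  by (metis real_div_sqrt less_imp_le)

lemma main:
  assumes u: "u \<in> Vh a0 b0 N p"
  shows "betaC (b0 - a0) L bb C\<tau> \<alpha> C\<Pi> Mc Kinv * MQSD_norm a0 b0 L \<epsilon> bb c \<tau> Proj u \<le> Sup (Y u)"
proof -
  define \<beta> where "\<beta> = betaC (b0 - a0) L bb C\<tau> \<alpha> C\<Pi> Mc Kinv"
  have \<beta>13: "\<beta> \<le> 1/3" unfolding \<beta>_def betaC_def by simp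
  obtain gu gP where gu: "C1I a0 b0 u gu"
    and gP: "\<forall>k\<in>{1..L}. C1I a0 b0 (Proj k u) (gP k) \<and> gP k \<in> spline_space a0 b0 (N div 2 ^ k) (p - 1)"
    and invu: "ip a0 b0 gu gu \<le> Kh * ip a0 b0 u u"
    and Ebu: "\<forall>k\<in>{1..L}. ip a0 b0 (\<lambda>x. gu x - gP k x) (\<lambda>x. gu x - gP k x) \<le> 2 * Kh * (1 + C\<Pi>\<^sup>2) * ip a0 b0 u u"
    using reps[OF u] by blast
  define Eu where "Eu = (\<lambda>k x. gu x - gP k x)"
  have Eu: "\<forall>k\<in>{1..L}. C1I a0 b0 (\<lambda>y. u y - Proj k u y) (Eu k)"
    unfolding Eu_def using gP C1I_diff[OF gu] by blast
  have cEu: "\<forall>k\<in>{1..L}. continuous_on {a0..b0} (Eu k)" using Eu C1I_cont(2) by blast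
  have Lin: "L \<in> {1..L}" using L1 by simp
  define q where "q = gP L"
  have cqs: "C1I a0 b0 (Proj L u) q \<and> q \<in> spline_space a0 b0 (N div 2 ^ L) (p - 1)"
    using gP Lin unfolding q_def by blast
  have cq: "C1I a0 b0 (Proj L u) q" and qsp: "q \<in> spline_space a0 b0 (N div 2 ^ L) (p - 1)"
    using cqs by blast+
  have cu: "continuous_on {a0..b0} u" "continuous_on {a0..b0} gu" using C1I_cont[OF gu] by auto
  have cqq: "continuous_on {a0..b0} q" using C1I_cont(2)[OF cq] .
  have cEL: "continuous_on {a0..b0} (Eu L)" using cEu Lin by blast
  have gu_split: "gu x = Eu L x + 1 * q x" for x by (simp add: Eu_def q_def)
  have q_split: "q x = gu x + (-1) * Eu L x" for x by (simp add: Eu_def q_def)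
  define A where "A = \<epsilon> * ip a0 b0 gu gu"
  define B where "B = Wc a0 b0 c u u"
  define S where "S = sR a0 b0 L \<tau> bb Eu Eu"
  define T where "T = \<theta> * (bb\<^sup>2 * ip a0 b0 gu gu)"
  define Q2 where "Q2 = ip a0 b0 q q"
  define R where "R = \<theta> * (bb\<^sup>2 * Q2)"
  have N2u: "N2 gu u Eu = A + B + S + T" unfolding N2_def A_def B_def S_def T_def ..
  have nu: "MQSD_norm a0 b0 L \<epsilon> bb c \<tau> Proj u = sqrt (A + B + S + T)"
    using MQSD_N2[OF gu Eu] N2u by simp
  have ua: "u a0 = 0" and ub: "u b0 = 0" using u by (auto simp: Vh_def)
  have auu: "a_MQ a0 b0 L \<epsilon> bb c \<tau> Proj u u = A + B + S"
    using a_rep[OF gu gu Eu Eu] ip_deriv_self_zero[OF ab gu ua ub]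
    unfolding A_def B_def S_def by simp
  have th0: "\<theta> \<ge> 0" by (rule theta_bounds(1))
  have A0: "A \<ge> 0" unfolding A_def using ep ip_nonneg[of a0 b0 gu] by simp
  have B0: "B \<ge> 0" unfolding B_def by (rule Wc_nonneg[OF cu(1)])
  have S0: "S \<ge> 0" unfolding S_def by (rule sR_nonneg[OF t0])
  have T0: "T \<ge> 0" unfolding T_def using th0 ip_nonneg[of a0 b0 gu] by simp
  have Q20: "Q2 \<ge> 0" unfolding Q2_def by (rule ip_nonneg)
  have R0: "R \<ge> 0" unfolding R_def using th0 Q20 by simp
  have tb0: "\<theta> * bb\<^sup>2 \<ge> 0" using th0 by simp
  have SL: "\<theta> * (bb\<^sup>2 * ip a0 b0 (Eu L) (Eu L)) \<le> S"
    unfolding S_def \<theta>_def using sR_term[OF t0 L1, of bb a0 b0 Eu] by (simp add: mult.assoc)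
  have TSR: "T \<le> 2 * S + 2 * R"
  proof -
    have "ip a0 b0 gu gu = ip a0 b0 (\<lambda>x. Eu L x + 1 * q x) (\<lambda>x. Eu L x + 1 * q x)"
      by (rule ip_cong) (simp_all add: gu_split)
    also have "\<dots> \<le> 2 * ip a0 b0 (Eu L) (Eu L) + 2 * 1\<^sup>2 * ip a0 b0 q q" by (rule ip_sq[OF cEL cqq])
    finally have "ip a0 b0 gu gu \<le> 2 * ip a0 b0 (Eu L) (Eu L) + 2 * ip a0 b0 q q" by simp
    from mult_left_mono[OF this tb0]
    have "\<theta> * bb\<^sup>2 * ip a0 b0 gu gu \<le> 2 * (\<theta> * bb\<^sup>2 * ip a0 b0 (Eu L) (Eu L)) + 2 * (\<theta> * bb\<^sup>2 * ip a0 b0 q q)"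
      by (simp add: algebra_simps)
    then show ?thesis using SL unfolding T_def R_def Q2_def by (simp add: mult.assoc)
  qed
  have RTS: "R \<le> 2 * T + 2 * S"
  proof -
    have "ip a0 b0 q q = ip a0 b0 (\<lambda>x. gu x + (-1) * Eu L x) (\<lambda>x. gu x + (-1) * Eu L x)"
      by (rule ip_cong) (simp_all add: q_split)
    also have "\<dots> \<le> 2 * ip a0 b0 gu gu + 2 * (-1)\<^sup>2 * ip a0 b0 (Eu L) (Eu L)" by (rule ip_sq[OF cu(2) cEL])
    finally have "ip a0 b0 q q \<le> 2 * ip a0 b0 gu gu + 2 * ip a0 b0 (Eu L) (Eu L)" by simp
    from mult_left_mono[OF this tb0]
    have "\<theta> * bb\<^sup>2 * ip a0 b0 q q \<le> 2 * (\<theta> * bb\<^sup>2 * ip a0 b0 gu gu) + 2 * (\<theta> * bb\<^sup>2 * ip a0 b0 (Eu L) (Eu L))"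
      by (simp add: algebra_simps)
    then show ?thesis using SL unfolding T_def R_def Q2_def by (simp add: mult.assoc)
  qed
  have bdd: "bdd_above (Y u)" by (rule Y_bdd[OF u])
  have inY: "a_MQ a0 b0 L \<epsilon> bb c \<tau> Proj u v / MQSD_norm a0 b0 L \<epsilon> bb c \<tau> Proj v \<in> Y u"
    if "v \<in> Vh a0 b0 N p" "nonzero_on a0 b0 v" for v
    using that unfolding Y_def by blast
  show ?thesis
  proof (cases "A + B + S + T = 0")
    case True
    then have A00: "A = 0" and B00: "B = 0" and S00: "S = 0" using A0 B0 S0 T0 by linarith+
    have gu0: "ip a0 b0 gu gu = 0" using A00 ep unfolding A_def by simp
    define v0 where "v0 = (\<lambda>x. (x - a0) * (b0 - x))"
    have v0: "v0 \<in> Vh a0 b0 N p" "nonzero_on a0 b0 v0" using bubble_in unfolding v0_def by auto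
    obtain gv gPv where gv: "C1I a0 b0 v0 gv" and gPv: "\<forall>k\<in>{1..L}. C1I a0 b0 (Proj k v0) (gPv k)"
      using reps[OF v0(1)] by blast
    define Ev where "Ev = (\<lambda>k x. gv x - gPv k x)"
    have Ev: "\<forall>k\<in>{1..L}. C1I a0 b0 (\<lambda>y. v0 y - Proj k v0 y) (Ev k)"
      unfolding Ev_def using gPv C1I_diff[OF gv] by blast
    define D where "D = (1 + \<bar>bb\<bar> / \<sigma>0) * N2 gv v0 Ev"
    have D0: "D \<ge> 0" unfolding D_def using N2_nonneg[OF gv] s0 by simp
    have yb: "2 * \<bar>a_MQ a0 b0 L \<epsilon> bb c \<tau> Proj u v0\<bar> \<le> \<eta> * D" if "\<eta> > 0" for \<eta>
      using young_a[OF gu gv Eu Ev that] gu0 A00 B00 S00 unfolding A_def B_def S_def D_def by simp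
    have a0v: "a_MQ a0 b0 L \<epsilon> bb c \<tau> Proj u v0 = 0"
    proof (rule ccontr)
      assume ne: "a_MQ a0 b0 L \<epsilon> bb c \<tau> Proj u v0 \<noteq> 0"
      define e where "e = \<bar>a_MQ a0 b0 L \<epsilon> bb c \<tau> Proj u v0\<bar>"
      have e0: "e > 0" using ne by (simp add: e_def)
      have "2 * e \<le> e / (2 * (D + 1)) * D" using yb[of "e / (2 * (D + 1))"] e0 D0 by (simp add: e_def)
      also have "\<dots> \<le> e / 2" using e0 D0 by (simp add: field_simps)
      finally show False using e0 by simp
    qed
    have "\<beta> * MQSD_norm a0 b0 L \<epsilon> bb c \<tau> Proj u = 0" using nu True by simp
    also have "0 \<le> Sup (Y u)"
      by (rule cSup_upper2[OF inY[OF v0] _ bdd]) (simp add: a0v)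
    finally show ?thesis unfolding \<beta>_def .
  next
    case False
    then have Np: "A + B + S + T > 0" using A0 B0 S0 T0 by linarith
    show ?thesis
    proof (cases "R = 0")
      case True
      have unz: "nonzero_on a0 b0 u"
      proof (rule ccontr)
        assume "\<not> nonzero_on a0 b0 u"
        then have z: "\<And>x. x \<in> {a0..b0} \<Longrightarrow> u x = 0" unfolding nonzero_on_def by auto
        have g0: "C1I a0 b0 u (\<lambda>x. 0)" by (rule C1I_zero[OF z])
        have "MQSD_norm a0 b0 L \<epsilon> bb c \<tau> Proj u = sqrt (N2 (\<lambda>x. 0) u (\<lambda>k x. 0))"
          by (rule MQSD_N2[OF g0 E_zero[OF u z]])
        also have "N2 (\<lambda>x. 0) u (\<lambda>k x. 0) = 0"
          unfolding N2_def using Wc_zero[of a0 b0 u c u] z sR_zero[of a0 b0 L \<tau> bb "\<lambda>k x. 0"]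
          by (simp add: ip_def)
        finally show False using nu Np by simp
      qed
      have "\<beta> * MQSD_norm a0 b0 L \<epsilon> bb c \<tau> Proj u \<le> (1/3) * sqrt (A + B + S + T)"
        unfolding nu by (rule mult_right_mono[OF \<beta>13]) (use Np in simp)
      also have "\<dots> = ((A + B + S + T) / 3) / sqrt (A + B + S + T)"
        using Np by (simp add: field_simps)
      also have "\<dots> \<le> (A + B + S) / sqrt (A + B + S + T)"
        using TSR True Np A0 B0 by (intro divide_right_mono) auto
      also have "\<dots> = a_MQ a0 b0 L \<epsilon> bb c \<tau> Proj u u / MQSD_norm a0 b0 L \<epsilon> bb c \<tau> Proj u"
        using auu nu by simp
      also have "\<dots> \<le> Sup (Y u)" by (rule cSup_upper[OF inY[OF u unz] bdd])
      finally show ?thesis unfolding \<beta>_def .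
    next
      case False
      then have Rp: "R > 0" using R0 by simp
      have th_pos: "\<theta> > 0" and bb0: "bb \<noteq> 0" and Q2p: "Q2 > 0"
        using Rp th0 Q20 unfolding R_def by (auto simp: zero_less_mult_iff)
      define \<mu> where "\<mu> = \<theta> * \<bar>bb\<bar>"
      have mu0: "\<mu> > 0" using th_pos bb0 by (simp add: \<mu>_def)
      have mu2: "\<mu>\<^sup>2 = \<theta> * \<theta> * bb\<^sup>2" by (simp add: \<mu>_def power2_eq_square)
      define G where "G = GamC (b0 - a0) L bb C\<tau> C\<Pi> Mc Kinv"
      have G1: "G \<ge> 1" unfolding G_def using ab Ct Mc1 Kp by (intro GamC_ge1) auto
      define \<delta> where "\<delta> = deltaC (b0 - a0) L bb C\<tau> \<alpha> C\<Pi> Mc Kinv"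
      define \<eta> where "\<eta> = 2 * G / \<alpha>"
      have eta0: "\<eta> > 0" using G1 al by (simp add: \<eta>_def)
      have delta0: "\<delta> > 0" using G1 al by (simp add: \<delta>_def deltaC_def G_def[symmetric])
      have de: "\<delta> * \<eta> = 1 / 2" using G1 al by (simp add: \<delta>_def deltaC_def G_def[symmetric] \<eta>_def)
      have lq: "l2norm a0 b0 q = sqrt Q2" by (simp add: l2norm_def Q2_def)
      have isq: "\<alpha> * sqrt Q2 \<le> Sup ((\<lambda>v. ip a0 b0 v q / l2norm a0 b0 v) ` {v \<in> Vh a0 b0 N p. nonzero_on a0 b0 v})"
        using infsup qsp lq by auto
      have "\<exists>x\<in>(\<lambda>v. ip a0 b0 v q / l2norm a0 b0 v) ` {v \<in> Vh a0 b0 N p. nonzero_on a0 b0 v}. \<alpha> / 2 * sqrt Q2 < x"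
      proof (rule less_cSupD)
        show "(\<lambda>v. ip a0 b0 v q / l2norm a0 b0 v) ` {v \<in> Vh a0 b0 N p. nonzero_on a0 b0 v} \<noteq> {}"
          using bubble_in by blast
        have "0 < \<alpha> * sqrt Q2" using al Q2p by simp
        then show "\<alpha> / 2 * sqrt Q2 < Sup ((\<lambda>v. ip a0 b0 v q / l2norm a0 b0 v) ` {v \<in> Vh a0 b0 N p. nonzero_on a0 b0 v})"
          using isq by linarith
      qed
      then obtain w where w: "w \<in> Vh a0 b0 N p" and wr: "\<alpha> / 2 * sqrt Q2 < ip a0 b0 w q / l2norm a0 b0 w"
        by blast
      define lw where "lw = l2norm a0 b0 w"
      have lw0: "lw > 0"
      proof -
        have "lw \<ge> 0" by (simp add: lw_def l2norm_def ip_nonneg)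
        moreover have "lw \<noteq> 0"
        proof
          assume "lw = 0"
          then have "\<alpha> / 2 * sqrt Q2 < 0" using wr unfolding lw_def by simp
          moreover have "\<alpha> / 2 * sqrt Q2 > 0" using al Q2p by simp
          ultimately show False by simp
        qed
        ultimately show ?thesis by simp
      qed
      have lw2: "lw * lw = ip a0 b0 w w" using ip_nonneg[of a0 b0 w] by (simp add: lw_def l2norm_def)
      have wq: "\<alpha> / 2 * sqrt Q2 * lw < ip a0 b0 w q" using wr lw0 unfolding lw_def by (simp add: pos_less_divide_eq)
      define t where "t = sqrt Q2 / lw"
      have tpos: "t > 0" using Q2p lw0 by (simp add: t_def)
      define z where "z = (\<lambda>y. t * w y)"
      have z: "z \<in> Vh a0 b0 N p" unfolding z_def by (rule Vh_scale[OF w])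
      have zz: "ip a0 b0 z z = Q2"
      proof -
        have "ip a0 b0 z z = t * t * ip a0 b0 w w" unfolding z_def ip_def by (simp add: algebra_simps)
        also have "\<dots> = Q2" using lw0 Q2p by (simp add: t_def lw2[symmetric] field_simps)
        finally show ?thesis .
      qed
      have qz: "ip a0 b0 q z \<ge> \<alpha> / 2 * Q2"
      proof -
        have "ip a0 b0 q z = t * ip a0 b0 w q" unfolding z_def by (simp add: ip_scale ip_comm)
        moreover have "t * (\<alpha> / 2 * sqrt Q2 * lw) = \<alpha> / 2 * Q2"
          using lw0 Q2p by (simp add: t_def field_simps)
        moreover have "t * (\<alpha> / 2 * sqrt Q2 * lw) \<le> t * ip a0 b0 w q"
          using wq tpos by simp
        ultimately show ?thesis by linarith
      qed
      obtain gz gPz where gz: "C1I a0 b0 z gz"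
        and gPz: "\<forall>k\<in>{1..L}. C1I a0 b0 (Proj k z) (gPz k) \<and> gPz k \<in> spline_space a0 b0 (N div 2 ^ k) (p - 1)"
        and invz: "ip a0 b0 gz gz \<le> Kh * ip a0 b0 z z"
        and Ebz: "\<forall>k\<in>{1..L}. ip a0 b0 (\<lambda>x. gz x - gPz k x) (\<lambda>x. gz x - gPz k x) \<le> 2 * Kh * (1 + C\<Pi>\<^sup>2) * ip a0 b0 z z"
        using reps[OF z] by blast
      define Ez where "Ez = (\<lambda>k x. gz x - gPz k x)"
      have Ez: "\<forall>k\<in>{1..L}. C1I a0 b0 (\<lambda>y. z y - Proj k z y) (Ez k)"
        unfolding Ez_def using gPz C1I_diff[OF gz] by blast
      have cEz: "\<forall>k\<in>{1..L}. continuous_on {a0..b0} (Ez k)" using Ez C1I_cont(2) by blast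
      have cz: "continuous_on {a0..b0} z" "continuous_on {a0..b0} gz" using C1I_cont[OF gz] by auto
      have invz': "ip a0 b0 gz gz \<le> Kh * Q2" using invz zz by simp
      have Ebz': "\<forall>k\<in>{1..L}. ip a0 b0 (Ez k) (Ez k) \<le> 2 * Kh * (1 + C\<Pi>\<^sup>2) * Q2"
        using Ebz zz unfolding Ez_def by simp
      have Kh0: "Kh \<ge> 0" using Kh_eq Kp h_pos by simp
      define s where "s = \<delta> * \<theta> * bb"
      define v where "v = (\<lambda>y. u y + s * z y)"
      have v: "v \<in> Vh a0 b0 N p" unfolding v_def by (rule Vh_lincomb[OF u z])
      define gv where "gv = (\<lambda>x. gu x + s * gz x)"
      have gv: "C1I a0 b0 v gv" unfolding v_def gv_def by (rule C1I_comb[OF gu gz])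
      define Ev where "Ev = (\<lambda>k x. Eu k x + s * Ez k x)"
      have Ev: "\<forall>k\<in>{1..L}. C1I a0 b0 (\<lambda>y. v y - Proj k v y) (Ev k)"
      proof
        fix k assume k: "k \<in> {1..L}"
        show "C1I a0 b0 (\<lambda>y. v y - Proj k v y) (Ev k)"
          unfolding v_def Ev_def using E_comb[OF u z k, of "Eu k" "Ez k" s] Eu Ez k by blast
      qed
      define X2 where "X2 = ip a0 b0 gu gz"
      define X1 where "X1 = ip a0 b0 gu z"
      define Xc where "Xc = Wc a0 b0 c u z"
      define Xs where "Xs = sR a0 b0 L \<tau> bb Eu Ez"
      have auv: "a_MQ a0 b0 L \<epsilon> bb c \<tau> Proj u v = A + B + S + s * (\<epsilon> * X2 + bb * X1 + Xc + Xs)"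
      proof -
        have "a_MQ a0 b0 L \<epsilon> bb c \<tau> Proj u v = \<epsilon> * ip a0 b0 gu gv + bb * ip a0 b0 gu v + Wc a0 b0 c u v + sR a0 b0 L \<tau> bb Eu Ev"
          by (rule a_rep[OF gu gv Eu Ev])
        also have "ip a0 b0 gu gv = ip a0 b0 gu gu + s * X2" unfolding gv_def X2_def by (rule ip_lin[OF cu(2) cu(2) cz(2)])
        also have "ip a0 b0 gu v = ip a0 b0 gu u + s * X1" unfolding v_def X1_def by (rule ip_lin[OF cu(2) cu(1) cz(1)])
        also have "Wc a0 b0 c u v = B + s * Xc" unfolding v_def Xc_def B_def by (rule Wc_lin[OF cu(1) cu(1) cz(1)])
        also have "sR a0 b0 L \<tau> bb Eu Ev = S + s * Xs" unfolding Ev_def Xs_def S_def by (rule sR_lin[OF cEu cEu cEz])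
        finally show ?thesis using ip_deriv_self_zero[OF ab gu ua ub] unfolding A_def by (simp add: algebra_simps)
      qed
      have X1split: "X1 = ip a0 b0 (Eu L) z + ip a0 b0 q z"
      proof -
        have "X1 = ip a0 b0 (\<lambda>x. Eu L x + 1 * q x) z" unfolding X1_def by (rule ip_cong) (simp_all add: gu_split)
        also have "\<dots> = ip a0 b0 (Eu L) z + 1 * ip a0 b0 q z" by (rule ip_lin_left[OF cz(1) cEL cqq])
        finally show ?thesis by simp
      qed
      have hb: "\<theta> * \<epsilon> \<le> C\<tau> * h\<^sup>2" "\<mu> \<le> C\<tau> * h" using theta_bounds \<mu>_def by auto
      have Khh: "Kh * h\<^sup>2 = Kinv" using Kh_eq h_pos by simp
      have Y1: "2 * \<bar>\<theta> * bb\<^sup>2 * ip a0 b0 (Eu L) z\<bar> \<le> \<eta> * S + R / \<eta>"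
      proof -
        have y: "2 * \<bar>ip a0 b0 (Eu L) z\<bar> \<le> \<eta> * ip a0 b0 (Eu L) (Eu L) + Q2 / \<eta>"
          using ip_young[OF cEL cz(1) eta0] zz by simp
        have "2 * \<bar>\<theta> * bb\<^sup>2 * ip a0 b0 (Eu L) z\<bar> = (\<theta> * bb\<^sup>2) * (2 * \<bar>ip a0 b0 (Eu L) z\<bar>)"
          using th0 by (simp add: abs_mult)
        also have "\<dots> \<le> (\<theta> * bb\<^sup>2) * (\<eta> * ip a0 b0 (Eu L) (Eu L) + Q2 / \<eta>)" by (rule mult_left_mono[OF y tb0])
        also have "\<dots> = \<eta> * (\<theta> * (bb\<^sup>2 * ip a0 b0 (Eu L) (Eu L))) + R / \<eta>" unfolding R_def by (simp add: algebra_simps)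
        also have "\<dots> \<le> \<eta> * S + R / \<eta>" using mult_left_mono[OF SL, of \<eta>] eta0 by simp
        finally show ?thesis .
      qed
      have Y2: "2 * \<bar>\<theta> * bb * \<epsilon> * X2\<bar> \<le> \<eta> * A + (C\<tau> * Kinv) * R / \<eta>"
      proof -
        have y: "2 * \<bar>\<mu> * X2\<bar> \<le> \<eta> * ip a0 b0 gu gu + \<mu>\<^sup>2 * ip a0 b0 gz gz / \<eta>"
          by (rule young_scaled[OF mu0 eta0]) (use ip_young[OF cu(2) cz(2), of "\<eta> / \<mu>"] mu0 eta0 X2_def in simp)
        have "2 * \<bar>\<theta> * bb * \<epsilon> * X2\<bar> = \<epsilon> * (2 * \<bar>\<mu> * X2\<bar>)" using th0 ep by (simp add: abs_mult \<mu>_def)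
        also have "\<dots> \<le> \<epsilon> * (\<eta> * ip a0 b0 gu gu + \<mu>\<^sup>2 * ip a0 b0 gz gz / \<eta>)" using y ep by simp
        also have "\<dots> = \<eta> * A + (\<epsilon> * \<mu>\<^sup>2 * ip a0 b0 gz gz) / \<eta>" unfolding A_def by (simp add: algebra_simps)
        also have "\<epsilon> * \<mu>\<^sup>2 * ip a0 b0 gz gz \<le> (C\<tau> * Kinv) * R"
        proof -
          have "\<epsilon> * \<mu>\<^sup>2 * ip a0 b0 gz gz \<le> \<epsilon> * \<mu>\<^sup>2 * (Kh * Q2)"
            using invz' ep by (intro mult_left_mono) auto
          also have "\<dots> = (\<theta> * \<epsilon>) * Kh * R" unfolding R_def mu2 by (simp add: algebra_simps)
          also have "\<dots> \<le> (C\<tau> * h\<^sup>2) * Kh * R" using hb(1) Kh0 R0 by (intro mult_right_mono) auto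
          also have "\<dots> = (C\<tau> * Kinv) * R" using Khh by (simp add: algebra_simps)
          finally show ?thesis .
        qed
        finally show ?thesis using eta0 by (simp add: divide_right_mono)
      qed
      have Y3: "2 * \<bar>\<theta> * bb * Xc\<bar> \<le> \<eta> * B + (C\<tau> * (b0 - a0) * Mc / \<bar>bb\<bar>) * R / \<eta>"
      proof -
        have y: "2 * \<bar>\<mu> * Xc\<bar> \<le> \<eta> * B + \<mu>\<^sup>2 * Wc a0 b0 c z z / \<eta>"
          by (rule young_scaled[OF mu0 eta0]) (use Wc_young[OF cu(1) cz(1), of "\<eta> / \<mu>"] mu0 eta0 Xc_def B_def in simp)
        have "2 * \<bar>\<theta> * bb * Xc\<bar> = 2 * \<bar>\<mu> * Xc\<bar>" using th0 by (simp add: abs_mult \<mu>_def)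
        also have "\<dots> \<le> \<eta> * B + \<mu>\<^sup>2 * Wc a0 b0 c z z / \<eta>" by (rule y)
        also have "\<mu>\<^sup>2 * Wc a0 b0 c z z \<le> (C\<tau> * (b0 - a0) * Mc / \<bar>bb\<bar>) * R"
        proof -
          have "\<mu>\<^sup>2 * Wc a0 b0 c z z \<le> \<mu>\<^sup>2 * (Mc * Q2)"
            using Wc_upper[OF cz(1)] zz by (intro mult_left_mono) auto
          also have "\<dots> = (\<theta> * Mc) * R" unfolding R_def mu2 by (simp add: algebra_simps)
          also have "\<theta> \<le> C\<tau> * (b0 - a0) / \<bar>bb\<bar>"
          proof -
            have "\<theta> * \<bar>bb\<bar> \<le> C\<tau> * (b0 - a0)" using hb(2) h_le Ct unfolding \<mu>_def
              by (meson less_imp_le mult_left_mono order_trans)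
            then show ?thesis using bb0 by (simp add: field_simps)
          qed
          finally show ?thesis using Mc1 R0 by (simp add: mult_right_mono mult.commute mult.left_commute)
        qed
        finally show ?thesis using eta0 by (simp add: divide_right_mono)
      qed
      have Y4: "2 * \<bar>\<theta> * bb * Xs\<bar> \<le> \<eta> * S + (2 ^ (L + 1) * C\<tau>\<^sup>2 * Kinv * (1 + C\<Pi>\<^sup>2)) * R / \<eta>"
      proof -
        have y: "2 * \<bar>\<mu> * Xs\<bar> \<le> \<eta> * S + \<mu>\<^sup>2 * sR a0 b0 L \<tau> bb Ez Ez / \<eta>"
          by (rule young_scaled[OF mu0 eta0]) (use sR_young[OF t0 _ cEu cEz, of "\<eta> / \<mu>"] mu0 eta0 Xs_def S_def in simp)
        have "2 * \<bar>\<theta> * bb * Xs\<bar> = 2 * \<bar>\<mu> * Xs\<bar>" using th0 by (simp add: abs_mult \<mu>_def)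
        also have "\<dots> \<le> \<eta> * S + \<mu>\<^sup>2 * sR a0 b0 L \<tau> bb Ez Ez / \<eta>" by (rule y)
        also have "\<mu>\<^sup>2 * sR a0 b0 L \<tau> bb Ez Ez \<le> (2 ^ (L + 1) * C\<tau>\<^sup>2 * Kinv * (1 + C\<Pi>\<^sup>2)) * R"
        proof -
          have Lam0: "2 * Kh * (1 + C\<Pi>\<^sup>2) * Q2 \<ge> 0" using Kh0 Q20 by simp
          have "sR a0 b0 L \<tau> bb Ez Ez \<le> \<tau> * bb\<^sup>2 * (2 * Kh * (1 + C\<Pi>\<^sup>2) * Q2)"
            by (rule sR_bound[OF t0 Ebz' Lam0])
          then have "\<mu>\<^sup>2 * sR a0 b0 L \<tau> bb Ez Ez \<le> \<mu>\<^sup>2 * (\<tau> * bb\<^sup>2 * (2 * Kh * (1 + C\<Pi>\<^sup>2) * Q2))"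
            by (intro mult_left_mono) auto
          also have "\<dots> = (2 ^ L * \<mu>\<^sup>2 * Kh) * (2 * (1 + C\<Pi>\<^sup>2)) * R"
          proof -
            have tt: "\<tau> = 2 ^ L * \<theta>" by (simp add: \<theta>_def)
            show ?thesis unfolding R_def mu2 by (subst tt) (simp add: algebra_simps power2_eq_square)
          qed
          also have "\<dots> \<le> (2 ^ L * C\<tau>\<^sup>2 * Kinv) * (2 * (1 + C\<Pi>\<^sup>2)) * R"
          proof -
            have "\<mu>\<^sup>2 \<le> (C\<tau> * h)\<^sup>2" using hb(2) mu0 by (intro power_mono) auto
            then have "\<mu>\<^sup>2 * Kh \<le> (C\<tau> * h)\<^sup>2 * Kh" using Kh0 by (rule mult_right_mono)
            also have "\<dots> = C\<tau>\<^sup>2 * Kinv" using Khh by (simp add: power_mult_distrib algebra_simps)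
            finally have m1: "2 ^ L * \<mu>\<^sup>2 * Kh \<le> 2 ^ L * C\<tau>\<^sup>2 * Kinv" by (simp add: mult.assoc)
            have m2: "2 * (1 + C\<Pi>\<^sup>2) * R \<ge> 0" using R0 by simp
            from mult_right_mono[OF m1 m2] show ?thesis by (simp only: mult.assoc)
          qed
          also have "\<dots> = (2 ^ (L + 1) * C\<tau>\<^sup>2 * Kinv * (1 + C\<Pi>\<^sup>2)) * R" by (simp add: algebra_simps)
          finally show ?thesis .
        qed
        finally show ?thesis using eta0 by (simp add: divide_right_mono)
      qed
      have P0: "\<theta> * bb\<^sup>2 * ip a0 b0 q z \<ge> \<alpha> / 2 * R"
      proof -
        have "\<theta> * bb\<^sup>2 * (\<alpha> / 2 * Q2) \<le> \<theta> * bb\<^sup>2 * ip a0 b0 q z" by (rule mult_left_mono[OF qz tb0])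
        then show ?thesis unfolding R_def by (simp add: algebra_simps)
      qed
      define W where "W = \<theta> * bb * \<epsilon> * X2 + \<theta> * bb\<^sup>2 * ip a0 b0 (Eu L) z + \<theta> * bb * Xc + \<theta> * bb * Xs"
      have saz: "s * (\<epsilon> * X2 + bb * X1 + Xc + Xs) = \<delta> * (W + \<theta> * bb\<^sup>2 * ip a0 b0 q z)"
        unfolding s_def W_def X1split by (simp add: algebra_simps power2_eq_square)
      have GR: "G * R / \<eta> = \<alpha> * R / 2" using G1 al by (simp add: \<eta>_def field_simps)
      have Gdef: "G = 1 + C\<tau> * Kinv + C\<tau> * (b0 - a0) * Mc / \<bar>bb\<bar> + 2 ^ (L + 1) * C\<tau>\<^sup>2 * Kinv * (1 + C\<Pi>\<^sup>2)"
        unfolding G_def GamC_def ..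
      have Wb: "2 * \<bar>W\<bar> \<le> \<eta> * (A + B + 2 * S) + G * R / \<eta>"
      proof -
        have "2 * \<bar>W\<bar> \<le> 2 * \<bar>\<theta> * bb * \<epsilon> * X2\<bar> + 2 * \<bar>\<theta> * bb\<^sup>2 * ip a0 b0 (Eu L) z\<bar> + 2 * \<bar>\<theta> * bb * Xc\<bar> + 2 * \<bar>\<theta> * bb * Xs\<bar>"
          unfolding W_def by (smt (verit) abs_triangle_ineq)
        also have "\<dots> \<le> (\<eta> * A + (C\<tau> * Kinv) * R / \<eta>) + (\<eta> * S + R / \<eta>)
            + (\<eta> * B + (C\<tau> * (b0 - a0) * Mc / \<bar>bb\<bar>) * R / \<eta>) + (\<eta> * S + (2 ^ (L + 1) * C\<tau>\<^sup>2 * Kinv * (1 + C\<Pi>\<^sup>2)) * R / \<eta>)"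
          using Y1 Y2 Y3 Y4 by linarith
        also have "\<dots> = \<eta> * (A + B + 2 * S) + G * R / \<eta>"
          unfolding Gdef using eta0 bb0 by (simp add: field_simps)
        finally show ?thesis .
      qed
      have WZ: "W + \<theta> * bb\<^sup>2 * ip a0 b0 q z \<ge> \<alpha> * R / 4 - \<eta> * (A + B + 2 * S) / 2"
        using Wb P0 GR by linarith
      have "s * (\<epsilon> * X2 + bb * X1 + Xc + Xs) \<ge> \<delta> * (\<alpha> * R / 4 - \<eta> * (A + B + 2 * S) / 2)"
        unfolding saz by (rule mult_left_mono[OF WZ]) (use delta0 in simp)
      also have "\<delta> * (\<alpha> * R / 4 - \<eta> * (A + B + 2 * S) / 2) = \<delta> * \<alpha> / 4 * R - (\<delta> * \<eta>) * (A + B + 2 * S) / 2"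
        by (simp add: algebra_simps)
      finally have sazb: "s * (\<epsilon> * X2 + bb * X1 + Xc + Xs) \<ge> \<delta> * \<alpha> / 4 * R - (A + B + 2 * S) / 4"
        using de by simp
      define c1 where "c1 = min (1/2) (\<delta> * \<alpha> / 4)"
      have c1p: "c1 > 0" using delta0 al by (simp add: c1_def)
      have auvb: "a_MQ a0 b0 L \<epsilon> bb c \<tau> Proj u v \<ge> c1 / 3 * (A + B + S + T)"
      proof -
        have "c1 * (A + B + S) \<le> 1/2 * (A + B + S)" using A0 B0 S0 by (intro mult_right_mono) (auto simp: c1_def)
        moreover have "c1 * R \<le> \<delta> * \<alpha> / 4 * R" using R0 by (intro mult_right_mono) (auto simp: c1_def)
        moreover have "c1 * (A + B + S + T) \<le> c1 * (3 * (A + B + S + R))"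
          using TSR A0 B0 S0 R0 c1p by (intro mult_left_mono) auto
        moreover have "c1 * (3 * (A + B + S + R)) = 3 * (c1 * (A + B + S)) + 3 * (c1 * R)" by (simp add: algebra_simps)
        ultimately have "c1 * (A + B + S + T) / 3 \<le> (A + B + S) + s * (\<epsilon> * X2 + bb * X1 + Xc + Xs)"
          by (intro comb_alg[where DR = "\<delta> * \<alpha> / 4 * R" and Q = "A + B + 2 * S"]) (use sazb A0 B0 in auto)
        then show ?thesis unfolding auv by simp
      qed
      have muKh: "\<mu>\<^sup>2 * Kh \<le> C\<tau>\<^sup>2 * Kinv"
      proof -
        have "\<mu>\<^sup>2 \<le> (C\<tau> * h)\<^sup>2" using hb(2) mu0 by (intro power_mono) auto
        then have "\<mu>\<^sup>2 * Kh \<le> (C\<tau> * h)\<^sup>2 * Kh" using Kh0 by (rule mult_right_mono)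
        also have "\<dots> = C\<tau>\<^sup>2 * Kinv" using Khh by (simp add: power_mult_distrib algebra_simps)
        finally show ?thesis .
      qed
      have B2: "\<mu>\<^sup>2 * (\<epsilon> * ip a0 b0 gz gz) \<le> (C\<tau> * Kinv) * R"
      proof -
        have "\<mu>\<^sup>2 * (\<epsilon> * ip a0 b0 gz gz) \<le> \<epsilon> * \<mu>\<^sup>2 * (Kh * Q2)"
          using mult_left_mono[OF invz', of "\<epsilon> * \<mu>\<^sup>2"] ep by (simp add: algebra_simps)
        also have "\<dots> = (\<theta> * \<epsilon>) * Kh * R" unfolding R_def mu2 by (simp add: algebra_simps)
        also have "\<dots> \<le> (C\<tau> * h\<^sup>2) * Kh * R" using hb(1) Kh0 R0 by (intro mult_right_mono) auto
        also have "\<dots> = (C\<tau> * Kinv) * R" using Khh by (simp add: algebra_simps)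
        finally show ?thesis .
      qed
      have B3: "\<mu>\<^sup>2 * Wc a0 b0 c z z \<le> (C\<tau> * (b0 - a0) * Mc / \<bar>bb\<bar>) * R"
      proof -
        have "\<mu>\<^sup>2 * Wc a0 b0 c z z \<le> \<mu>\<^sup>2 * (Mc * Q2)"
          using Wc_upper[OF cz(1)] zz by (intro mult_left_mono) auto
        also have "\<dots> = (\<theta> * Mc) * R" unfolding R_def mu2 by (simp add: algebra_simps)
        also have "\<theta> \<le> C\<tau> * (b0 - a0) / \<bar>bb\<bar>"
        proof -
          have "\<theta> * \<bar>bb\<bar> \<le> C\<tau> * (b0 - a0)" using hb(2) h_le Ct unfolding \<mu>_def
            by (meson less_imp_le mult_left_mono order_trans)
          then show ?thesis using bb0 by (simp add: field_simps)
        qed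
        finally show ?thesis using Mc1 R0 by (simp add: mult_right_mono mult.commute mult.left_commute)
      qed
      have B4: "\<mu>\<^sup>2 * sR a0 b0 L \<tau> bb Ez Ez \<le> (2 ^ (L + 1) * C\<tau>\<^sup>2 * Kinv * (1 + C\<Pi>\<^sup>2)) * R"
      proof -
        have Lam0: "2 * Kh * (1 + C\<Pi>\<^sup>2) * Q2 \<ge> 0" using Kh0 Q20 by simp
        have "sR a0 b0 L \<tau> bb Ez Ez \<le> \<tau> * bb\<^sup>2 * (2 * Kh * (1 + C\<Pi>\<^sup>2) * Q2)"
          by (rule sR_bound[OF t0 Ebz' Lam0])
        then have "\<mu>\<^sup>2 * sR a0 b0 L \<tau> bb Ez Ez \<le> \<mu>\<^sup>2 * (\<tau> * bb\<^sup>2 * (2 * Kh * (1 + C\<Pi>\<^sup>2) * Q2))"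
          by (intro mult_left_mono) auto
        also have "\<dots> = (2 ^ L * \<mu>\<^sup>2 * Kh) * (2 * (1 + C\<Pi>\<^sup>2)) * R"
        proof -
          have tt: "\<tau> = 2 ^ L * \<theta>" by (simp add: \<theta>_def)
          show ?thesis unfolding R_def mu2 by (subst tt) (simp add: algebra_simps power2_eq_square)
        qed
        also have "\<dots> \<le> (2 ^ L * C\<tau>\<^sup>2 * Kinv) * (2 * (1 + C\<Pi>\<^sup>2)) * R"
        proof -
          have m1: "2 ^ L * \<mu>\<^sup>2 * Kh \<le> 2 ^ L * C\<tau>\<^sup>2 * Kinv" using muKh by (simp add: mult.assoc)
          have m2: "2 * (1 + C\<Pi>\<^sup>2) * R \<ge> 0" using R0 by simp
          from mult_right_mono[OF m1 m2] show ?thesis by (simp only: mult.assoc)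
        qed
        also have "\<dots> = (2 ^ (L + 1) * C\<tau>\<^sup>2 * Kinv * (1 + C\<Pi>\<^sup>2)) * R" by (simp add: algebra_simps)
        finally show ?thesis .
      qed
      have B5: "\<mu>\<^sup>2 * (\<theta> * (bb\<^sup>2 * ip a0 b0 gz gz)) \<le> (C\<tau>\<^sup>2 * Kinv) * R"
      proof -
        have "\<mu>\<^sup>2 * (\<theta> * (bb\<^sup>2 * ip a0 b0 gz gz)) \<le> \<mu>\<^sup>2 * (\<theta> * (bb\<^sup>2 * (Kh * Q2)))"
          using invz' th0 by (intro mult_left_mono) auto
        also have "\<dots> = (\<mu>\<^sup>2 * Kh) * R" unfolding R_def by (simp add: algebra_simps)
        also have "\<dots> \<le> (C\<tau>\<^sup>2 * Kinv) * R" by (rule mult_right_mono[OF muKh R0])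
        finally show ?thesis .
      qed
      define N2z where "N2z = N2 gz z Ez"
      have N2zb: "\<mu>\<^sup>2 * N2z \<le> (G + C\<tau>\<^sup>2 * Kinv) * R"
      proof -
        have "\<mu>\<^sup>2 * N2z = \<mu>\<^sup>2 * (\<epsilon> * ip a0 b0 gz gz) + \<mu>\<^sup>2 * Wc a0 b0 c z z + \<mu>\<^sup>2 * sR a0 b0 L \<tau> bb Ez Ez
            + \<mu>\<^sup>2 * (\<theta> * (bb\<^sup>2 * ip a0 b0 gz gz))"
          unfolding N2z_def N2_def by (simp add: algebra_simps)
        also have "\<dots> \<le> (C\<tau> * Kinv) * R + (C\<tau> * (b0 - a0) * Mc / \<bar>bb\<bar>) * R
            + (2 ^ (L + 1) * C\<tau>\<^sup>2 * Kinv * (1 + C\<Pi>\<^sup>2)) * R + (C\<tau>\<^sup>2 * Kinv) * R"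
          using B2 B3 B4 B5 by linarith
        also have "\<dots> \<le> (G + C\<tau>\<^sup>2 * Kinv) * R" unfolding Gdef using R0 by (simp add: algebra_simps)
        finally show ?thesis .
      qed
      define N2v where "N2v = N2 gv v Ev"
      define N2U where "N2U = A + B + S + T"
      have N2vb: "N2v \<le> 2 * N2U + 2 * s\<^sup>2 * N2z"
      proof -
        have i1: "ip a0 b0 gv gv \<le> 2 * ip a0 b0 gu gu + 2 * s\<^sup>2 * ip a0 b0 gz gz"
          unfolding gv_def by (rule ip_sq[OF cu(2) cz(2)])
        have i2: "Wc a0 b0 c v v \<le> 2 * B + 2 * s\<^sup>2 * Wc a0 b0 c z z"
          unfolding v_def B_def by (rule Wc_sq[OF cu(1) cz(1)])
        have i3: "sR a0 b0 L \<tau> bb Ev Ev \<le> 2 * S + 2 * s\<^sup>2 * sR a0 b0 L \<tau> bb Ez Ez"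
          unfolding Ev_def S_def by (rule sR_sq[OF t0 cEu cEz])
        have j1: "\<epsilon> * ip a0 b0 gv gv \<le> 2 * A + 2 * s\<^sup>2 * (\<epsilon> * ip a0 b0 gz gz)"
          using mult_left_mono[OF i1 less_imp_le[OF ep]] unfolding A_def by (simp add: algebra_simps)
        have j4: "\<theta> * (bb\<^sup>2 * ip a0 b0 gv gv) \<le> 2 * T + 2 * s\<^sup>2 * (\<theta> * (bb\<^sup>2 * ip a0 b0 gz gz))"
          using mult_left_mono[OF i1 tb0] unfolding T_def by (simp add: algebra_simps)
        have "N2v = \<epsilon> * ip a0 b0 gv gv + Wc a0 b0 c v v + sR a0 b0 L \<tau> bb Ev Ev + \<theta> * (bb\<^sup>2 * ip a0 b0 gv gv)"
          unfolding N2v_def N2_def ..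
        also have "\<dots> \<le> (2 * A + 2 * s\<^sup>2 * (\<epsilon> * ip a0 b0 gz gz)) + (2 * B + 2 * s\<^sup>2 * Wc a0 b0 c z z)
            + (2 * S + 2 * s\<^sup>2 * sR a0 b0 L \<tau> bb Ez Ez) + (2 * T + 2 * s\<^sup>2 * (\<theta> * (bb\<^sup>2 * ip a0 b0 gz gz)))"
          using j1 i2 i3 j4 by linarith
        also have "\<dots> = 2 * N2U + 2 * s\<^sup>2 * N2z" unfolding N2U_def N2z_def N2_def by (simp add: algebra_simps)
        finally show ?thesis .
      qed
      define Cv where "Cv = 2 + 4 * \<delta>\<^sup>2 * (G + C\<tau>\<^sup>2 * Kinv)"
      have Cv0: "Cv > 0" unfolding Cv_def using G1 Kp by (intro add_pos_nonneg) auto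
      have N2vC: "N2v \<le> Cv * N2U"
      proof -
        have ss: "s\<^sup>2 = \<delta>\<^sup>2 * \<mu>\<^sup>2" unfolding s_def \<mu>_def using th0 by (simp add: power_mult_distrib)
        have "s\<^sup>2 * N2z = \<delta>\<^sup>2 * (\<mu>\<^sup>2 * N2z)" unfolding ss by (simp add: algebra_simps)
        also have "\<dots> \<le> \<delta>\<^sup>2 * ((G + C\<tau>\<^sup>2 * Kinv) * R)" by (rule mult_left_mono[OF N2zb]) simp
        also have "\<dots> \<le> \<delta>\<^sup>2 * ((G + C\<tau>\<^sup>2 * Kinv) * (2 * N2U))"
        proof -
          have "R \<le> 2 * N2U" unfolding N2U_def using RTS A0 B0 by (rule lin_aux1)
          then show ?thesis using G1 Kp by (intro mult_left_mono) auto
        qed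
        finally have "s\<^sup>2 * N2z \<le> \<delta>\<^sup>2 * ((G + C\<tau>\<^sup>2 * Kinv) * (2 * N2U))" .
        then show ?thesis using N2vb unfolding Cv_def by (simp add: algebra_simps)
      qed
      have Np': "N2U > 0" using Np unfolding N2U_def .
      have apos: "a_MQ a0 b0 L \<epsilon> bb c \<tau> Proj u v > 0"
      proof -
        have "c1 / 3 * N2U > 0" using c1p Np' by simp
        then show ?thesis using auvb unfolding N2U_def by linarith
      qed
      have N2v0: "N2v > 0"
      proof -
        have "N2v \<ge> 0" unfolding N2v_def by (rule N2_nonneg[OF gv])
        moreover have "N2v \<noteq> 0"
        proof
          assume "N2v = 0"
          then have "a_MQ a0 b0 L \<epsilon> bb c \<tau> Proj u v = 0"
            using a_zero_if_N2[OF gu gv Eu Ev] unfolding N2v_def by blast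
          then show False using apos by simp
        qed
        ultimately show ?thesis by simp
      qed
      have nv: "MQSD_norm a0 b0 L \<epsilon> bb c \<tau> Proj v = sqrt N2v" unfolding N2v_def by (rule MQSD_N2[OF gv Ev])
      have vnz: "nonzero_on a0 b0 v"
      proof (rule ccontr)
        assume "\<not> nonzero_on a0 b0 v"
        then have zv: "\<And>x. x \<in> {a0..b0} \<Longrightarrow> v x = 0" unfolding nonzero_on_def by auto
        have g0: "C1I a0 b0 v (\<lambda>x. 0)" by (rule C1I_zero[OF zv])
        have "MQSD_norm a0 b0 L \<epsilon> bb c \<tau> Proj v = sqrt (N2 (\<lambda>x. 0) v (\<lambda>k x. 0))"
          by (rule MQSD_N2[OF g0 E_zero[OF v zv]])
        also have "N2 (\<lambda>x. 0) v (\<lambda>k x. 0) = 0"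
          unfolding N2_def using Wc_zero[of a0 b0 v c v] zv sR_zero[of a0 b0 L \<tau> bb "\<lambda>k x. 0"]
          by (simp add: ip_def)
        finally show False using nv N2v0 by simp
      qed
      have \<beta>le: "\<beta> \<le> (c1 / 3) / sqrt Cv"
        unfolding \<beta>_def betaC_def c1_def Cv_def \<delta>_def G_def by simp
      have nuU: "MQSD_norm a0 b0 L \<epsilon> bb c \<tau> Proj u = sqrt N2U" using nu unfolding N2U_def .
      have "\<beta> * MQSD_norm a0 b0 L \<epsilon> bb c \<tau> Proj u \<le> (c1 / 3) / sqrt Cv * sqrt N2U"
        unfolding nuU by (rule mult_right_mono[OF \<beta>le]) (use Np' in simp)
      also have "\<dots> = (c1 / 3 * N2U) / sqrt (Cv * N2U)"
        using Cv0 Np' by (simp add: real_sqrt_mult field_simps)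
      also have "\<dots> \<le> a_MQ a0 b0 L \<epsilon> bb c \<tau> Proj u v / sqrt (Cv * N2U)"
        using auvb Cv0 Np' unfolding N2U_def[symmetric] by (intro divide_right_mono) auto
      also have "\<dots> \<le> a_MQ a0 b0 L \<epsilon> bb c \<tau> Proj u v / sqrt N2v"
      proof (rule divide_left_mono)
        show "sqrt N2v \<le> sqrt (Cv * N2U)" using N2vC by simp
        show "0 \<le> a_MQ a0 b0 L \<epsilon> bb c \<tau> Proj u v" using apos by simp
        show "0 < sqrt (Cv * N2U) * sqrt N2v" using Cv0 Np' N2v0 by simp
      qed
      also have "\<dots> = a_MQ a0 b0 L \<epsilon> bb c \<tau> Proj u v / MQSD_norm a0 b0 L \<epsilon> bb c \<tau> Proj v" using nv by simp
      also have "\<dots> \<le> Sup (Y u)" by (rule cSup_upper[OF inY[OF v vnz] bdd])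
      finally show ?thesis unfolding \<beta>_def .
    qed
  qed
qed

end

theorem mainTheorem6:
  fixes a0 b0 :: real and p L :: nat and bb :: real and c :: "real \<Rightarrow> real"
    and \<sigma>0 C\<tau> \<alpha>MQ C\<Pi> :: real
  assumes "a0 < b0" and "p \<ge> 2" and "L \<ge> 1"
    and "c \<in> borel_measurable lborel"
    and "\<exists>M. AE x in lborel. x \<in> {a0..b0} \<longrightarrow> \<bar>c x\<bar> \<le> M"
    and "\<sigma>0 > 0" and "AE x in lborel. x \<in> {a0..b0} \<longrightarrow> c x \<ge> \<sigma>0"
    and "C\<tau> > 0" and "\<alpha>MQ > 0" and "C\<Pi> > 0"
  shows "\<exists>\<beta>>0. \<forall>\<epsilon> M \<tau> Proj.
     \<epsilon> > 0 \<longrightarrow> M \<ge> 1 \<longrightarrow>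
     (let N = 2 ^ L * M; h = (b0 - a0) / real N in
       (\<forall>q\<in>spline_space a0 b0 (N div 2 ^ L) (p - 1).
          Sup ((\<lambda>v. ip a0 b0 v q / l2norm a0 b0 v) ` {v \<in> Vh a0 b0 N p. nonzero_on a0 b0 v})
            \<ge> \<alpha>MQ * l2norm a0 b0 q) \<longrightarrow>
       0 \<le> \<tau> \<longrightarrow> \<tau> \<le> C\<tau> * 2 ^ L * h\<^sup>2 / max \<epsilon> (h * \<bar>bb\<bar>) \<longrightarrow>
       (\<forall>k\<in>{1..L}. quasi_interp a0 b0 (N div 2 ^ k) p (2 ^ k * h) C\<Pi> (Proj k)) \<longrightarrow>
       (\<forall>u\<in>Vh a0 b0 N p.
          Sup ((\<lambda>v. a_MQ a0 b0 L \<epsilon> bb c \<tau> Proj u v / MQSD_norm a0 b0 L \<epsilon> bb c \<tau> Proj v)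
                 ` {v \<in> Vh a0 b0 N p. nonzero_on a0 b0 v})
            \<ge> \<beta> * MQSD_norm a0 b0 L \<epsilon> bb c \<tau> Proj u))"
proof -
  note ab = assms(1) and p2 = assms(2) and L1 = assms(3) and cm = assms(4) and s0 = assms(6)
    and cpos = assms(7) and Ct = assms(8) and al = assms(9) and CP = assms(10)
  obtain Mc0 where cb0: "AE x in lborel. x \<in> {a0..b0} \<longrightarrow> \<bar>c x\<bar> \<le> Mc0" using assms(5) by blast
  define Mc where "Mc = max Mc0 1"
  have cb: "AE x in lborel. x \<in> {a0..b0} \<longrightarrow> \<bar>c x\<bar> \<le> Mc"
    using cb0 by eventually_elim (auto simp: Mc_def)
  have Mc1: "Mc \<ge> 1" by (simp add: Mc_def)
  obtain Kinv :: real where Kp: "Kinv > 0" and Kinv: "\<And>a0 b0 N f g. a0 < b0 \<Longrightarrow> N \<ge> 1 \<Longrightarrow> PPI a0 b0 N p f \<Longrightarrow> C1I a0 b0 f g \<Longrightarrow>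
      integral {a0..b0} (\<lambda>x. (g x)\<^sup>2) \<le> Kinv * (real N / (b0 - a0))\<^sup>2 * integral {a0..b0} (\<lambda>x. (f x)\<^sup>2)"
    using inverse_global[of p] by blast
  define \<beta> where "\<beta> = betaC (b0 - a0) L bb C\<tau> \<alpha>MQ C\<Pi> Mc Kinv"
  have \<beta>0: "\<beta> > 0" unfolding \<beta>_def using ab Ct Mc1 Kp al by (intro betaC_pos) auto
  show ?thesis
  proof (rule exI[of _ \<beta>], intro conjI allI impI)
    show "\<beta> > 0" by (rule \<beta>0)
    fix \<epsilon> :: real and M :: nat and \<tau> :: real and Proj :: "nat \<Rightarrow> (real \<Rightarrow> real) \<Rightarrow> real \<Rightarrow> real"
    assume ep: "\<epsilon> > 0" and M1: "M \<ge> 1"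
    show "let N = 2 ^ L * M; h = (b0 - a0) / real N in
       (\<forall>q\<in>spline_space a0 b0 (N div 2 ^ L) (p - 1).
          Sup ((\<lambda>v. ip a0 b0 v q / l2norm a0 b0 v) ` {v \<in> Vh a0 b0 N p. nonzero_on a0 b0 v})
            \<ge> \<alpha>MQ * l2norm a0 b0 q) \<longrightarrow>
       0 \<le> \<tau> \<longrightarrow> \<tau> \<le> C\<tau> * 2 ^ L * h\<^sup>2 / max \<epsilon> (h * \<bar>bb\<bar>) \<longrightarrow>
       (\<forall>k\<in>{1..L}. quasi_interp a0 b0 (N div 2 ^ k) p (2 ^ k * h) C\<Pi> (Proj k)) \<longrightarrow>
       (\<forall>u\<in>Vh a0 b0 N p.
          Sup ((\<lambda>v. a_MQ a0 b0 L \<epsilon> bb c \<tau> Proj u v / MQSD_norm a0 b0 L \<epsilon> bb c \<tau> Proj v)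
                 ` {v \<in> Vh a0 b0 N p. nonzero_on a0 b0 v})
            \<ge> \<beta> * MQSD_norm a0 b0 L \<epsilon> bb c \<tau> Proj u)"
      unfolding Let_def
    proof (intro impI ballI)
      assume infsup: "\<forall>q\<in>spline_space a0 b0 (2 ^ L * M div 2 ^ L) (p - 1).
          Sup ((\<lambda>v. ip a0 b0 v q / l2norm a0 b0 v) ` {v \<in> Vh a0 b0 (2 ^ L * M) p. nonzero_on a0 b0 v})
            \<ge> \<alpha>MQ * l2norm a0 b0 q"
        and t0: "0 \<le> \<tau>"
        and tau: "\<tau> \<le> C\<tau> * 2 ^ L * ((b0 - a0) / real (2 ^ L * M))\<^sup>2 / max \<epsilon> ((b0 - a0) / real (2 ^ L * M) * \<bar>bb\<bar>)"
        and qi: "\<forall>k\<in>{1..L}. quasi_interp a0 b0 (2 ^ L * M div 2 ^ k) p (2 ^ k * ((b0 - a0) / real (2 ^ L * M))) C\<Pi> (Proj k)"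
      fix u assume u: "u \<in> Vh a0 b0 (2 ^ L * M) p"
      have N1: "2 ^ L * M \<ge> (1::nat)" using M1 by simp
      interpret I: inst a0 b0 c Mc \<sigma>0 p L bb C\<tau> \<alpha>MQ C\<Pi> Kinv \<epsilon> M \<tau> Proj
      proof (unfold_locales)
        show "\<And>f g. PPI a0 b0 (2 ^ L * M) p f \<Longrightarrow> C1I a0 b0 f g \<Longrightarrow>
          integral {a0..b0} (\<lambda>x. (g x)\<^sup>2) \<le> Kinv * (real (2 ^ L * M) / (b0 - a0))\<^sup>2 * integral {a0..b0} (\<lambda>x. (f x)\<^sup>2)"
          using Kinv[OF ab N1] by blast
      qed (use cm cb cpos s0 ab p2 L1 Mc1 Ct al CP Kp ep M1 t0 infsup tau qi in auto)
      show "\<beta> * MQSD_norm a0 b0 L \<epsilon> bb c \<tau> Proj u \<le> Sup ((\<lambda>v. a_MQ a0 b0 L \<epsilon> bb c \<tau> Proj u v / MQSD_norm a0 b0 L \<epsilon> bb c \<tau> Proj v)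
                 ` {v \<in> Vh a0 b0 (2 ^ L * M) p. nonzero_on a0 b0 v})"
        using I.main[OF u] unfolding I.Y_def \<beta>_def .
    qed
  qed
qed

end
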